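(* Let $[a,b]\subset\mathbb{R}$ be a compact interval, let $m\geq1$, $r\geq2$, $n\geq0$ be integers, let $0<\alpha\leq1$, and let $\varepsilon_0>0$. For each $\varepsilon\in[0,\varepsilon_0)$ let $A_{r-j}(\cdot,\varepsilon)\in(C^{n,\alpha})^{m\times m}$ for $j=1,\dots,r$, and let $B(\varepsilon):(C^{n+r,\alpha})^{m}\to\mathbb{C}^{rm}$ be a continuous linear operator. Put $L(\varepsilon)y:=y^{(r)}+\sum_{j=1}^{r}A_{r-j}(\cdot,\varepsilon)y^{(r-j)}$ and consider the boundary-value problem $L(\varepsilon)y(\cdot,\varepsilon)=f(\cdot,\varepsilon)$ on $[a,b]$, $B(\varepsilon)y(\cdot,\varepsilon)=c(\varepsilon)$, with $f(\cdot,\varepsilon)\in(C^{n,\alpha})^{m}$, $c(\varepsilon)\in\mathbb{C}^{rm}$ and unknown $y(\cdot,\varepsilon)\in(C^{n+r,\alpha})^{m}$. Assume: (0) the problem $L(0)y=0$, $B(0)y=0$ has only the trivial solution in $(C^{n+r,\alpha})^{m}$; (I) $A_{r-j}(\cdot,\varepsilon)\to A_{r-j}(\cdot,0)$ in $(C^{n,\alpha})^{m\times m}$ as $\varepsilon\to0+$ for each $j\in\{1,\dots,r\}$; (II) $B(\varepsilon)y\to B(0)y$ in $\mathbb{C}^{rm}$ as $\varepsilon\to0+$ for every $y\in(C^{n+r,\alpha})^{m}$. Let $\varepsilon_1\in(0,\varepsilon_0)$ be such that for every $\varepsilon\in[0,\varepsilon_1)$ and all right-hand sides $f(\cdot,\varepsilon)$,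 $c(\varepsilon)$ the problem has a unique solution $y(\cdot,\varepsilon)\in(C^{n+r,\alpha})^{m}$ (such $\varepsilon_1$ exists under these assumptions). Then there exist positive numbers $\varepsilon_2<\varepsilon_1$, $\varkappa_1$, $\varkappa_2$ such that for every choice of $f(\cdot,\varepsilon)$, $c(\varepsilon)$ ($\varepsilon\in[0,\varepsilon_1)$), with $y(\cdot,\varepsilon)$ the corresponding unique solutions, $$\varkappa_1\,d_{n,\alpha}(\varepsilon)\leq\|y(\cdot,0)-y(\cdot,\varepsilon)\|_{n+r,\alpha}\leq\varkappa_2\,d_{n,\alpha}(\varepsilon)\quad\text{for every }\varepsilon\in(0,\varepsilon_2),$$ where $d_{n,\alpha}(\varepsilon):=\|L(\varepsilon)y(\cdot,0)-f(\cdot,\varepsilon)\|_{n,\alpha}+|B(\varepsilon)y(\cdot,0)-c(\varepsilon)|$. The numbers $\varepsilon_2,\varkappa_1,\varkappa_2$ do not depend on the functions $y(\cdot,0)$ and $y(\cdot,\varepsilon)$.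
   Context: $C^{n,\alpha}$ denotes the complex Hölder space of all $n$ times continuously differentiable functions $x:[a,b]\to\mathbb{C}$ with $\|x\|'_{n,\alpha}:=\sup_{a\leq t_1<t_2\leq b}|x^{(n)}(t_2)-x^{(n)}(t_1)|/|t_2-t_1|^{\alpha}<\infty$, normed by $\|x\|_{n,\alpha}:=\sum_{j=0}^{n}\max_{[a,b]}|x^{(j)}|+\|x\|'_{n,\alpha}$. $(C^{n,\alpha})^{m}$ and $(C^{n,\alpha})^{m\times m}$ are the spaces of $m$-column vector-valued and $m\times m$ matrix-valued functions with entries in $C^{n,\alpha}$, normed by the sum of the entries' norms (also denoted $\|\cdot\|_{n,\alpha}$). $|\cdot|$ is a norm on $\mathbb{C}^{rm}$. *)

theory Defs
  imports "HOL-Analysis.Analysis"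
begin

fun hderiv :: "real \<Rightarrow> real \<Rightarrow> nat \<Rightarrow> (real \<Rightarrow> complex) \<Rightarrow> real \<Rightarrow> complex" where
  "hderiv a b 0 x = x"
| "hderiv a b (Suc j) x = (\<lambda>t. vector_derivative (hderiv a b j x) (at t within {a..b}))"

definition hquot :: "real \<Rightarrow> real \<Rightarrow> real \<Rightarrow> (real \<Rightarrow> complex) \<Rightarrow> real set" where
  "hquot a b \<alpha> x = {cmod (x t2 - x t1) / (t2 - t1) powr \<alpha> | t1 t2. a \<le> t1 \<and> t1 < t2 \<and> t2 \<le> b}"

text \<open>The complex Hoelder space C^{n,alpha}[a,b] (functions are considered through their values on [a,b]).\<close>
definition Hoelder :: "real \<Rightarrow> real \<Rightarrow> nat \<Rightarrow> real \<Rightarrow> (real \<Rightarrow> complex) set" where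
  "Hoelder a b n \<alpha> = {x.
     (\<forall>j<n. \<forall>t\<in>{a..b}. (hderiv a b j x has_vector_derivative hderiv a b (Suc j) x t) (at t within {a..b}))
   \<and> (\<forall>j\<le>n. continuous_on {a..b} (hderiv a b j x))
   \<and> bdd_above (hquot a b \<alpha> (hderiv a b n x))}"

definition hnorm :: "real \<Rightarrow> real \<Rightarrow> nat \<Rightarrow> real \<Rightarrow> (real \<Rightarrow> complex) \<Rightarrow> real" where
  "hnorm a b n \<alpha> x = (\<Sum>j\<le>n. Sup ((\<lambda>t. cmod (hderiv a b j x t)) ` {a..b}))
                      + Sup (hquot a b \<alpha> (hderiv a b n x))"

definition HoelderV :: "real \<Rightarrow> real \<Rightarrow> nat \<Rightarrow> real \<Rightarrow> (real \<Rightarrow> complex^'m::finite) set" where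
  "HoelderV a b n \<alpha> = {y. \<forall>i. (\<lambda>t. y t $ i) \<in> Hoelder a b n \<alpha>}"

definition hnormV :: "real \<Rightarrow> real \<Rightarrow> nat \<Rightarrow> real \<Rightarrow> (real \<Rightarrow> complex^'m::finite) \<Rightarrow> real" where
  "hnormV a b n \<alpha> y = (\<Sum>i\<in>UNIV. hnorm a b n \<alpha> (\<lambda>t. y t $ i))"

definition HoelderM :: "real \<Rightarrow> real \<Rightarrow> nat \<Rightarrow> real \<Rightarrow> (real \<Rightarrow> complex^'m::finite^'m) set" where
  "HoelderM a b n \<alpha> = {A. \<forall>i k. (\<lambda>t. A t $ i $ k) \<in> Hoelder a b n \<alpha>}"

definition hnormM :: "real \<Rightarrow> real \<Rightarrow> nat \<Rightarrow> real \<Rightarrow> (real \<Rightarrow> complex^'m::finite^'m) \<Rightarrow> real" where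
  "hnormM a b n \<alpha> A = (\<Sum>i\<in>UNIV. \<Sum>k\<in>UNIV. hnorm a b n \<alpha> (\<lambda>t. A t $ i $ k))"

definition hderivV :: "real \<Rightarrow> real \<Rightarrow> nat \<Rightarrow> (real \<Rightarrow> complex^'m::finite) \<Rightarrow> real \<Rightarrow> complex^'m" where
  "hderivV a b j y t = (\<chi> i. hderiv a b j (\<lambda>s. y s $ i) t)"

definition Lop :: "real \<Rightarrow> real \<Rightarrow> nat \<Rightarrow> (nat \<Rightarrow> real \<Rightarrow> complex^'m::finite^'m)
                    \<Rightarrow> (real \<Rightarrow> complex^'m) \<Rightarrow> real \<Rightarrow> complex^'m" where
  "Lop a b r A y t = hderivV a b r y t + (\<Sum>j\<in>{1..r}. A (r - j) t *v hderivV a b (r - j) y t)"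

definition is_cnorm :: "(complex^'k::finite \<Rightarrow> real) \<Rightarrow> bool" where
  "is_cnorm N \<longleftrightarrow> (\<forall>x y. N (x + y) \<le> N x + N y) \<and> (\<forall>c x. N (c *s x) = cmod c * N x)
                  \<and> (\<forall>x. N x = 0 \<longrightarrow> x = 0)"

end

theory Submission
  imports Defs "HOL-Library.Function_Algebras"
begin

instantiation "fun" :: (type, real_vector) real_vector
begin
definition scaleR_fun :: "real \<Rightarrow> ('a \<Rightarrow> 'b) \<Rightarrow> 'a \<Rightarrow> 'b" where
  "scaleR_fun c f = (\<lambda>x. c *\<^sub>R f x)"
instance
  by standard (auto simp: scaleR_fun_def fun_eq_iff scaleR_add_right scaleR_add_left)
end

lemma scaleR_fun_apply [simp]: "(c *\<^sub>R f) x = c *\<^sub>R f x"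
  by (simp add: scaleR_fun_def)

locale cns =
  fixes X :: "'a::real_vector set" and p :: "'a \<Rightarrow> real"
  assumes zeroX: "0 \<in> X"
    and addX: "\<And>x y. x \<in> X \<Longrightarrow> y \<in> X \<Longrightarrow> x + y \<in> X"
    and scaleX: "\<And>x c. x \<in> X \<Longrightarrow> c *\<^sub>R x \<in> X"
    and ptri: "\<And>x y. x \<in> X \<Longrightarrow> y \<in> X \<Longrightarrow> p (x + y) \<le> p x + p y"
    and pscale: "\<And>x c. x \<in> X \<Longrightarrow> p (c *\<^sub>R x) = \<bar>c\<bar> * p x"
    and pzero: "\<And>x. x \<in> X \<Longrightarrow> p x = 0 \<Longrightarrow> x = 0"
    and complete: "\<And>\<sigma>::nat\<Rightarrow>'a. (\<And>k. \<sigma> k \<in> X) \<Longrightarrow> (\<And>e. e > 0 \<Longrightarrow> \<exists>K. \<forall>k\<ge>K. \<forall>l\<ge>K. p (\<sigma> k - \<sigma> l) < e)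
                 \<Longrightarrow> \<exists>x\<in>X. \<forall>e>0. \<exists>K. \<forall>k\<ge>K. p (\<sigma> k - x) < e"
begin

lemma uminusX: "x \<in> X \<Longrightarrow> - x \<in> X"
  using scaleX[of x "-1"] by simp

lemma minusX: "x \<in> X \<Longrightarrow> y \<in> X \<Longrightarrow> x - y \<in> X"
  using addX[OF _ uminusX, of x y] by (simp only: diff_conv_add_uminus)

lemma p0: "p 0 = 0"
  using pscale[OF zeroX, of 0] by simp

lemma puminus: "x \<in> X \<Longrightarrow> p (- x) = p x"
  using pscale[of x "-1"] by simp

lemma pnonneg: "x \<in> X \<Longrightarrow> 0 \<le> p x"
  using ptri[of x "-x"] puminus[of x] p0 uminusX[of x] by simp

lemma pcommute: "x \<in> X \<Longrightarrow> y \<in> X \<Longrightarrow> p (x - y) = p (y - x)"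
  using puminus[OF minusX[of y x]] by simp

lemma ptri_diff: "x \<in> X \<Longrightarrow> y \<in> X \<Longrightarrow> z \<in> X \<Longrightarrow> p (x - z) \<le> p (x - y) + p (y - z)"
  using ptri[OF minusX[of x y] minusX[of y z]] by simp

definition dd :: "'a \<Rightarrow> 'a \<Rightarrow> real" where
  "dd x y = (if x \<in> X \<and> y \<in> X then p (x - y) else 0)"

lemma metric: "Metric_space X dd"
proof
  fix x y z
  show "0 \<le> dd x y" unfolding dd_def using pnonneg minusX by auto
  show "dd x y = dd y x" unfolding dd_def using pcommute by auto
  show "x \<in> X \<Longrightarrow> y \<in> X \<Longrightarrow> (dd x y = 0) = (x = y)"
    unfolding dd_def using pzero[OF minusX[of x y]] p0 by auto
  show "x \<in> X \<Longrightarrow> y \<in> X \<Longrightarrow> z \<in> X \<Longrightarrow> dd x z \<le> dd x y + dd y z"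
    unfolding dd_def using ptri_diff[of x y z] by simp
qed

lemma mcomplete: "Metric_space.mcomplete X dd"
proof -
  interpret M: Metric_space X dd by (rule metric)
  show ?thesis
    unfolding M.mcomplete_def
  proof (intro allI impI)
    fix \<sigma> :: "nat \<Rightarrow> 'a" assume "M.MCauchy \<sigma>"
    hence s: "\<And>k. \<sigma> k \<in> X" and c: "\<And>e. e>0 \<Longrightarrow> \<exists>N. \<forall>n n'. N \<le> n \<longrightarrow> N \<le> n' \<longrightarrow> dd (\<sigma> n) (\<sigma> n') < e"
      unfolding M.MCauchy_def by auto
    have "\<exists>K. \<forall>k\<ge>K. \<forall>l\<ge>K. p (\<sigma> k - \<sigma> l) < e" if "e > 0" for e
      using c[OF that] s unfolding dd_def by auto
    then obtain x where x: "x \<in> X" "\<And>e. e>0 \<Longrightarrow> \<exists>K. \<forall>k\<ge>K. p (\<sigma> k - x) < e"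
      using complete[of \<sigma>] s by blast
    have "limitin M.mtopology \<sigma> x sequentially"
      unfolding M.limitin_metric
    proof (intro conjI allI impI x(1))
      fix e :: real assume "e > 0"
      then obtain K where "\<forall>k\<ge>K. p (\<sigma> k - x) < e" using x(2) by blast
      then show "\<forall>\<^sub>F k in sequentially. \<sigma> k \<in> X \<and> dd (\<sigma> k) x < e"
        unfolding eventually_sequentially dd_def using s x(1) by auto
    qed
    then show "\<exists>x. limitin M.mtopology \<sigma> x sequentially" by blast
  qed
qed

end

lemma (in Metric_space) baire_ball:
  fixes F :: "nat \<Rightarrow> 'a set"
  assumes mc: "mcomplete" and ne: "M \<noteq> {}" and cov: "\<And>x. x \<in> M \<Longrightarrow> \<exists>k. x \<in> F k"
  shows "\<exists>k x0 \<rho>. \<rho> > 0 \<and> x0 \<in> M \<and> (\<forall>y\<in>M. d x0 y < \<rho> \<longrightarrow> (\<forall>\<eta>>0. \<exists>z\<in>F k \<inter> M. d y z < \<eta>))"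
proof -
  let ?G = "range (\<lambda>k. mtopology closure_of (F k \<inter> M))"
  have "\<not> (\<forall>T\<in>?G. closedin mtopology T \<and> mtopology interior_of T = {})"
  proof
    assume H: "\<forall>T\<in>?G. closedin mtopology T \<and> mtopology interior_of T = {}"
    have "mtopology interior_of \<Union>?G = {}"
      by (rule metric_Baire_category_alt[OF mc]) (use H in auto)
    moreover have "\<Union>?G = M"
    proof
      show "\<Union>?G \<subseteq> M" using closure_of_subset_topspace[of mtopology] by auto
      show "M \<subseteq> \<Union>?G"
      proof
        fix x assume "x \<in> M"
        then obtain k where "x \<in> F k" using cov by blast
        hence "x \<in> mtopology closure_of (F k \<inter> M)"
          using closure_of_subset[of "F k \<inter> M" mtopology] \<open>x \<in> M\<close> by auto
        thus "x \<in> \<Union>?G" by blast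
      qed
    qed
    ultimately show False using ne interior_of_topspace[of mtopology] by simp
  qed
  then obtain k where k: "mtopology interior_of (mtopology closure_of (F k \<inter> M)) \<noteq> {}"
    by auto
  then obtain x0 where x0: "x0 \<in> mtopology interior_of (mtopology closure_of (F k \<inter> M))"
    by blast
  have "openin mtopology (mtopology interior_of (mtopology closure_of (F k \<inter> M)))" by simp
  then obtain \<rho> where \<rho>: "\<rho> > 0" "mball x0 \<rho> \<subseteq> mtopology interior_of (mtopology closure_of (F k \<inter> M))"
    using x0 unfolding openin_mtopology by blast
  have x0M: "x0 \<in> M" using x0 interior_of_subset[of mtopology] closure_of_subset_topspace[of mtopology] by auto
  have "\<forall>y\<in>M. d x0 y < \<rho> \<longrightarrow> (\<forall>\<eta>>0. \<exists>z\<in>F k \<inter> M. d y z < \<eta>)"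
  proof (intro ballI impI allI)
    fix y \<eta> assume y: "y \<in> M" "d x0 y < \<rho>" and "(\<eta>::real) > 0"
    have "y \<in> mball x0 \<rho>" using y x0M by simp
    hence "y \<in> mtopology closure_of (F k \<inter> M)"
      using \<rho>(2) interior_of_subset[of mtopology "mtopology closure_of (F k \<inter> M)"] by blast
    then show "\<exists>z\<in>F k \<inter> M. d y z < \<eta>"
      unfolding metric_closure_of using \<open>\<eta> > 0\<close> by auto
  qed
  then show ?thesis using \<rho>(1) x0M by blast
qed


lemma le_eps_mult:
  fixes a b C :: real
  assumes "\<And>\<eta>. \<eta> > 0 \<Longrightarrow> a \<le> b + C * \<eta>"
  shows "a \<le> b"
proof (rule field_le_epsilon)
  fix e :: real assume e: "e > 0"
  have "a \<le> b + C * (e / (\<bar>C\<bar> + 1))" using assms[of "e / (\<bar>C\<bar> + 1)"] e by simp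
  also have "C * (e / (\<bar>C\<bar> + 1)) \<le> e"
  proof -
    have "C * (e / (\<bar>C\<bar> + 1)) \<le> \<bar>C\<bar> * (e / (\<bar>C\<bar> + 1))"
      using e by (intro mult_right_mono) auto
    also have "\<dots> \<le> e" using e by (simp add: field_simps)
    finally show ?thesis .
  qed
  finally show "a \<le> b + e" by simp
qed

context cns
begin

lemma banach_steinhaus:
  fixes T :: "real \<Rightarrow> 'a \<Rightarrow> 'b::real_normed_vector" and dlt :: real
  assumes lin: "\<And>\<epsilon> x y. \<epsilon> \<in> {0<..<dlt} \<Longrightarrow> x \<in> X \<Longrightarrow> y \<in> X \<Longrightarrow> T \<epsilon> (x + y) = T \<epsilon> x + T \<epsilon> y"
    and hom: "\<And>\<epsilon> x c. \<epsilon> \<in> {0<..<dlt} \<Longrightarrow> x \<in> X \<Longrightarrow> T \<epsilon> (c *\<^sub>R x) = c *\<^sub>R T \<epsilon> x"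
    and bnd: "\<And>\<epsilon>. \<epsilon> \<in> {0<..<dlt} \<Longrightarrow> \<exists>K. \<forall>x\<in>X. norm (T \<epsilon> x) \<le> K * p x"
    and pw: "\<And>x. x \<in> X \<Longrightarrow> \<exists>\<delta>>0. \<exists>M. \<forall>\<epsilon>\<in>{0<..<\<delta>}. norm (T \<epsilon> x) \<le> M"
    and d0: "dlt > 0"
  shows "\<exists>\<delta>>0. \<exists>M. \<forall>\<epsilon>\<in>{0<..<\<delta>}. \<forall>x\<in>X. norm (T \<epsilon> x) \<le> M * p x"
proof -
  interpret M: Metric_space X dd by (rule metric)
  define F where "F k = {x\<in>X. \<forall>\<epsilon>\<in>{0<..<min dlt (1 / (real k + 1))}. norm (T \<epsilon> x) \<le> real k}" for k :: nat
  have cov: "\<exists>k. x \<in> F k" if x: "x \<in> X" for x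
  proof -
    obtain \<delta> M where dM: "\<delta> > 0" "\<forall>\<epsilon>\<in>{0<..<\<delta>}. norm (T \<epsilon> x) \<le> M" using pw[OF x] by blast
    obtain k :: nat where k: "max M (1 / \<delta>) < real k" using reals_Archimedean2 by blast
    have "1 / (real k + 1) \<le> \<delta>"
    proof -
      have "1 / \<delta> < real k + 1" using k by simp
      then show ?thesis using dM(1) by (simp add: field_simps)
    qed
    then have "x \<in> F k" unfolding F_def using x dM(2) k by force
    then show ?thesis by blast
  qed
  obtain k x0 \<rho> where B: "\<rho> > 0" "x0 \<in> X"
    "\<And>y \<eta>. y \<in> X \<Longrightarrow> dd x0 y < \<rho> \<Longrightarrow> \<eta> > 0 \<Longrightarrow> \<exists>z\<in>F k \<inter> X. dd y z < \<eta>"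
    using M.baire_ball[OF mcomplete _ cov] zeroX by blast
  define \<delta> where "\<delta> = min dlt (1 / (real k + 1))"
  have \<delta>pos: "\<delta> > 0" unfolding \<delta>_def using d0 by simp
  have Tlin_diff: "T \<epsilon> (x - y) = T \<epsilon> x - T \<epsilon> y" if "\<epsilon> \<in> {0<..<dlt}" "x \<in> X" "y \<in> X" for \<epsilon> x y
  proof -
    have "T \<epsilon> (x + (-1) *\<^sub>R y) = T \<epsilon> x + T \<epsilon> ((-1) *\<^sub>R y)" by (rule lin[OF that(1) that(2) scaleX[OF that(3)]])
    also have "T \<epsilon> ((-1) *\<^sub>R y) = (-1) *\<^sub>R T \<epsilon> y" by (rule hom[OF that(1) that(3)])
    finally show ?thesis by simp
  qed
  have inball: "norm (T \<epsilon> y) \<le> real k" if e: "\<epsilon> \<in> {0<..<\<delta>}" and y: "y \<in> X" "dd x0 y < \<rho>" for \<epsilon> y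
  proof -
    have e0: "\<epsilon> \<in> {0<..<dlt}" using e unfolding \<delta>_def by auto
    obtain K where K: "\<forall>x\<in>X. norm (T \<epsilon> x) \<le> K * p x" using bnd[OF e0] by blast
    show ?thesis
    proof (rule le_eps_mult[where C = "\<bar>K\<bar>"])
      fix \<eta> :: real assume "\<eta> > 0"
      then obtain z where z: "z \<in> F k" "z \<in> X" "dd y z < \<eta>" using B(3)[OF y] by blast
      have "norm (T \<epsilon> z) \<le> real k" using z(1) e unfolding F_def \<delta>_def by auto
      moreover have "norm (T \<epsilon> (y - z)) \<le> \<bar>K\<bar> * \<eta>"
      proof -
        have "norm (T \<epsilon> (y - z)) \<le> K * p (y - z)" using K minusX[OF y(1) z(2)] by blast
        also have "\<dots> \<le> \<bar>K\<bar> * p (y - z)" using pnonneg[OF minusX[OF y(1) z(2)]] by (intro mult_right_mono) auto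
        also have "\<dots> \<le> \<bar>K\<bar> * \<eta>" using z(3) y(1) z(2) unfolding dd_def by (intro mult_left_mono) auto
        finally show ?thesis .
      qed
      moreover have "T \<epsilon> y = T \<epsilon> z + T \<epsilon> (y - z)" using Tlin_diff[OF e0 y(1) z(2)] by simp
      ultimately show "norm (T \<epsilon> y) \<le> real k + \<bar>K\<bar> * \<eta>"
        by (metis add_mono norm_triangle_ineq order_trans)
    qed
  qed
  have small: "norm (T \<epsilon> y) \<le> 2 * real k" if e: "\<epsilon> \<in> {0<..<\<delta>}" and y: "y \<in> X" "p y < \<rho>" for \<epsilon> y
  proof -
    have e0: "\<epsilon> \<in> {0<..<dlt}" using e unfolding \<delta>_def by auto
    have y'X: "x0 + y \<in> X" using addX[OF B(2) y(1)] .
    have "dd x0 (x0 + y) = p (- y)" unfolding dd_def using y'X B(2) by simp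
    hence "dd x0 (x0 + y) < \<rho>" using puminus[OF y(1)] y(2) by simp
    hence 1: "norm (T \<epsilon> (x0 + y)) \<le> real k" using inball[OF e y'X] by blast
    have "dd x0 x0 < \<rho>" using B unfolding dd_def by (simp add: p0)
    hence 2: "norm (T \<epsilon> x0) \<le> real k" using inball[OF e B(2)] by blast
    have "T \<epsilon> y = T \<epsilon> (x0 + y) - T \<epsilon> x0" using lin[OF e0 B(2) y(1)] by simp
    then show ?thesis using 1 2 norm_triangle_ineq4[of "T \<epsilon> (x0 + y)" "T \<epsilon> x0"] by simp
  qed
  have "\<forall>\<epsilon>\<in>{0<..<\<delta>}. \<forall>x\<in>X. norm (T \<epsilon> x) \<le> (4 * real k / \<rho>) * p x"
  proof (intro ballI)
    fix \<epsilon> x assume e: "\<epsilon> \<in> {0<..<\<delta>}" and x: "x \<in> X"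
    have e0: "\<epsilon> \<in> {0<..<dlt}" using e unfolding \<delta>_def by auto
    show "norm (T \<epsilon> x) \<le> (4 * real k / \<rho>) * p x"
    proof (cases "p x = 0")
      case True
      hence "x = 0" using pzero x by blast
      moreover have "T \<epsilon> 0 = 0" using hom[OF e0 zeroX, of 0] by simp
      ultimately show ?thesis by (simp add: p0)
    next
      case False
      hence px: "p x > 0" using pnonneg[OF x] by simp
      define s where "s = \<rho> / (2 * p x)"
      have s: "s > 0" unfolding s_def using px B(1) by simp
      have "p (s *\<^sub>R x) = \<rho> / 2" using pscale[OF x, of s] s px B(1) unfolding s_def by simp
      hence "norm (T \<epsilon> (s *\<^sub>R x)) \<le> 2 * real k" using small[OF e scaleX[OF x]] B(1) by simp
      hence "s * norm (T \<epsilon> x) \<le> 2 * real k" using hom[OF e0 x] s by simp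
      hence "norm (T \<epsilon> x) \<le> 2 * real k / s" using s by (simp add: field_simps)
      also have "2 * real k / s = (4 * real k / \<rho>) * p x" unfolding s_def using px B(1) by (simp add: field_simps)
      finally show ?thesis .
    qed
  qed
  then show ?thesis using \<delta>pos by blast
qed

lemma bounded_inverse:
  fixes T :: "'a \<Rightarrow> 'b::real_vector" and Y :: "'b set" and q :: "'b \<Rightarrow> real" and K :: real
  assumes Y: "cns Y q"
    and TY: "\<And>x. x \<in> X \<Longrightarrow> T x \<in> Y"
    and lin: "\<And>x y. x \<in> X \<Longrightarrow> y \<in> X \<Longrightarrow> T (x + y) = T x + T y"
    and hom: "\<And>x c. x \<in> X \<Longrightarrow> T (c *\<^sub>R x) = c *\<^sub>R T x"
    and bnd: "\<And>x. x \<in> X \<Longrightarrow> q (T x) \<le> K * p x"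
    and surj: "\<And>y. y \<in> Y \<Longrightarrow> \<exists>x\<in>X. T x = y"
    and inj: "\<And>x. x \<in> X \<Longrightarrow> T x = 0 \<Longrightarrow> x = 0"
  shows "\<exists>C. \<forall>x\<in>X. p x \<le> C * q (T x)"
proof -
  interpret Yc: cns Y q by (rule Y)
  interpret M: Metric_space Y Yc.dd by (rule Yc.metric)
  have T0: "T 0 = 0" using hom[OF zeroX, of 0] by simp
  have Tdiff: "T (x - y) = T x - T y" if "x \<in> X" "y \<in> X" for x y
  proof -
    have "T (x + (-1) *\<^sub>R y) = T x + T ((-1) *\<^sub>R y)" by (rule lin[OF that(1) scaleX[OF that(2)]])
    also have "T ((-1) *\<^sub>R y) = (-1) *\<^sub>R T y" by (rule hom[OF that(2)])
    finally show ?thesis by simp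
  qed
  define F where "F k = T ` {x\<in>X. p x \<le> real k}" for k :: nat
  have cov: "\<exists>k. y \<in> F k" if y: "y \<in> Y" for y
  proof -
    obtain x where x: "x \<in> X" "T x = y" using surj[OF y] by blast
    obtain k :: nat where "p x < real k" using reals_Archimedean2 by blast
    then have "y \<in> F k" unfolding F_def using x by force
    then show ?thesis by blast
  qed
  obtain k y0 \<rho> where B: "\<rho> > 0" "y0 \<in> Y"
    "\<And>y \<eta>. y \<in> Y \<Longrightarrow> Yc.dd y0 y < \<rho> \<Longrightarrow> \<eta> > 0 \<Longrightarrow> \<exists>z\<in>F k \<inter> Y. Yc.dd y z < \<eta>"
    using M.baire_ball[OF Yc.mcomplete _ cov] Yc.zeroX by blast
  have claim1: "\<exists>x\<in>X. p x \<le> 2 * real k \<and> q (y - T x) < \<eta>"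
    if y: "y \<in> Y" "q y < \<rho>" and eta: "\<eta> > 0" for y \<eta>
  proof -
    have y'Y: "y0 + y \<in> Y" using Yc.addX[OF B(2) y(1)] .
    have "Yc.dd y0 (y0 + y) = q (- y)" unfolding Yc.dd_def using y'Y B(2) by simp
    hence "Yc.dd y0 (y0 + y) < \<rho>" using Yc.puminus[OF y(1)] y(2) by simp
    then obtain z1 where z1: "z1 \<in> F k" "z1 \<in> Y" "Yc.dd (y0 + y) z1 < \<eta> / 2"
      using B(3)[OF y'Y, of "\<eta>/2"] eta by auto
    have "Yc.dd y0 y0 < \<rho>" using B unfolding Yc.dd_def by (simp add: Yc.p0)
    then obtain z2 where z2: "z2 \<in> F k" "z2 \<in> Y" "Yc.dd y0 z2 < \<eta> / 2"
      using B(3)[OF B(2), of "\<eta>/2"] eta by auto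
    obtain x1 where x1: "x1 \<in> X" "p x1 \<le> real k" "z1 = T x1" using z1(1) unfolding F_def by auto
    obtain x2 where x2: "x2 \<in> X" "p x2 \<le> real k" "z2 = T x2" using z2(1) unfolding F_def by auto
    have xX: "x1 - x2 \<in> X" using minusX[OF x1(1) x2(1)] .
    have "p (x1 - x2) \<le> p x1 + p (- x2)"
      using ptri[OF x1(1) uminusX[OF x2(1)]] by simp
    hence px: "p (x1 - x2) \<le> 2 * real k" using puminus[OF x2(1)] x1(2) x2(2) by simp
    have eq: "y - T (x1 - x2) = (y0 + y - z1) - (y0 - z2)"
      using Tdiff[OF x1(1) x2(1)] x1(3) x2(3) by (simp add: algebra_simps)
    have a: "y0 + y - z1 \<in> Y" using Yc.minusX[OF y'Y z1(2)] .
    have b: "y0 - z2 \<in> Y" using Yc.minusX[OF B(2) z2(2)] .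
    have "q ((y0 + y - z1) - (y0 - z2)) \<le> q (y0 + y - z1) + q (- (y0 - z2))"
      using Yc.ptri[OF a Yc.uminusX[OF b]] by simp
    also have "\<dots> < \<eta>" using z1(3) z2(3) Yc.puminus[OF b] y'Y z1(2) B(2) z2(2)
      unfolding Yc.dd_def by simp
    finally have "q ((y0 + y - z1) - (y0 - z2)) < \<eta>" .
    then have "q (y - T (x1 - x2)) < \<eta>" by (simp only: eq)
    then show ?thesis using xX px by blast
  qed
  define \<beta> where "\<beta> = 4 * real k / \<rho>"
  have \<beta>0: "\<beta> \<ge> 0" unfolding \<beta>_def using B(1) by simp
  have claim2: "\<exists>x\<in>X. p x \<le> \<beta> * q y \<and> q (y - T x) < \<eta>" if y: "y \<in> Y" and eta: "\<eta> > 0" for y \<eta>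
  proof (cases "q y = 0")
    case True
    hence "y = 0" using Yc.pzero y by blast
    have "p 0 \<le> \<beta> * q y" using True p0 by simp
    moreover have "q (y - T 0) < \<eta>" using \<open>y = 0\<close> T0 Yc.p0 eta by simp
    ultimately show ?thesis using zeroX by blast
  next
    case False
    hence qy: "q y > 0" using Yc.pnonneg[OF y] by simp
    define s where "s = \<rho> / (2 * q y)"
    have s: "s > 0" unfolding s_def using qy B(1) by simp
    have "q (s *\<^sub>R y) = \<rho> / 2" using Yc.pscale[OF y, of s] s qy B(1) unfolding s_def by simp
    then have lt: "q (s *\<^sub>R y) < \<rho>" using B(1) by simp
    have es: "\<eta> * s > 0" using eta s by simp
    obtain x1 where x1: "x1 \<in> X" "p x1 \<le> 2 * real k" "q (s *\<^sub>R y - T x1) < \<eta> * s"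
      using claim1[OF Yc.scaleX[OF y] lt es] by blast
    define x where "x = (1 / s) *\<^sub>R x1"
    have xX: "x \<in> X" unfolding x_def using scaleX[OF x1(1)] .
    have "p x = p x1 / s" unfolding x_def using pscale[OF x1(1), of "1/s"] s by simp
    also have "\<dots> \<le> 2 * real k / s" using x1(2) s by (simp add: divide_right_mono)
    also have "\<dots> = \<beta> * q y" unfolding s_def \<beta>_def using qy B(1) by (simp add: field_simps)
    finally have px: "p x \<le> \<beta> * q y" .
    have "y - T x = (1 / s) *\<^sub>R (s *\<^sub>R y - T x1)"
      unfolding x_def using hom[OF x1(1), of "1/s"] s by (simp add: algebra_simps)
    hence "q (y - T x) = q (s *\<^sub>R y - T x1) / s"
      using Yc.pscale[OF Yc.minusX[OF Yc.scaleX[OF y] TY[OF x1(1)]], of "1/s"] s by simp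
    also have "\<dots> < \<eta>" using x1(3) s by (simp add: field_simps)
    finally show ?thesis using xX px by blast
  qed
  have "\<forall>y. \<forall>\<eta>. \<exists>x. y \<in> Y \<longrightarrow> \<eta> > 0 \<longrightarrow> x \<in> X \<and> p x \<le> \<beta> * q y \<and> q (y - T x) < \<eta>"
    using claim2 by blast
  then obtain \<phi> where \<phi>: "\<And>y \<eta>. y \<in> Y \<Longrightarrow> \<eta> > 0 \<Longrightarrow> \<phi> y \<eta> \<in> X \<and> p (\<phi> y \<eta>) \<le> \<beta> * q y \<and> q (y - T (\<phi> y \<eta>)) < \<eta>"
    by metis
  have claim3: "\<exists>x\<in>X. T x = y \<and> p x \<le> 2 * \<beta> * q y" if y: "y \<in> Y" for y
  proof (cases "q y = 0")
    case True
    hence "y = 0" using Yc.pzero y by blast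
    then show ?thesis using zeroX T0 True by (auto simp: p0)
  next
    case False
    hence qy: "q y > 0" using Yc.pnonneg[OF y] by simp
    define e where "e i = q y / 2 ^ Suc i" for i :: nat
    have epos: "e i > 0" for i unfolding e_def using qy by simp
    define ys where "ys = rec_nat y (\<lambda>i yi. yi - T (\<phi> yi (e i)))"
    have ys0: "ys 0 = y" and ysS: "ys (Suc i) = ys i - T (\<phi> (ys i) (e i))" for i
      unfolding ys_def by simp_all
    define xs where "xs i = \<phi> (ys i) (e i)" for i
    have ysY: "ys i \<in> Y" for i
    proof (induction i)
      case 0 then show ?case using ys0 y by simp
    next
      case (Suc i)
      then show ?case using ysS Yc.minusX TY \<phi>[OF Suc epos] by metis
    qed
    have xsX: "xs i \<in> X" for i unfolding xs_def using \<phi>[OF ysY epos] by blast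
    have qys: "q (ys i) \<le> q y / 2 ^ i" for i
    proof (cases i)
      case 0 then show ?thesis using ys0 by simp
    next
      case (Suc j)
      have "q (ys (Suc j)) < e j" using \<phi>[OF ysY epos, of j] ysS[of j] by simp
      then show ?thesis using Suc unfolding e_def by simp
    qed
    have pxs: "p (xs i) \<le> \<beta> * q y / 2 ^ i" for i
    proof -
      have "p (xs i) \<le> \<beta> * q (ys i)" unfolding xs_def using \<phi>[OF ysY epos] by blast
      also have "\<dots> \<le> \<beta> * (q y / 2 ^ i)" using qys \<beta>0 by (intro mult_left_mono) auto
      finally show ?thesis by simp
    qed
    define sp where "sp n = (\<Sum>i<n. xs i)" for n
    have spX: "sp n \<in> X" for n
      unfolding sp_def by (induction n) (auto intro: addX xsX zeroX)
    have Tsp: "T (sp n) = y - ys n" for n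
    proof (induction n)
      case 0 then show ?case unfolding sp_def using T0 ys0 by simp
    next
      case (Suc n)
      have "T (sp (Suc n)) = T (sp n + xs n)" unfolding sp_def by simp
      also have "\<dots> = T (sp n) + T (xs n)" using lin[OF spX xsX] .
      finally show ?case using Suc ysS[of n] unfolding xs_def by simp
    qed
    have cauchy: "p (sp m - sp n) \<le> 2 * \<beta> * q y * (1 / 2 ^ n - 1 / 2 ^ m)" if "n \<le> m" for m n
      using that
    proof (induction m rule: dec_induct)
      case base then show ?case by (simp add: p0)
    next
      case (step m)
      have eq: "sp (Suc m) - sp n = (sp m - sp n) + xs m" unfolding sp_def by (simp add: algebra_simps)
      have "p (sp (Suc m) - sp n) \<le> p (sp m - sp n) + p (xs m)"
        unfolding eq by (rule ptri[OF minusX[OF spX spX] xsX])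
      also have "\<dots> \<le> 2 * \<beta> * q y * (1 / 2 ^ n - 1 / 2 ^ m) + \<beta> * q y / 2 ^ m"
        using step.IH pxs[of m] by simp
      also have "\<dots> = 2 * \<beta> * q y * (1 / 2 ^ n - 1 / 2 ^ Suc m)" by (simp add: field_simps)
      finally show ?case .
    qed
    have cauchy2: "p (sp m - sp n) \<le> 2 * \<beta> * q y / 2 ^ min m n" for m n
    proof (cases "n \<le> m")
      case True
      have "p (sp m - sp n) \<le> 2 * \<beta> * q y * (1 / 2 ^ n - 1 / 2 ^ m)" using cauchy[OF True] .
      also have "\<dots> \<le> 2 * \<beta> * q y * (1 / 2 ^ n)" using \<beta>0 qy by (intro mult_left_mono) auto
      finally show ?thesis using True \<beta>0 qy by (simp add: min_def p0)
    next
      case False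
      hence "m \<le> n" by simp
      have "p (sp m - sp n) = p (sp n - sp m)" using pcommute[OF spX spX] .
      also have "\<dots> \<le> 2 * \<beta> * q y * (1 / 2 ^ m - 1 / 2 ^ n)" using cauchy[OF \<open>m \<le> n\<close>] .
      also have "\<dots> \<le> 2 * \<beta> * q y * (1 / 2 ^ m)" using \<beta>0 qy by (intro mult_left_mono) auto
      finally show ?thesis using \<open>m \<le> n\<close> by (simp add: min_def)
    qed
    have geo: "\<exists>K. \<forall>k\<ge>K. C / 2 ^ k < e'" if "e' > 0" "C \<ge> 0" for C e' :: real
    proof -
      have pos: "e' / (C + 1) > 0" using that by simp
      obtain K where K: "(1/2::real) ^ K < e' / (C + 1)" using real_arch_pow_inv[OF pos, of "1/2"] by auto
      have "C / 2 ^ k < e'" if "k \<ge> K" for k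
      proof -
        have "(1/2::real) ^ k \<le> (1/2) ^ K" using that by (simp add: power_decreasing)
        hence "(1/2::real) ^ k < e' / (C + 1)" using K by linarith
        hence "(C + 1) * (1/2) ^ k < e'" using \<open>C \<ge> 0\<close> by (simp add: field_simps)
        moreover have "C / 2 ^ k \<le> (C + 1) * (1/2) ^ k" by (simp add: field_simps)
        ultimately show ?thesis by linarith
      qed
      then show ?thesis by blast
    qed
    have "\<exists>K. \<forall>k\<ge>K. \<forall>l\<ge>K. p (sp k - sp l) < e'" if e'pos: "e' > 0" for e'
    proof -
      obtain K where K: "\<forall>k\<ge>K. 2 * \<beta> * q y / 2 ^ k < e'" using geo[of e' "2 * \<beta> * q y"] e'pos \<beta>0 qy by auto
      show ?thesis
        using cauchy2 K by (metis min.bounded_iff order_le_less_trans)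
    qed
    then obtain x where x: "x \<in> X" "\<And>e'. e' > 0 \<Longrightarrow> \<exists>K. \<forall>k\<ge>K. p (sp k - x) < e'"
      using complete[of sp] spX by blast
    have psp: "p (sp n) \<le> 2 * \<beta> * q y" for n
    proof -
      have "p (sp n) = p (sp n - sp 0)" unfolding sp_def by simp
      also have "\<dots> \<le> 2 * \<beta> * q y * (1 / 2 ^ 0 - 1 / 2 ^ n)" using cauchy[of 0 n] by simp
      also have "\<dots> \<le> 2 * \<beta> * q y" using \<beta>0 qy by (simp add: mult_left_le)
      finally show ?thesis .
    qed
    have px: "p x \<le> 2 * \<beta> * q y"
    proof (rule field_le_epsilon)
      fix e' :: real assume "e' > 0"
      then obtain K where "p (sp K - x) < e'" using x(2) by blast
      moreover have "p x \<le> p (x - sp K) + p (sp K)" using ptri[OF minusX[OF x(1) spX[of K]] spX[of K]] by simp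
      moreover have "p (x - sp K) = p (sp K - x)" using pcommute[OF x(1) spX[of K]] .
      ultimately show "p x \<le> 2 * \<beta> * q y + e'" using psp[of K] by linarith
    qed
    have Txy: "T x = y"
    proof -
      have dY: "T x - y \<in> Y" using Yc.minusX[OF TY[OF x(1)] y] .
      have "q (T x - y) \<le> 0"
      proof (rule le_eps_mult[where C = "\<bar>K\<bar> + 1"])
        fix e' :: real assume e': "e' > 0"
        obtain K1 where K1: "\<forall>k\<ge>K1. p (sp k - x) < e'" using x(2) e' by blast
        obtain K2 where K2: "\<forall>k\<ge>K2. q y / 2 ^ k < e'" using geo[OF e', of "q y"] qy by auto
        define k where "k = max K1 K2"
        have eq: "T x - y = T (x - sp k) + (T (sp k) - y)" using Tdiff[OF x(1) spX[of k]] by (simp add: algebra_simps)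
        have "q (T x - y) \<le> q (T (x - sp k)) + q (T (sp k) - y)"
          unfolding eq by (rule Yc.ptri[OF TY[OF minusX[OF x(1) spX[of k]]] Yc.minusX[OF TY[OF spX[of k]] y]])
        also have "q (T (sp k) - y) = q (ys k)" using Tsp[of k] Yc.puminus[OF ysY] by simp
        also have "q (T (x - sp k)) \<le> K * p (x - sp k)" using bnd[OF minusX[OF x(1) spX]] .
        also have "K * p (x - sp k) \<le> \<bar>K\<bar> * e'"
        proof -
          have "p (x - sp k) < e'" using K1 pcommute[OF x(1) spX] unfolding k_def by auto
          then have "K * p (x - sp k) \<le> \<bar>K\<bar> * p (x - sp k)"
            using pnonneg[OF minusX[OF x(1) spX]] by (intro mult_right_mono) auto
          also have "\<dots> \<le> \<bar>K\<bar> * e'" using \<open>p (x - sp k) < e'\<close> by (intro mult_left_mono) auto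
          finally show ?thesis .
        qed
        also have "q (ys k) < e'" using qys[of k] K2 unfolding k_def by (meson max.cobounded2 order_le_less_trans)
        finally show "q (T x - y) \<le> 0 + (\<bar>K\<bar> + 1) * e'" by (simp add: algebra_simps)
      qed
      hence "q (T x - y) = 0" using Yc.pnonneg[OF dY] by simp
      then show ?thesis using Yc.pzero[OF dY] by simp
    qed
    show ?thesis using x(1) Txy px by blast
  qed
  have "\<forall>x\<in>X. p x \<le> (2 * \<beta>) * q (T x)"
  proof
    fix x assume x: "x \<in> X"
    obtain x' where x': "x' \<in> X" "T x' = T x" "p x' \<le> 2 * \<beta> * q (T x)" using claim3[OF TY[OF x]] by blast
    have "T (x - x') = 0" using Tdiff[OF x x'(1)] x'(2) by simp
    hence "x = x'" using inj[OF minusX[OF x x'(1)]] by simp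
    then show "p x \<le> (2 * \<beta>) * q (T x)" using x'(3) by simp
  qed
  then show ?thesis by blast
qed

end


lemma hderiv_comp: "hderiv a b j (hderiv a b i f) = hderiv a b (i + j) f"
  by (induction j) auto

lemma hderiv_1: "hderiv a b 1 f = (\<lambda>t. vector_derivative f (at t within {a..b}))"
  by simp

lemma hderiv_Suc': "hderiv a b (Suc j) f = hderiv a b j (hderiv a b 1 f)"
  using hderiv_comp[of a b j 1 f] by simp

lemma vd_cong:
  assumes "\<And>s. s \<in> {a..b} \<Longrightarrow> f s = g s" "t \<in> {a..b}"
  shows "vector_derivative f (at t within {a..b}) = vector_derivative g (at t within {a..b})"
proof -
  have "(f has_vector_derivative v) (at t within {a..b}) \<longleftrightarrow> (g has_vector_derivative v) (at t within {a..b})" for v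
    using has_vector_derivative_transform[of t "{a..b}" f g v] has_vector_derivative_transform[of t "{a..b}" g f v] assms
    by metis
  then show ?thesis unfolding vector_derivative_def by simp
qed

lemma hderiv_cong:
  assumes "\<And>s. s \<in> {a..b} \<Longrightarrow> f s = g s" "t \<in> {a..b}"
  shows "hderiv a b j f t = hderiv a b j g t"
  using assms(2)
proof (induction j arbitrary: t)
  case 0 then show ?case using assms(1) by simp
next
  case (Suc j)
  then show ?case using vd_cong[of a b "hderiv a b j f" "hderiv a b j g" t] by simp
qed

lemma hquot_cong:
  assumes "\<And>s. s \<in> {a..b} \<Longrightarrow> f s = g s"
  shows "hquot a b \<alpha> f = hquot a b \<alpha> g"
proof -
  have *: "f t1 = g t1 \<and> f t2 = g t2" if "a \<le> t1" "t1 < t2" "t2 \<le> b" for t1 t2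
    using assms that by auto
  show ?thesis unfolding hquot_def
  proof (rule Collect_cong, rule iffI)
    fix u assume "\<exists>t1 t2. u = cmod (f t2 - f t1) / (t2 - t1) powr \<alpha> \<and> a \<le> t1 \<and> t1 < t2 \<and> t2 \<le> b"
    then obtain t1 t2 where "u = cmod (f t2 - f t1) / (t2 - t1) powr \<alpha>" "a \<le> t1" "t1 < t2" "t2 \<le> b" by blast
    then show "\<exists>t1 t2. u = cmod (g t2 - g t1) / (t2 - t1) powr \<alpha> \<and> a \<le> t1 \<and> t1 < t2 \<and> t2 \<le> b"
      using *[of t1 t2] by auto
  next
    fix u assume "\<exists>t1 t2. u = cmod (g t2 - g t1) / (t2 - t1) powr \<alpha> \<and> a \<le> t1 \<and> t1 < t2 \<and> t2 \<le> b"
    then obtain t1 t2 where "u = cmod (g t2 - g t1) / (t2 - t1) powr \<alpha>" "a \<le> t1" "t1 < t2" "t2 \<le> b" by blast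
    then show "\<exists>t1 t2. u = cmod (f t2 - f t1) / (t2 - t1) powr \<alpha> \<and> a \<le> t1 \<and> t1 < t2 \<and> t2 \<le> b"
      using *[of t1 t2] by (intro exI[of _ t1] exI[of _ t2]) auto
  qed
qed

lemma Hoelder_cong:
  assumes "\<And>s. s \<in> {a..b} \<Longrightarrow> f s = g s"
  shows "f \<in> Hoelder a b n \<alpha> \<longleftrightarrow> g \<in> Hoelder a b n \<alpha>"
proof -
  have D: "\<And>j t. t \<in> {a..b} \<Longrightarrow> hderiv a b j f t = hderiv a b j g t"
    using hderiv_cong[of a b f g] assms by blast
  have 1: "(hderiv a b j f has_vector_derivative v) (at t within {a..b}) \<longleftrightarrow>
           (hderiv a b j g has_vector_derivative v) (at t within {a..b})" if "t \<in> {a..b}" for j t v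
    using has_vector_derivative_transform[of t "{a..b}" "hderiv a b j f" "hderiv a b j g" v]
      has_vector_derivative_transform[of t "{a..b}" "hderiv a b j g" "hderiv a b j f" v] D that
    by metis
  have 2: "continuous_on {a..b} (hderiv a b j f) \<longleftrightarrow> continuous_on {a..b} (hderiv a b j g)" for j
    using continuous_on_cong[OF refl, of "{a..b}" "hderiv a b j f" "hderiv a b j g"] D by blast
  have 3: "hquot a b \<alpha> (hderiv a b n f) = hquot a b \<alpha> (hderiv a b n g)"
    using hquot_cong D by blast
  have 4: "(\<forall>t\<in>{a..b}. (hderiv a b j f has_vector_derivative hderiv a b (Suc j) f t) (at t within {a..b})) \<longleftrightarrow>
          (\<forall>t\<in>{a..b}. (hderiv a b j g has_vector_derivative hderiv a b (Suc j) g t) (at t within {a..b}))" for j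
    using 1 D[of _ "Suc j"] by (metis (no_types))
  show ?thesis unfolding Hoelder_def mem_Collect_eq using 2 3 4 by (simp del: hderiv.simps(2))
qed

lemma hnorm_cong:
  assumes "\<And>s. s \<in> {a..b} \<Longrightarrow> f s = g s"
  shows "hnorm a b n \<alpha> f = hnorm a b n \<alpha> g"
proof -
  have D: "\<And>j t. t \<in> {a..b} \<Longrightarrow> hderiv a b j f t = hderiv a b j g t"
    using hderiv_cong[of a b f g] assms by blast
  have "(\<lambda>t. cmod (hderiv a b j f t)) ` {a..b} = (\<lambda>t. cmod (hderiv a b j g t)) ` {a..b}" for j
    using D by auto
  moreover have "hquot a b \<alpha> (hderiv a b n f) = hquot a b \<alpha> (hderiv a b n g)"
    using hquot_cong D by blast
  ultimately show ?thesis unfolding hnorm_def by simp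
qed

declare hderiv.simps(2)[simp del]

definition supn :: "real \<Rightarrow> real \<Rightarrow> (real \<Rightarrow> complex) \<Rightarrow> real" where
  "supn a b f = Sup ((\<lambda>t. cmod (f t)) ` {a..b})"

lemma Hoelder_0: "f \<in> Hoelder a b 0 \<alpha> \<longleftrightarrow> continuous_on {a..b} f \<and> bdd_above (hquot a b \<alpha> f)"
  unfolding Hoelder_def by simp

lemma hnorm_0: "hnorm a b 0 \<alpha> f = supn a b f + Sup (hquot a b \<alpha> f)"
  unfolding hnorm_def supn_def by simp

lemma Hoelder_Suc:
  "f \<in> Hoelder a b (Suc n) \<alpha> \<longleftrightarrow> continuous_on {a..b} f
     \<and> (\<forall>t\<in>{a..b}. (f has_vector_derivative hderiv a b 1 f t) (at t within {a..b}))
     \<and> hderiv a b 1 f \<in> Hoelder a b n \<alpha>"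
proof -
  have e: "hderiv a b j (hderiv a b 1 f) = hderiv a b (Suc j) f" for j
    using hderiv_comp[of a b j 1 f] by simp
  have A: "(\<forall>j<Suc n. P j) \<longleftrightarrow> P 0 \<and> (\<forall>j<n. P (Suc j))" for P
    using less_Suc_eq_0_disj by auto
  have B: "(\<forall>j\<le>Suc n. P j) \<longleftrightarrow> P 0 \<and> (\<forall>j\<le>n. P (Suc j))" for P
    apply (rule iffI)
     apply simp
    apply clarify
    subgoal for j by (cases j) auto
    done
  show ?thesis
    unfolding Hoelder_def mem_Collect_eq A B e by auto
qed

lemma hnorm_Suc: "hnorm a b (Suc n) \<alpha> f = supn a b f + hnorm a b n \<alpha> (hderiv a b 1 f)"
proof -
  have e: "hderiv a b j (hderiv a b 1 f) = hderiv a b (Suc j) f" for j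
    using hderiv_comp[of a b j 1 f] by simp
  show ?thesis
    unfolding hnorm_def supn_def e sum.atMost_Suc_shift
    by (simp del: hderiv.simps(2) sum.atMost_Suc)
qed


locale hctx =
  fixes a b \<alpha> :: real
  assumes ab: "a < b" and al0: "0 < \<alpha>" and al1: "\<alpha> \<le> 1"
begin

lemma hquot_ne: "hquot a b \<alpha> f \<noteq> {}"
  unfolding hquot_def using ab by blast

lemma hquot_nonneg: "u \<in> hquot a b \<alpha> f \<Longrightarrow> 0 \<le> u"
  unfolding hquot_def by auto

lemma hs_nonneg: "bdd_above (hquot a b \<alpha> f) \<Longrightarrow> 0 \<le> Sup (hquot a b \<alpha> f)"
proof -
  assume bdd: "bdd_above (hquot a b \<alpha> f)"
  obtain u where u: "u \<in> hquot a b \<alpha> f" using hquot_ne by blast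
  have "u \<le> Sup (hquot a b \<alpha> f)" using cSup_upper[OF u bdd] .
  then show ?thesis using hquot_nonneg[OF u] by linarith
qed

lemma hold_le:
  assumes "bdd_above (hquot a b \<alpha> f)" "a \<le> t1" "t1 < t2" "t2 \<le> b"
  shows "cmod (f t2 - f t1) \<le> Sup (hquot a b \<alpha> f) * (t2 - t1) powr \<alpha>"
proof -
  have u: "cmod (f t2 - f t1) / (t2 - t1) powr \<alpha> \<in> hquot a b \<alpha> f"
    unfolding hquot_def using assms by blast
  have "cmod (f t2 - f t1) / (t2 - t1) powr \<alpha> \<le> Sup (hquot a b \<alpha> f)" using cSup_upper[OF u assms(1)] .
  moreover have "(t2 - t1) powr \<alpha> > 0" using assms by simp
  ultimately show ?thesis by (simp add: field_simps)
qed

lemma hold_intro: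
  assumes "\<And>t1 t2. a \<le> t1 \<Longrightarrow> t1 < t2 \<Longrightarrow> t2 \<le> b \<Longrightarrow> cmod (f t2 - f t1) \<le> C * (t2 - t1) powr \<alpha>"
  shows "bdd_above (hquot a b \<alpha> f) \<and> Sup (hquot a b \<alpha> f) \<le> C"
proof -
  have le: "u \<le> C" if u: "u \<in> hquot a b \<alpha> f" for u
  proof -
    obtain t1 t2 where t: "u = cmod (f t2 - f t1) / (t2 - t1) powr \<alpha>" "a \<le> t1" "t1 < t2" "t2 \<le> b"
      using u unfolding hquot_def by blast
    have p: "(t2 - t1) powr \<alpha> > 0" using t by simp
    have "u * (t2 - t1) powr \<alpha> = cmod (f t2 - f t1)" using t(1) p by simp
    hence "u * (t2 - t1) powr \<alpha> \<le> C * (t2 - t1) powr \<alpha>" using assms[OF t(2-4)] by simp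
    then show ?thesis using p by (simp add: mult_le_cancel_right_pos)
  qed
  then have "bdd_above (hquot a b \<alpha> f)" by (meson bdd_aboveI)
  moreover have "Sup (hquot a b \<alpha> f) \<le> C" using cSup_least[OF hquot_ne] le by blast
  ultimately show ?thesis by blast
qed

lemma supn_bdd: "continuous_on {a..b} f \<Longrightarrow> bdd_above ((\<lambda>t. cmod (f t)) ` {a..b})"
proof -
  assume c: "continuous_on {a..b} f"
  have "compact ((\<lambda>t. cmod (f t)) ` {a..b})"
    by (rule compact_continuous_image[OF continuous_on_norm[OF c] compact_Icc])
  then show ?thesis by (simp add: bounded_imp_bdd_above compact_imp_bounded)
qed

lemma supn_ge: "continuous_on {a..b} f \<Longrightarrow> t \<in> {a..b} \<Longrightarrow> cmod (f t) \<le> supn a b f"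
  unfolding supn_def by (rule cSup_upper) (auto intro: supn_bdd)

lemma supn_le: "(\<And>t. t \<in> {a..b} \<Longrightarrow> cmod (f t) \<le> C) \<Longrightarrow> supn a b f \<le> C"
  unfolding supn_def using ab by (intro cSup_least) auto

lemma supn_nonneg: "continuous_on {a..b} f \<Longrightarrow> 0 \<le> supn a b f"
  using supn_ge[of f a] ab by (meson atLeastAtMost_iff dual_order.trans less_imp_le norm_ge_zero order_refl)

lemma H_cont: "f \<in> Hoelder a b n \<alpha> \<Longrightarrow> continuous_on {a..b} f"
  unfolding Hoelder_def by (metis (no_types, lifting) hderiv.simps(1) le0 mem_Collect_eq)

lemma hn_ge: "f \<in> Hoelder a b n \<alpha> \<Longrightarrow> supn a b f \<le> hnorm a b n \<alpha> f"
proof (induction n arbitrary: f)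
  case 0
  then show ?case using hs_nonneg unfolding Hoelder_0 hnorm_0 by auto
next
  case (Suc n)
  then have "hderiv a b 1 f \<in> Hoelder a b n \<alpha>" unfolding Hoelder_Suc by blast
  then have "0 \<le> hnorm a b n \<alpha> (hderiv a b 1 f)"
    using Suc.IH supn_nonneg H_cont by (meson order.trans)
  then show ?case unfolding hnorm_Suc by simp
qed

lemma hn_nonneg: "f \<in> Hoelder a b n \<alpha> \<Longrightarrow> 0 \<le> hnorm a b n \<alpha> f"
  using hn_ge supn_nonneg H_cont by (meson order.trans)

lemma hn_zero: "f \<in> Hoelder a b n \<alpha> \<Longrightarrow> hnorm a b n \<alpha> f = 0 \<Longrightarrow> t \<in> {a..b} \<Longrightarrow> f t = 0"
proof -
  assume "f \<in> Hoelder a b n \<alpha>" "hnorm a b n \<alpha> f = 0" "t \<in> {a..b}"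
  moreover have "supn a b f \<le> hnorm a b n \<alpha> f" using hn_ge calculation(1) .
  moreover have "cmod (f t) \<le> supn a b f" using supn_ge[OF H_cont] calculation(1,3) .
  ultimately have "cmod (f t) \<le> 0" by linarith
  then show "f t = 0" by simp
qed

lemma vd_eq: "t \<in> {a..b} \<Longrightarrow> (f has_vector_derivative v) (at t within {a..b}) \<Longrightarrow> hderiv a b 1 f t = v"
  using vector_derivative_within_closed_interval[OF ab] by (simp add: hderiv.simps(2))

lemma H_deriv: "f \<in> Hoelder a b n \<alpha> \<Longrightarrow> j < n \<Longrightarrow> t \<in> {a..b} \<Longrightarrow>
    (hderiv a b j f has_vector_derivative hderiv a b (Suc j) f t) (at t within {a..b})"
  unfolding Hoelder_def by blast

lemma D_lin:
  assumes f: "f \<in> Hoelder a b n \<alpha>" and g: "g \<in> Hoelder a b n \<alpha>" and j: "j \<le> n"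
  shows "t \<in> {a..b} \<Longrightarrow> hderiv a b j (\<lambda>s. c * f s + d * g s) t = c * hderiv a b j f t + d * hderiv a b j g t"
  using j
proof (induction j arbitrary: t)
  case 0 then show ?case by simp
next
  case (Suc j)
  have jn: "j < n" using Suc.prems by simp
  have "hderiv a b (Suc j) (\<lambda>s. c * f s + d * g s) t =
        vector_derivative (\<lambda>s. c * hderiv a b j f s + d * hderiv a b j g s) (at t within {a..b})"
    using vd_cong[of a b "hderiv a b j (\<lambda>s. c * f s + d * g s)" "\<lambda>s. c * hderiv a b j f s + d * hderiv a b j g s" t]
      Suc.IH Suc.prems jn by (simp add: hderiv.simps(2))
  also have "\<dots> = c * hderiv a b (Suc j) f t + d * hderiv a b (Suc j) g t"
  proof (rule vector_derivative_within_closed_interval[OF ab Suc.prems(1)])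
    show "((\<lambda>s. c * hderiv a b j f s + d * hderiv a b j g s) has_vector_derivative
          c * hderiv a b (Suc j) f t + d * hderiv a b (Suc j) g t) (at t within {a..b})"
      using H_deriv[OF f jn Suc.prems(1)] H_deriv[OF g jn Suc.prems(1)]
      by (intro has_vector_derivative_add has_vector_derivative_mult_right)
  qed
  finally show ?case .
qed

lemma H_lin:
  assumes "f \<in> Hoelder a b n \<alpha>" "g \<in> Hoelder a b n \<alpha>"
  shows "(\<lambda>s. c * f s + d * g s) \<in> Hoelder a b n \<alpha> \<and>
         hnorm a b n \<alpha> (\<lambda>s. c * f s + d * g s) \<le> cmod c * hnorm a b n \<alpha> f + cmod d * hnorm a b n \<alpha> g"
  using assms
proof (induction n arbitrary: f g)
  case 0
  let ?h = "\<lambda>s. c * f s + d * g s"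
  have cf: "continuous_on {a..b} f" "bdd_above (hquot a b \<alpha> f)"
    and cg: "continuous_on {a..b} g" "bdd_above (hquot a b \<alpha> g)" using 0 unfolding Hoelder_0 by auto
  have ch: "continuous_on {a..b} ?h" using cf cg by (intro continuous_intros)
  have "cmod (?h t2 - ?h t1) \<le> (cmod c * Sup (hquot a b \<alpha> f) + cmod d * Sup (hquot a b \<alpha> g)) * (t2 - t1) powr \<alpha>"
    if "a \<le> t1" "t1 < t2" "t2 \<le> b" for t1 t2
  proof -
    have "?h t2 - ?h t1 = c * (f t2 - f t1) + d * (g t2 - g t1)" by (simp add: algebra_simps)
    hence "cmod (?h t2 - ?h t1) \<le> cmod c * cmod (f t2 - f t1) + cmod d * cmod (g t2 - g t1)"
      by (metis norm_mult norm_triangle_ineq)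
    also have "\<dots> \<le> cmod c * (Sup (hquot a b \<alpha> f) * (t2 - t1) powr \<alpha>) + cmod d * (Sup (hquot a b \<alpha> g) * (t2 - t1) powr \<alpha>)"
      using hold_le[OF cf(2) that] hold_le[OF cg(2) that] by (intro add_mono mult_left_mono) auto
    finally show ?thesis by (simp add: algebra_simps)
  qed
  then have hh0: "bdd_above (hquot a b \<alpha> ?h) \<and> Sup (hquot a b \<alpha> ?h) \<le> cmod c * Sup (hquot a b \<alpha> f) + cmod d * Sup (hquot a b \<alpha> g)"
    by (rule hold_intro)
  note hh = conjunct1[OF hh0] conjunct2[OF hh0]
  have "supn a b ?h \<le> cmod c * supn a b f + cmod d * supn a b g"
  proof (rule supn_le)
    fix t assume t: "t \<in> {a..b}"
    have "cmod (?h t) \<le> cmod c * cmod (f t) + cmod d * cmod (g t)" by (metis norm_mult norm_triangle_ineq)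
    also have "\<dots> \<le> cmod c * supn a b f + cmod d * supn a b g"
      using supn_ge[OF cf(1) t] supn_ge[OF cg(1) t] by (intro add_mono mult_left_mono) auto
    finally show "cmod (?h t) \<le> cmod c * supn a b f + cmod d * supn a b g" .
  qed
  then show ?case using hh ch unfolding Hoelder_0 hnorm_0 by (simp add: algebra_simps)
next
  case (Suc n)
  let ?h = "\<lambda>s. c * f s + d * g s"
  let ?h' = "\<lambda>s. c * hderiv a b 1 f s + d * hderiv a b 1 g s"
  have f: "continuous_on {a..b} f" "\<And>t. t \<in> {a..b} \<Longrightarrow> (f has_vector_derivative hderiv a b 1 f t) (at t within {a..b})"
    "hderiv a b 1 f \<in> Hoelder a b n \<alpha>" using Suc.prems(1) unfolding Hoelder_Suc by auto
  have g: "continuous_on {a..b} g" "\<And>t. t \<in> {a..b} \<Longrightarrow> (g has_vector_derivative hderiv a b 1 g t) (at t within {a..b})"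
    "hderiv a b 1 g \<in> Hoelder a b n \<alpha>" using Suc.prems(2) unfolding Hoelder_Suc by auto
  have ch: "continuous_on {a..b} ?h" using f g by (intro continuous_intros)
  have dh: "(?h has_vector_derivative ?h' t) (at t within {a..b})" if "t \<in> {a..b}" for t
    using f(2)[OF that] g(2)[OF that] by (intro has_vector_derivative_add has_vector_derivative_mult_right)
  have D1: "hderiv a b 1 ?h t = ?h' t" if "t \<in> {a..b}" for t using vd_eq[OF that dh[OF that]] .
  from Suc.IH[OF f(3) g(3)] have IH: "?h' \<in> Hoelder a b n \<alpha>"
    "hnorm a b n \<alpha> ?h' \<le> cmod c * hnorm a b n \<alpha> (hderiv a b 1 f) + cmod d * hnorm a b n \<alpha> (hderiv a b 1 g)" by auto
  have D1H: "hderiv a b 1 ?h \<in> Hoelder a b n \<alpha>" using Hoelder_cong[of a b "hderiv a b 1 ?h" ?h' n \<alpha>] D1 IH(1) by blast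
  have D1n: "hnorm a b n \<alpha> (hderiv a b 1 ?h) = hnorm a b n \<alpha> ?h'" using hnorm_cong[of a b "hderiv a b 1 ?h" ?h' n \<alpha>] D1 by blast
  have "supn a b ?h \<le> cmod c * supn a b f + cmod d * supn a b g"
  proof (rule supn_le)
    fix t assume t: "t \<in> {a..b}"
    have "cmod (?h t) \<le> cmod c * cmod (f t) + cmod d * cmod (g t)" by (metis norm_mult norm_triangle_ineq)
    also have "\<dots> \<le> cmod c * supn a b f + cmod d * supn a b g"
      using supn_ge[OF f(1) t] supn_ge[OF g(1) t] by (intro add_mono mult_left_mono) auto
    finally show "cmod (?h t) \<le> cmod c * supn a b f + cmod d * supn a b g" .
  qed
  then have "hnorm a b (Suc n) \<alpha> ?h \<le> cmod c * hnorm a b (Suc n) \<alpha> f + cmod d * hnorm a b (Suc n) \<alpha> g"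
    unfolding hnorm_Suc D1n using IH(2) by (simp add: algebra_simps)
  moreover have "?h \<in> Hoelder a b (Suc n) \<alpha>" unfolding Hoelder_Suc using ch dh D1 D1H by auto
  ultimately show ?case by blast
qed

end


context hctx
begin

lemma H_add: "f \<in> Hoelder a b n \<alpha> \<Longrightarrow> g \<in> Hoelder a b n \<alpha> \<Longrightarrow>
  (\<lambda>s. f s + g s) \<in> Hoelder a b n \<alpha> \<and> hnorm a b n \<alpha> (\<lambda>s. f s + g s) \<le> hnorm a b n \<alpha> f + hnorm a b n \<alpha> g"
  using H_lin[of f n g 1 1] by simp

lemma H_diff: "f \<in> Hoelder a b n \<alpha> \<Longrightarrow> g \<in> Hoelder a b n \<alpha> \<Longrightarrow>
  (\<lambda>s. f s - g s) \<in> Hoelder a b n \<alpha> \<and> hnorm a b n \<alpha> (\<lambda>s. f s - g s) \<le> hnorm a b n \<alpha> f + hnorm a b n \<alpha> g"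
  using H_lin[of f n g 1 "-1"] by simp

lemma H_scale: "f \<in> Hoelder a b n \<alpha> \<Longrightarrow>
  (\<lambda>s. c * f s) \<in> Hoelder a b n \<alpha> \<and> hnorm a b n \<alpha> (\<lambda>s. c * f s) \<le> cmod c * hnorm a b n \<alpha> f"
  using H_lin[of f n f c 0] by simp

lemma hn_scale:
  assumes f: "f \<in> Hoelder a b n \<alpha>"
  shows "hnorm a b n \<alpha> (\<lambda>s. c * f s) = cmod c * hnorm a b n \<alpha> f"
proof (cases "c = 0")
  case True
  have "(\<lambda>s. 0 * f s) \<in> Hoelder a b n \<alpha>" "hnorm a b n \<alpha> (\<lambda>s. 0 * f s) \<le> 0"
    using H_scale[OF f, of 0] by auto
  then show ?thesis using True hn_nonneg by force
next
  case False
  have 1: "hnorm a b n \<alpha> (\<lambda>s. c * f s) \<le> cmod c * hnorm a b n \<alpha> f" using H_scale[OF f] by blast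
  have "hnorm a b n \<alpha> (\<lambda>s. (1 / c) * (c * f s)) \<le> cmod (1 / c) * hnorm a b n \<alpha> (\<lambda>s. c * f s)"
    using H_scale[OF conjunct1[OF H_scale[OF f, of c]], of "1/c"] by blast
  hence "hnorm a b n \<alpha> f \<le> hnorm a b n \<alpha> (\<lambda>s. c * f s) / cmod c" using False by (simp add: norm_divide)
  hence "cmod c * hnorm a b n \<alpha> f \<le> hnorm a b n \<alpha> (\<lambda>s. c * f s)" using False by (simp add: field_simps)
  then show ?thesis using 1 by linarith
qed

lemma D_add: "f \<in> Hoelder a b n \<alpha> \<Longrightarrow> g \<in> Hoelder a b n \<alpha> \<Longrightarrow> j \<le> n \<Longrightarrow> t \<in> {a..b} \<Longrightarrow>
  hderiv a b j (\<lambda>s. f s + g s) t = hderiv a b j f t + hderiv a b j g t"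
  using D_lin[of f n g j t 1 1] by simp

lemma D_diff: "f \<in> Hoelder a b n \<alpha> \<Longrightarrow> g \<in> Hoelder a b n \<alpha> \<Longrightarrow> j \<le> n \<Longrightarrow> t \<in> {a..b} \<Longrightarrow>
  hderiv a b j (\<lambda>s. f s - g s) t = hderiv a b j f t - hderiv a b j g t"
  using D_lin[of f n g j t 1 "-1"] by simp

lemma D_scale: "f \<in> Hoelder a b n \<alpha> \<Longrightarrow> j \<le> n \<Longrightarrow> t \<in> {a..b} \<Longrightarrow>
  hderiv a b j (\<lambda>s. c * f s) t = c * hderiv a b j f t"
  using D_lin[of f n f j t c 0] by simp

lemma mvt_bound:
  assumes d: "\<And>t. t \<in> {a..b} \<Longrightarrow> (f has_vector_derivative f' t) (at t within {a..b})"
    and B: "\<And>t. t \<in> {a..b} \<Longrightarrow> cmod (f' t) \<le> B"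
    and x: "x \<in> {a..b}" and y: "y \<in> {a..b}"
  shows "cmod (f x - f y) \<le> B * \<bar>x - y\<bar>"
proof -
  have "norm (f x - f y) \<le> B * norm (x - y)"
  proof (rule differentiable_bound[of "{a..b}" f "\<lambda>t h. h *\<^sub>R f' t" B x y])
    show "convex {a..b}" by simp
    show "\<And>t. t \<in> {a..b} \<Longrightarrow> (f has_derivative (\<lambda>h. h *\<^sub>R f' t)) (at t within {a..b})"
      using d unfolding has_vector_derivative_def by blast
    show "\<And>t. t \<in> {a..b} \<Longrightarrow> onorm (\<lambda>h. h *\<^sub>R f' t) \<le> B"
    proof -
      fix t assume t: "t \<in> {a..b}"
      have o1: "onorm (\<lambda>x::real. x) = 1" by (rule onorm_id)
      have "onorm (\<lambda>h::real. h *\<^sub>R f' t) = onorm (\<lambda>x::real. x) * cmod (f' t)"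
        by (rule onorm_scaleR_left[OF bounded_linear_ident])
      then show "onorm (\<lambda>h. h *\<^sub>R f' t) \<le> B" using o1 B[OF t] by simp
    qed
  qed (use x y in auto)
  then show ?thesis by simp
qed

definition c0 :: real where "c0 = 1 + (b - a) powr (1 - \<alpha>)"

lemma c0_ge: "1 \<le> c0" "(b - a) powr (1 - \<alpha>) \<le> c0"
  unfolding c0_def by auto

lemma H_mono: "f \<in> Hoelder a b (Suc n) \<alpha> \<Longrightarrow>
   f \<in> Hoelder a b n \<alpha> \<and> hnorm a b n \<alpha> f \<le> c0 * hnorm a b (Suc n) \<alpha> f"
proof (induction n arbitrary: f)
  case 0
  have f: "continuous_on {a..b} f" "\<And>t. t \<in> {a..b} \<Longrightarrow> (f has_vector_derivative hderiv a b 1 f t) (at t within {a..b})"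
    "hderiv a b 1 f \<in> Hoelder a b 0 \<alpha>" using 0 unfolding Hoelder_Suc by auto
  have cD: "continuous_on {a..b} (hderiv a b 1 f)" using H_cont[OF f(3)] .
  let ?B = "supn a b (hderiv a b 1 f)"
  have "cmod (f t2 - f t1) \<le> (?B * (b - a) powr (1 - \<alpha>)) * (t2 - t1) powr \<alpha>"
    if t: "a \<le> t1" "t1 < t2" "t2 \<le> b" for t1 t2
  proof -
    have "cmod (f t2 - f t1) \<le> ?B * \<bar>t2 - t1\<bar>"
      by (rule mvt_bound[OF f(2) supn_ge[OF cD]]) (use t in auto)
    also have "\<bar>t2 - t1\<bar> = (t2 - t1) powr (1 - \<alpha>) * (t2 - t1) powr \<alpha>"
      using t by (simp add: powr_add[symmetric])
    also have "?B * ((t2 - t1) powr (1 - \<alpha>) * (t2 - t1) powr \<alpha>) \<le> ?B * ((b - a) powr (1 - \<alpha>) * (t2 - t1) powr \<alpha>)"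
      using t al1 supn_nonneg[OF cD] by (intro mult_left_mono mult_right_mono powr_mono2) auto
    finally show ?thesis by (simp add: algebra_simps)
  qed
  then have hq: "bdd_above (hquot a b \<alpha> f) \<and> Sup (hquot a b \<alpha> f) \<le> ?B * (b - a) powr (1 - \<alpha>)"
    by (rule hold_intro)
  have fH: "f \<in> Hoelder a b 0 \<alpha>" using f(1) hq by (simp add: Hoelder_0)
  have "hnorm a b 0 \<alpha> f \<le> supn a b f + ?B * (b - a) powr (1 - \<alpha>)" using hq unfolding hnorm_0 by simp
  also have "\<dots> \<le> c0 * supn a b f + c0 * ?B"
  proof -
    have A: "1 * supn a b f \<le> c0 * supn a b f" by (rule mult_right_mono[OF c0_ge(1) supn_nonneg[OF f(1)]])
    have B: "?B * (b - a) powr (1 - \<alpha>) \<le> ?B * c0" by (rule mult_left_mono[OF c0_ge(2) supn_nonneg[OF cD]])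
    show ?thesis using A B by (simp add: mult.commute)
  qed
  also have "\<dots> \<le> c0 * hnorm a b (Suc 0) \<alpha> f"
  proof -
    have "c0 * ?B \<le> c0 * hnorm a b 0 \<alpha> (hderiv a b 1 f)"
      using hn_ge[OF f(3)] c0_ge by (intro mult_left_mono) auto
    then show ?thesis unfolding hnorm_Suc[of a b 0] by (simp add: distrib_left)
  qed
  finally show ?case using fH by simp
next
  case (Suc n)
  have f: "continuous_on {a..b} f" "\<forall>t\<in>{a..b}. (f has_vector_derivative hderiv a b 1 f t) (at t within {a..b})"
    "hderiv a b 1 f \<in> Hoelder a b (Suc n) \<alpha>" using Suc.prems unfolding Hoelder_Suc by auto
  from Suc.IH[OF f(3)] have IH: "hderiv a b 1 f \<in> Hoelder a b n \<alpha>"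
    "hnorm a b n \<alpha> (hderiv a b 1 f) \<le> c0 * hnorm a b (Suc n) \<alpha> (hderiv a b 1 f)" by auto
  have fH: "f \<in> Hoelder a b (Suc n) \<alpha>" unfolding Hoelder_Suc using f(1,2) IH(1) by blast
  have "hnorm a b (Suc n) \<alpha> f = supn a b f + hnorm a b n \<alpha> (hderiv a b 1 f)" by (rule hnorm_Suc)
  hence "hnorm a b (Suc n) \<alpha> f \<le> supn a b f + c0 * hnorm a b (Suc n) \<alpha> (hderiv a b 1 f)"
    using IH(2) by linarith
  also have "\<dots> \<le> c0 * (supn a b f + hnorm a b (Suc n) \<alpha> (hderiv a b 1 f))"
  proof -
    have A: "1 * supn a b f \<le> c0 * supn a b f" by (rule mult_right_mono[OF c0_ge(1) supn_nonneg[OF f(1)]])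
    then show ?thesis by (simp add: distrib_left)
  qed
  also have "\<dots> = c0 * hnorm a b (Suc (Suc n)) \<alpha> f" unfolding hnorm_Suc[of a b "Suc n"] by simp
  finally show ?case using fH by simp
qed

lemma H_mono_iter: "f \<in> Hoelder a b (n + i) \<alpha> \<Longrightarrow>
   f \<in> Hoelder a b n \<alpha> \<and> hnorm a b n \<alpha> f \<le> c0 ^ i * hnorm a b (n + i) \<alpha> f"
proof (induction i arbitrary: f)
  case 0 then show ?case by simp
next
  case (Suc i)
  have "f \<in> Hoelder a b (n + i) \<alpha>" "hnorm a b (n + i) \<alpha> f \<le> c0 * hnorm a b (n + Suc i) \<alpha> f"
    using H_mono[of f "n + i"] Suc.prems by auto
  moreover from Suc.IH[OF this(1)] have "f \<in> Hoelder a b n \<alpha>" "hnorm a b n \<alpha> f \<le> c0 ^ i * hnorm a b (n + i) \<alpha> f" by auto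
  moreover have "c0 ^ i \<ge> 0" using c0_ge by simp
  ultimately have "hnorm a b n \<alpha> f \<le> c0 ^ i * (c0 * hnorm a b (n + Suc i) \<alpha> f)"
    using mult_left_mono[of "hnorm a b (n + i) \<alpha> f" "c0 * hnorm a b (n + Suc i) \<alpha> f" "c0 ^ i"] by linarith
  then show ?case using \<open>f \<in> Hoelder a b n \<alpha>\<close> by (simp add: mult.left_commute)
qed

lemma D_iter: "f \<in> Hoelder a b (n + i) \<alpha> \<Longrightarrow>
   hderiv a b i f \<in> Hoelder a b n \<alpha> \<and> hnorm a b n \<alpha> (hderiv a b i f) \<le> hnorm a b (n + i) \<alpha> f"
proof (induction i arbitrary: f)
  case 0 then show ?case by simp
next
  case (Suc i)
  have f: "continuous_on {a..b} f" "hderiv a b 1 f \<in> Hoelder a b (n + i) \<alpha>"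
    using Suc.prems unfolding add_Suc_right Hoelder_Suc by auto
  have le: "hnorm a b (n + i) \<alpha> (hderiv a b 1 f) \<le> hnorm a b (n + Suc i) \<alpha> f"
    unfolding add_Suc_right hnorm_Suc using supn_nonneg[OF f(1)] by simp
  have e: "hderiv a b i (hderiv a b 1 f) = hderiv a b (Suc i) f" using hderiv_comp[of a b i 1 f] by simp
  show ?case using Suc.IH[OF f(2)] le unfolding e by auto
qed

lemma D_bound: "f \<in> Hoelder a b (n + r) \<alpha> \<Longrightarrow> i \<le> r \<Longrightarrow>
   hderiv a b i f \<in> Hoelder a b n \<alpha> \<and> hnorm a b n \<alpha> (hderiv a b i f) \<le> c0 ^ r * hnorm a b (n + r) \<alpha> f"
proof -
  assume f: "f \<in> Hoelder a b (n + r) \<alpha>" and i: "i \<le> r"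
  have f': "f \<in> Hoelder a b ((n + (r - i)) + i) \<alpha>" using f i by simp
  from D_iter[OF f'] have 1: "hderiv a b i f \<in> Hoelder a b (n + (r - i)) \<alpha>"
    "hnorm a b (n + (r - i)) \<alpha> (hderiv a b i f) \<le> hnorm a b (n + r) \<alpha> f" using i by auto
  from H_mono_iter[OF 1(1)] have 2: "hderiv a b i f \<in> Hoelder a b n \<alpha>"
    "hnorm a b n \<alpha> (hderiv a b i f) \<le> c0 ^ (r - i) * hnorm a b (n + (r - i)) \<alpha> (hderiv a b i f)" by auto
  have "c0 ^ (r - i) \<le> c0 ^ r" using c0_ge by (intro power_increasing) auto
  moreover have "0 \<le> hnorm a b (n + (r - i)) \<alpha> (hderiv a b i f)" using hn_nonneg[OF 1(1)] .
  moreover have "0 \<le> c0 ^ (r - i)" using c0_ge by simp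
  moreover have "0 \<le> c0 ^ r" using c0_ge by simp
  ultimately have "c0 ^ (r - i) * hnorm a b (n + (r - i)) \<alpha> (hderiv a b i f) \<le> c0 ^ r * hnorm a b (n + r) \<alpha> f"
    using 1(2) by (intro mult_mono) auto
  then show ?thesis using 2 by linarith
qed

end


context hctx
begin

lemma H_mult: "f \<in> Hoelder a b n \<alpha> \<Longrightarrow> g \<in> Hoelder a b n \<alpha> \<Longrightarrow>
  (\<lambda>s. f s * g s) \<in> Hoelder a b n \<alpha> \<and>
  hnorm a b n \<alpha> (\<lambda>s. f s * g s) \<le> (2 * c0) ^ n * hnorm a b n \<alpha> f * hnorm a b n \<alpha> g"
proof (induction n arbitrary: f g)
  case 0
  let ?h = "\<lambda>s. f s * g s"
  have cf: "continuous_on {a..b} f" "bdd_above (hquot a b \<alpha> f)"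
    and cg: "continuous_on {a..b} g" "bdd_above (hquot a b \<alpha> g)" using 0 unfolding Hoelder_0 by auto
  define sf where "sf = supn a b f"
  define sg where "sg = supn a b g"
  define hf where "hf = Sup (hquot a b \<alpha> f)"
  define hg where "hg = Sup (hquot a b \<alpha> g)"
  have nn: "0 \<le> sf" "0 \<le> sg" "0 \<le> hf" "0 \<le> hg"
    unfolding sf_def sg_def hf_def hg_def using supn_nonneg cf cg hs_nonneg by auto
  have ch: "continuous_on {a..b} ?h" using cf cg by (intro continuous_intros)
  have "cmod (?h t2 - ?h t1) \<le> (sf * hg + hf * sg) * (t2 - t1) powr \<alpha>"
    if t: "a \<le> t1" "t1 < t2" "t2 \<le> b" for t1 t2
  proof -
    have "?h t2 - ?h t1 = f t2 * (g t2 - g t1) + (f t2 - f t1) * g t1" by (simp add: algebra_simps)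
    hence "cmod (?h t2 - ?h t1) \<le> cmod (f t2) * cmod (g t2 - g t1) + cmod (f t2 - f t1) * cmod (g t1)"
      by (metis norm_mult norm_triangle_ineq)
    also have "\<dots> \<le> sf * (hg * (t2 - t1) powr \<alpha>) + (hf * (t2 - t1) powr \<alpha>) * sg"
    proof (intro add_mono mult_mono)
      show "cmod (f t2) \<le> sf" unfolding sf_def using supn_ge[OF cf(1)] t by auto
      show "cmod (g t1) \<le> sg" unfolding sg_def using supn_ge[OF cg(1)] t by auto
      show "cmod (g t2 - g t1) \<le> hg * (t2 - t1) powr \<alpha>" unfolding hg_def using hold_le[OF cg(2) t] .
      show "cmod (f t2 - f t1) \<le> hf * (t2 - t1) powr \<alpha>" unfolding hf_def using hold_le[OF cf(2) t] .
    qed (use nn in auto)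
    finally show ?thesis by (simp add: algebra_simps)
  qed
  then have hq: "bdd_above (hquot a b \<alpha> ?h) \<and> Sup (hquot a b \<alpha> ?h) \<le> sf * hg + hf * sg"
    by (rule hold_intro)
  have sh: "supn a b ?h \<le> sf * sg"
  proof (rule supn_le)
    fix t assume t: "t \<in> {a..b}"
    show "cmod (?h t) \<le> sf * sg" unfolding norm_mult sf_def sg_def
      using supn_ge[OF cf(1) t] supn_ge[OF cg(1) t] supn_nonneg[OF cf(1)] by (intro mult_mono) auto
  qed
  have "hnorm a b 0 \<alpha> ?h \<le> sf * sg + (sf * hg + hf * sg)" unfolding hnorm_0 using sh hq by linarith
  also have "\<dots> \<le> (sf + hf) * (sg + hg)" using nn by (simp add: algebra_simps)
  finally have "hnorm a b 0 \<alpha> ?h \<le> hnorm a b 0 \<alpha> f * hnorm a b 0 \<alpha> g"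
    unfolding hnorm_0 sf_def sg_def hf_def hg_def by simp
  moreover have "?h \<in> Hoelder a b 0 \<alpha>" using ch hq by (simp add: Hoelder_0)
  ultimately show ?case by simp
next
  case (Suc n)
  let ?h = "\<lambda>s. f s * g s"
  let ?Df = "hderiv a b 1 f" and ?Dg = "hderiv a b 1 g"
  have f: "continuous_on {a..b} f" "\<And>t. t \<in> {a..b} \<Longrightarrow> (f has_vector_derivative ?Df t) (at t within {a..b})"
    "?Df \<in> Hoelder a b n \<alpha>" using Suc.prems(1) unfolding Hoelder_Suc by auto
  have g: "continuous_on {a..b} g" "\<And>t. t \<in> {a..b} \<Longrightarrow> (g has_vector_derivative ?Dg t) (at t within {a..b})"
    "?Dg \<in> Hoelder a b n \<alpha>" using Suc.prems(2) unfolding Hoelder_Suc by auto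
  have fn: "f \<in> Hoelder a b n \<alpha>" "hnorm a b n \<alpha> f \<le> c0 * hnorm a b (Suc n) \<alpha> f" using H_mono[OF Suc.prems(1)] by auto
  have gn: "g \<in> Hoelder a b n \<alpha>" "hnorm a b n \<alpha> g \<le> c0 * hnorm a b (Suc n) \<alpha> g" using H_mono[OF Suc.prems(2)] by auto
  let ?P1 = "\<lambda>s. f s * ?Dg s" and ?P2 = "\<lambda>s. ?Df s * g s"
  let ?h' = "\<lambda>s. ?P1 s + ?P2 s"
  have P1: "?P1 \<in> Hoelder a b n \<alpha>" "hnorm a b n \<alpha> ?P1 \<le> (2 * c0) ^ n * hnorm a b n \<alpha> f * hnorm a b n \<alpha> ?Dg"
    using Suc.IH[OF fn(1) g(3)] by auto
  have P2: "?P2 \<in> Hoelder a b n \<alpha>" "hnorm a b n \<alpha> ?P2 \<le> (2 * c0) ^ n * hnorm a b n \<alpha> ?Df * hnorm a b n \<alpha> g"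
    using Suc.IH[OF f(3) gn(1)] by auto
  have h': "?h' \<in> Hoelder a b n \<alpha>" "hnorm a b n \<alpha> ?h' \<le> hnorm a b n \<alpha> ?P1 + hnorm a b n \<alpha> ?P2"
    using H_add[OF P1(1) P2(1)] by auto
  have ch: "continuous_on {a..b} ?h" using f g by (intro continuous_intros)
  have dh: "(?h has_vector_derivative ?h' t) (at t within {a..b})" if "t \<in> {a..b}" for t
    using has_vector_derivative_mult[OF f(2)[OF that] g(2)[OF that]] by (simp add: add.commute)
  have D1: "hderiv a b 1 ?h t = ?h' t" if "t \<in> {a..b}" for t using vd_eq[OF that dh[OF that]] .
  have D1H: "hderiv a b 1 ?h \<in> Hoelder a b n \<alpha>" using Hoelder_cong[of a b "hderiv a b 1 ?h" ?h' n \<alpha>] D1 h'(1) by blast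
  have D1n: "hnorm a b n \<alpha> (hderiv a b 1 ?h) = hnorm a b n \<alpha> ?h'" using hnorm_cong[of a b "hderiv a b 1 ?h" ?h' n \<alpha>] D1 by blast
  have hH: "?h \<in> Hoelder a b (Suc n) \<alpha>" unfolding Hoelder_Suc using ch dh D1 D1H by auto
  define sf where "sf = supn a b f"
  define sg where "sg = supn a b g"
  define Df where "Df = hnorm a b n \<alpha> ?Df"
  define Dg where "Dg = hnorm a b n \<alpha> ?Dg"
  define Cn where "Cn = (2 * c0) ^ n"
  have F: "hnorm a b (Suc n) \<alpha> f = sf + Df" unfolding sf_def Df_def by (rule hnorm_Suc)
  have G: "hnorm a b (Suc n) \<alpha> g = sg + Dg" unfolding sg_def Dg_def by (rule hnorm_Suc)
  have nn: "0 \<le> sf" "0 \<le> sg" "0 \<le> Df" "0 \<le> Dg"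
    unfolding sf_def sg_def Df_def Dg_def using supn_nonneg f(1) g(1) hn_nonneg f(3) g(3) by auto
  have Cn1: "1 \<le> Cn * c0" unfolding Cn_def using c0_ge
    by (metis le_add_same_cancel1 mult_2 mult_le_cancel_right1 one_le_power order.trans zero_le_one less_le_not_le mult.commute mult_cancel_right1)
  have Cn0: "0 \<le> Cn" unfolding Cn_def using c0_ge by simp
  have sh: "supn a b ?h \<le> sf * sg"
  proof (rule supn_le)
    fix t assume t: "t \<in> {a..b}"
    show "cmod (?h t) \<le> sf * sg" unfolding norm_mult sf_def sg_def
      using supn_ge[OF f(1) t] supn_ge[OF g(1) t] supn_nonneg[OF f(1)] by (intro mult_mono) auto
  qed
  have "hnorm a b n \<alpha> ?h' \<le> Cn * (c0 * (sf + Df)) * Dg + Cn * Df * (c0 * (sg + Dg))"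
  proof -
    have "Cn * hnorm a b n \<alpha> f * Dg \<le> Cn * (c0 * (sf + Df)) * Dg"
      using fn(2) F nn Cn0 by (intro mult_right_mono mult_left_mono) auto
    moreover have "Cn * Df * hnorm a b n \<alpha> g \<le> Cn * Df * (c0 * (sg + Dg))"
      using gn(2) G nn Cn0 by (intro mult_left_mono) auto
    ultimately show ?thesis using h'(2) P1(2) P2(2) unfolding Cn_def Df_def Dg_def by linarith
  qed
  hence tot: "hnorm a b (Suc n) \<alpha> ?h \<le> sf * sg + Cn * c0 * ((sf + Df) * Dg + Df * (sg + Dg))"
    unfolding hnorm_Suc[of a b n \<alpha> ?h] D1n using sh by (simp add: algebra_simps)
  have "1 * (sf * sg) \<le> Cn * c0 * (sf * sg)" using mult_right_mono[OF Cn1, of "sf * sg"] nn by simp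
  hence "hnorm a b (Suc n) \<alpha> ?h \<le> Cn * c0 * (sf * sg + (sf + Df) * Dg + Df * (sg + Dg))"
    using tot by (simp add: algebra_simps)
  also have "\<dots> \<le> Cn * c0 * (2 * ((sf + Df) * (sg + Dg)))"
  proof (rule mult_left_mono)
    have "2 * ((sf + Df) * (sg + Dg)) - (sf * sg + (sf + Df) * Dg + Df * (sg + Dg)) = sf * sg + sf * Dg + Df * sg"
      by (simp add: algebra_simps)
    moreover have "0 \<le> sf * sg + sf * Dg + Df * sg" using nn by simp
    ultimately show "sf * sg + (sf + Df) * Dg + Df * (sg + Dg) \<le> 2 * ((sf + Df) * (sg + Dg))" by linarith
    show "0 \<le> Cn * c0" using Cn1 by simp
  qed
  also have "\<dots> = (2 * c0) ^ Suc n * hnorm a b (Suc n) \<alpha> f * hnorm a b (Suc n) \<alpha> g"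
    unfolding F G Cn_def by (simp add: algebra_simps)
  finally show ?case using hH by simp
qed

end


context hctx
begin

lemma unif_lim:
  fixes \<sigma> :: "nat \<Rightarrow> real \<Rightarrow> complex"
  assumes C: "\<And>e. e > 0 \<Longrightarrow> \<exists>K. \<forall>k\<ge>K. \<forall>l\<ge>K. \<forall>t\<in>{a..b}. cmod (\<sigma> k t - \<sigma> l t) \<le> e"
  shows "\<exists>g. (\<forall>t\<in>{a..b}. (\<lambda>k. \<sigma> k t) \<longlonglongrightarrow> g t) \<and> (\<forall>e>0. \<exists>K. \<forall>k\<ge>K. \<forall>t\<in>{a..b}. cmod (\<sigma> k t - g t) \<le> e)"
proof -
  define g where "g t = lim (\<lambda>k. \<sigma> k t)" for t
  have conv: "(\<lambda>k. \<sigma> k t) \<longlonglongrightarrow> g t" if t: "t \<in> {a..b}" for t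
  proof -
    have "Cauchy (\<lambda>k. \<sigma> k t)"
      unfolding Cauchy_iff
    proof (intro allI impI)
      fix e :: real assume "e > 0"
      then obtain K where "\<forall>k\<ge>K. \<forall>l\<ge>K. \<forall>t\<in>{a..b}. cmod (\<sigma> k t - \<sigma> l t) \<le> e / 2" using C[of "e/2"] by auto
      then have "\<forall>m\<ge>K. \<forall>n\<ge>K. norm (\<sigma> m t - \<sigma> n t) < e" using t \<open>e > 0\<close>
        by (smt (verit, best) field_sum_of_halves)
      then show "\<exists>M. \<forall>m\<ge>M. \<forall>n\<ge>M. norm (\<sigma> m t - \<sigma> n t) < e" by blast
    qed
    then show ?thesis unfolding g_def using Cauchy_convergent_iff convergent_LIMSEQ_iff by blast
  qed
  have bnd: "\<exists>K. \<forall>k\<ge>K. \<forall>t\<in>{a..b}. cmod (\<sigma> k t - g t) \<le> e" if e: "e > 0" for e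
  proof -
    obtain K where K: "\<forall>k\<ge>K. \<forall>l\<ge>K. \<forall>t\<in>{a..b}. cmod (\<sigma> k t - \<sigma> l t) \<le> e" using C[OF e] by blast
    have "cmod (\<sigma> k t - g t) \<le> e" if k: "k \<ge> K" and t: "t \<in> {a..b}" for k t
    proof (rule tendsto_upperbound)
      show "(\<lambda>l. cmod (\<sigma> k t - \<sigma> l t)) \<longlonglongrightarrow> cmod (\<sigma> k t - g t)"
        by (intro tendsto_norm tendsto_diff tendsto_const conv[OF t])
      show "\<forall>\<^sub>F l in sequentially. cmod (\<sigma> k t - \<sigma> l t) \<le> e"
        unfolding eventually_sequentially using K k t by blast
    qed simp
    then show ?thesis by blast
  qed
  show ?thesis using conv bnd by blast
qed

lemma H_cauchy_unif:
  fixes \<sigma> :: "nat \<Rightarrow> real \<Rightarrow> complex"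
  assumes s: "\<And>k. \<sigma> k \<in> Hoelder a b n \<alpha>"
    and C: "\<And>e. e > 0 \<Longrightarrow> \<exists>K. \<forall>k\<ge>K. \<forall>l\<ge>K. hnorm a b n \<alpha> (\<lambda>t. \<sigma> k t - \<sigma> l t) < e"
    and e: "e > 0"
  shows "\<exists>K. \<forall>k\<ge>K. \<forall>l\<ge>K. \<forall>t\<in>{a..b}. cmod (\<sigma> k t - \<sigma> l t) \<le> e"
proof -
  obtain K where K: "\<forall>k\<ge>K. \<forall>l\<ge>K. hnorm a b n \<alpha> (\<lambda>t. \<sigma> k t - \<sigma> l t) < e" using C[OF e] by blast
  have "cmod (\<sigma> k t - \<sigma> l t) \<le> e" if "k \<ge> K" "l \<ge> K" "t \<in> {a..b}" for k l t
  proof -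
    have H: "(\<lambda>t. \<sigma> k t - \<sigma> l t) \<in> Hoelder a b n \<alpha>" using H_diff[OF s s] by blast
    have "cmod (\<sigma> k t - \<sigma> l t) \<le> supn a b (\<lambda>t. \<sigma> k t - \<sigma> l t)" using supn_ge[OF H_cont[OF H] that(3)] .
    also have "\<dots> \<le> hnorm a b n \<alpha> (\<lambda>t. \<sigma> k t - \<sigma> l t)" using hn_ge[OF H] .
    finally show ?thesis using K that by force
  qed
  then show ?thesis by blast
qed

lemma H_complete:
  fixes \<sigma> :: "nat \<Rightarrow> real \<Rightarrow> complex"
  assumes "\<And>k. \<sigma> k \<in> Hoelder a b n \<alpha>"
    and "\<And>e. e > 0 \<Longrightarrow> \<exists>K. \<forall>k\<ge>K. \<forall>l\<ge>K. hnorm a b n \<alpha> (\<lambda>t. \<sigma> k t - \<sigma> l t) < e"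
  shows "\<exists>g\<in>Hoelder a b n \<alpha>. \<forall>e>0. \<exists>K. \<forall>k\<ge>K. hnorm a b n \<alpha> (\<lambda>t. \<sigma> k t - g t) < e"
  using assms
proof (induction n arbitrary: \<sigma>)
  case 0
  obtain g where g: "\<And>t. t \<in> {a..b} \<Longrightarrow> (\<lambda>k. \<sigma> k t) \<longlonglongrightarrow> g t"
    "\<And>e. e > 0 \<Longrightarrow> \<exists>K. \<forall>k\<ge>K. \<forall>t\<in>{a..b}. cmod (\<sigma> k t - g t) \<le> e"
    using unif_lim[OF H_cauchy_unif[OF 0(1) 0(2)]] by blast
  have gc: "continuous_on {a..b} g"
  proof (rule uniform_limit_theorem)
    show "\<forall>\<^sub>F k in sequentially. continuous_on {a..b} (\<sigma> k)" using H_cont[OF 0(1)] by simp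
    show "uniform_limit {a..b} \<sigma> g sequentially"
    proof (rule uniform_limitI)
      fix e :: real assume "e > 0"
      then obtain K where "\<forall>k\<ge>K. \<forall>t\<in>{a..b}. cmod (\<sigma> k t - g t) \<le> e / 2" using g(2)[of "e/2"] by auto
      then show "\<forall>\<^sub>F k in sequentially. \<forall>t\<in>{a..b}. dist (\<sigma> k t) (g t) < e"
        unfolding eventually_sequentially dist_norm using \<open>e > 0\<close> by force
    qed
  qed simp
  have claim: "\<exists>K. \<forall>k\<ge>K. (\<lambda>t. \<sigma> k t - g t) \<in> Hoelder a b 0 \<alpha> \<and> hnorm a b 0 \<alpha> (\<lambda>t. \<sigma> k t - g t) < e"
    if e: "e > 0" for e
  proof -
    obtain K1 where K1: "\<forall>k\<ge>K1. \<forall>l\<ge>K1. hnorm a b 0 \<alpha> (\<lambda>t. \<sigma> k t - \<sigma> l t) < e / 4" using 0(2)[of "e/4"] e by auto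
    obtain K2 where K2: "\<forall>k\<ge>K2. \<forall>t\<in>{a..b}. cmod (\<sigma> k t - g t) \<le> e / 4" using g(2)[of "e/4"] e by auto
    have "(\<lambda>t. \<sigma> k t - g t) \<in> Hoelder a b 0 \<alpha> \<and> hnorm a b 0 \<alpha> (\<lambda>t. \<sigma> k t - g t) < e"
      if k: "k \<ge> max K1 K2" for k
    proof -
      let ?d = "\<lambda>t. \<sigma> k t - g t"
      have hq: "cmod (?d t2 - ?d t1) \<le> (e / 4) * (t2 - t1) powr \<alpha>" if t: "a \<le> t1" "t1 < t2" "t2 \<le> b" for t1 t2
      proof (rule tendsto_upperbound)
        show "(\<lambda>l. cmod ((\<sigma> k t2 - \<sigma> l t2) - (\<sigma> k t1 - \<sigma> l t1))) \<longlonglongrightarrow> cmod (?d t2 - ?d t1)"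
          using t by (intro tendsto_norm tendsto_diff tendsto_const g(1)) auto
        show "\<forall>\<^sub>F l in sequentially. cmod ((\<sigma> k t2 - \<sigma> l t2) - (\<sigma> k t1 - \<sigma> l t1)) \<le> e / 4 * (t2 - t1) powr \<alpha>"
          unfolding eventually_sequentially
        proof (intro exI[of _ K1] allI impI)
          fix l assume l: "l \<ge> K1"
          have H: "(\<lambda>t. \<sigma> k t - \<sigma> l t) \<in> Hoelder a b 0 \<alpha>" using H_diff[OF 0(1) 0(1)] by blast
          have bd: "bdd_above (hquot a b \<alpha> (\<lambda>t. \<sigma> k t - \<sigma> l t))" using H unfolding Hoelder_0 by (rule conjunct2)
          have "cmod ((\<sigma> k t2 - \<sigma> l t2) - (\<sigma> k t1 - \<sigma> l t1)) \<le> Sup (hquot a b \<alpha> (\<lambda>t. \<sigma> k t - \<sigma> l t)) * (t2 - t1) powr \<alpha>"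
            using hold_le[OF bd t] by simp
          also have "Sup (hquot a b \<alpha> (\<lambda>t. \<sigma> k t - \<sigma> l t)) \<le> e / 4"
          proof -
            have "Sup (hquot a b \<alpha> (\<lambda>t. \<sigma> k t - \<sigma> l t)) \<le> hnorm a b 0 \<alpha> (\<lambda>t. \<sigma> k t - \<sigma> l t)"
              unfolding hnorm_0 using supn_nonneg[OF H_cont[OF H]] by simp
            then show ?thesis using K1 k l by force
          qed
          hence "Sup (hquot a b \<alpha> (\<lambda>t. \<sigma> k t - \<sigma> l t)) * (t2 - t1) powr \<alpha> \<le> e / 4 * (t2 - t1) powr \<alpha>"
            by (intro mult_right_mono) auto
          finally show "cmod ((\<sigma> k t2 - \<sigma> l t2) - (\<sigma> k t1 - \<sigma> l t1)) \<le> e / 4 * (t2 - t1) powr \<alpha>" .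
        qed
      qed simp
      then have hq2: "bdd_above (hquot a b \<alpha> ?d) \<and> Sup (hquot a b \<alpha> ?d) \<le> e / 4" by (rule hold_intro)
      have sd: "supn a b ?d \<le> e / 4" using K2 k by (intro supn_le) auto
      have dc: "continuous_on {a..b} ?d" using H_cont[OF 0(1)] gc by (intro continuous_intros)
      have "?d \<in> Hoelder a b 0 \<alpha>" using dc hq2 by (simp add: Hoelder_0)
      moreover have "hnorm a b 0 \<alpha> ?d < e" unfolding hnorm_0 using hq2 sd e by linarith
      ultimately show ?thesis by blast
    qed
    then show ?thesis by blast
  qed
  obtain K where K: "\<forall>k\<ge>K. (\<lambda>t. \<sigma> k t - g t) \<in> Hoelder a b 0 \<alpha> \<and> hnorm a b 0 \<alpha> (\<lambda>t. \<sigma> k t - g t) < 1"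
    using claim[of 1] by auto
  have "(\<lambda>t. \<sigma> K t - (\<sigma> K t - g t)) \<in> Hoelder a b 0 \<alpha>" using H_diff[OF 0(1)] K by blast
  hence gH: "g \<in> Hoelder a b 0 \<alpha>" by simp
  show ?case using gH claim by blast
next
  case (Suc n)
  let ?D = "\<lambda>k. hderiv a b 1 (\<sigma> k)"
  have s: "continuous_on {a..b} (\<sigma> k)" "\<And>t. t \<in> {a..b} \<Longrightarrow> (\<sigma> k has_vector_derivative ?D k t) (at t within {a..b})"
    "?D k \<in> Hoelder a b n \<alpha>" for k using Suc.prems(1)[of k] unfolding Hoelder_Suc by auto
  have DC: "\<exists>K. \<forall>k\<ge>K. \<forall>l\<ge>K. hnorm a b n \<alpha> (\<lambda>t. ?D k t - ?D l t) < e" if e: "e > 0" for e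
  proof -
    obtain K where K: "\<forall>k\<ge>K. \<forall>l\<ge>K. hnorm a b (Suc n) \<alpha> (\<lambda>t. \<sigma> k t - \<sigma> l t) < e" using Suc.prems(2)[OF e] by blast
    have "hnorm a b n \<alpha> (\<lambda>t. ?D k t - ?D l t) \<le> hnorm a b (Suc n) \<alpha> (\<lambda>t. \<sigma> k t - \<sigma> l t)" for k l
    proof -
      have H: "(\<lambda>t. \<sigma> k t - \<sigma> l t) \<in> Hoelder a b (Suc n) \<alpha>" using H_diff[OF Suc.prems(1) Suc.prems(1)] by blast
      have "hnorm a b n \<alpha> (\<lambda>t. ?D k t - ?D l t) = hnorm a b n \<alpha> (hderiv a b 1 (\<lambda>t. \<sigma> k t - \<sigma> l t))"
        by (rule hnorm_cong) (use D_diff[OF Suc.prems(1) Suc.prems(1), of 1] in auto)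
      also have "\<dots> \<le> hnorm a b (Suc n) \<alpha> (\<lambda>t. \<sigma> k t - \<sigma> l t)"
        unfolding hnorm_Suc[of a b n \<alpha> "\<lambda>t. \<sigma> k t - \<sigma> l t"] using supn_nonneg[OF H_cont[OF H]] by simp
      finally show ?thesis .
    qed
    then show ?thesis using K by (meson le_less_trans)
  qed
  obtain G' where G': "G' \<in> Hoelder a b n \<alpha>" "\<And>e. e > 0 \<Longrightarrow> \<exists>K. \<forall>k\<ge>K. hnorm a b n \<alpha> (\<lambda>t. ?D k t - G' t) < e"
    using Suc.IH[OF s(3) DC] by blast
  obtain g where g: "\<And>t. t \<in> {a..b} \<Longrightarrow> (\<lambda>k. \<sigma> k t) \<longlonglongrightarrow> g t"
    "\<And>e. e > 0 \<Longrightarrow> \<exists>K. \<forall>k\<ge>K. \<forall>t\<in>{a..b}. cmod (\<sigma> k t - g t) \<le> e"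
    using unif_lim[OF H_cauchy_unif[OF Suc.prems(1) Suc.prems(2)]] by blast
  have Dunif: "\<exists>K. \<forall>k\<ge>K. \<forall>t\<in>{a..b}. cmod (?D k t - G' t) < e" if e: "e > 0" for e
  proof -
    obtain K where K: "\<forall>k\<ge>K. hnorm a b n \<alpha> (\<lambda>t. ?D k t - G' t) < e" using G'(2)[OF e] by blast
    have "cmod (?D k t - G' t) < e" if "k \<ge> K" "t \<in> {a..b}" for k t
    proof -
      have H: "(\<lambda>t. ?D k t - G' t) \<in> Hoelder a b n \<alpha>" using H_diff[OF s(3) G'(1)] by blast
      have "cmod (?D k t - G' t) \<le> supn a b (\<lambda>t. ?D k t - G' t)" using supn_ge[OF H_cont[OF H] that(2)] .
      also have "\<dots> \<le> hnorm a b n \<alpha> (\<lambda>t. ?D k t - G' t)" using hn_ge[OF H] .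
      finally show ?thesis using K that by force
    qed
    then show ?thesis by blast
  qed
  obtain GG where GG: "\<forall>x\<in>{a..b}. (\<lambda>k. \<sigma> k x) \<longlonglongrightarrow> GG x \<and> (GG has_derivative (\<lambda>h. h *\<^sub>R G' x)) (at x within {a..b})"
  proof -
    have "\<exists>GG. \<forall>x\<in>{a..b}. (\<lambda>k. \<sigma> k x) \<longlonglongrightarrow> GG x \<and> (GG has_derivative (\<lambda>h. h *\<^sub>R G' x)) (at x within {a..b})"
    proof (rule has_derivative_sequence[of "{a..b}" \<sigma> "\<lambda>k x h. h *\<^sub>R ?D k x" "\<lambda>x h. h *\<^sub>R G' x" a "g a"])
      show "convex {a..b}" by simp
      show "\<And>k x. x \<in> {a..b} \<Longrightarrow> (\<sigma> k has_derivative (\<lambda>h. h *\<^sub>R ?D k x)) (at x within {a..b})"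
        using s(2) unfolding has_vector_derivative_def by blast
      show "\<forall>\<^sub>F k in sequentially. \<forall>x\<in>{a..b}. \<forall>h. norm (h *\<^sub>R ?D k x - h *\<^sub>R G' x) \<le> e * norm h"
        if e: "e > 0" for e
      proof -
        obtain K where K: "\<forall>k\<ge>K. \<forall>t\<in>{a..b}. cmod (?D k t - G' t) < e" using Dunif[OF e] by blast
        have "norm (h *\<^sub>R ?D k x - h *\<^sub>R G' x) \<le> e * norm h" if "k \<ge> K" "x \<in> {a..b}" for k x h
        proof -
          have "norm (h *\<^sub>R ?D k x - h *\<^sub>R G' x) = \<bar>h\<bar> * cmod (?D k x - G' x)"
            by (simp add: scaleR_diff_right[symmetric])
          also have "\<dots> \<le> \<bar>h\<bar> * e" using K that by (intro mult_left_mono) (auto simp: less_imp_le)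
          finally show ?thesis by (simp add: mult.commute)
        qed
        then show ?thesis unfolding eventually_sequentially by blast
      qed
      show "a \<in> {a..b}" using ab by simp
      show "(\<lambda>k. \<sigma> k a) \<longlonglongrightarrow> g a" using g(1) ab by simp
    qed
    then show ?thesis using that by blast
  qed
  have GGg: "GG x = g x" if "x \<in> {a..b}" for x using GG g(1) that LIMSEQ_unique by blast
  have gd: "(g has_vector_derivative G' x) (at x within {a..b})" if x: "x \<in> {a..b}" for x
  proof -
    have "(GG has_vector_derivative G' x) (at x within {a..b})"
      using GG x unfolding has_vector_derivative_def by blast
    then show ?thesis using has_vector_derivative_transform[OF x, of g GG] GGg by simp
  qed
  have gc: "continuous_on {a..b} g" using continuous_on_vector_derivative[OF gd] .
  have Dg: "hderiv a b 1 g t = G' t" if "t \<in> {a..b}" for t using vd_eq[OF that gd[OF that]] .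
  have DgH: "hderiv a b 1 g \<in> Hoelder a b n \<alpha>" using Hoelder_cong[of a b "hderiv a b 1 g" G' n \<alpha>] Dg G'(1) by blast
  have gH: "g \<in> Hoelder a b (Suc n) \<alpha>" unfolding Hoelder_Suc using gc gd Dg DgH by auto
  have "\<exists>K. \<forall>k\<ge>K. hnorm a b (Suc n) \<alpha> (\<lambda>t. \<sigma> k t - g t) < e" if e: "e > 0" for e
  proof -
    obtain K1 where K1: "\<forall>k\<ge>K1. hnorm a b n \<alpha> (\<lambda>t. ?D k t - G' t) < e / 2" using G'(2)[of "e/2"] e by auto
    obtain K2 where K2: "\<forall>k\<ge>K2. \<forall>t\<in>{a..b}. cmod (\<sigma> k t - g t) \<le> e / 4" using g(2)[of "e/4"] e by auto
    have "hnorm a b (Suc n) \<alpha> (\<lambda>t. \<sigma> k t - g t) < e" if k: "k \<ge> max K1 K2" for k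
    proof -
      have "hnorm a b n \<alpha> (hderiv a b 1 (\<lambda>t. \<sigma> k t - g t)) = hnorm a b n \<alpha> (\<lambda>t. ?D k t - G' t)"
        by (rule hnorm_cong) (use D_diff[OF Suc.prems(1) gH, of 1] Dg in auto)
      moreover have "supn a b (\<lambda>t. \<sigma> k t - g t) \<le> e / 4" using K2 k by (intro supn_le) auto
      moreover have "hnorm a b n \<alpha> (\<lambda>t. ?D k t - G' t) < e / 2" using K1 k by auto
      ultimately show ?thesis unfolding hnorm_Suc using e by linarith
    qed
    then show ?thesis by blast
  qed
  then show ?case using gH by blast
qed

end


context hctx
begin

lemma H_zero: "(\<lambda>t. 0) \<in> Hoelder a b n \<alpha> \<and> hnorm a b n \<alpha> (\<lambda>t. 0) = 0"
proof (induction n)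
  case 0
  have hq: "hquot a b \<alpha> (\<lambda>t. 0) \<subseteq> {0}" unfolding hquot_def by auto
  hence hq': "hquot a b \<alpha> (\<lambda>t. 0) = {0}" using hquot_ne by blast
  have "supn a b (\<lambda>t. 0) = 0" unfolding supn_def using ab by simp
  then show ?case unfolding Hoelder_0 hnorm_0 hq' by simp
next
  case (Suc n)
  have d: "((\<lambda>t. 0::complex) has_vector_derivative 0) (at t within {a..b})" for t by simp
  have D: "hderiv a b 1 (\<lambda>t. 0) t = 0" if "t \<in> {a..b}" for t using vd_eq[OF that d] .
  have "hderiv a b 1 (\<lambda>t. 0) \<in> Hoelder a b n \<alpha>" using Hoelder_cong[of a b "hderiv a b 1 (\<lambda>t. 0)" "\<lambda>t. 0" n \<alpha>] D Suc by blast
  moreover have "hnorm a b n \<alpha> (hderiv a b 1 (\<lambda>t. 0)) = 0" using hnorm_cong[of a b "hderiv a b 1 (\<lambda>t. 0)" "\<lambda>t. 0" n \<alpha>] D Suc by simp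
  moreover have "supn a b (\<lambda>t. 0) = 0" unfolding supn_def using ab by simp
  ultimately show ?case unfolding Hoelder_Suc hnorm_Suc using D d by (simp add: continuous_on_const)
qed

lemma H_sum: "finite F \<Longrightarrow> (\<And>x. x \<in> F \<Longrightarrow> f x \<in> Hoelder a b n \<alpha>) \<Longrightarrow>
  (\<lambda>t. \<Sum>x\<in>F. f x t) \<in> Hoelder a b n \<alpha> \<and> hnorm a b n \<alpha> (\<lambda>t. \<Sum>x\<in>F. f x t) \<le> (\<Sum>x\<in>F. hnorm a b n \<alpha> (f x))"
proof (induction F rule: finite_induct)
  case empty then show ?case using H_zero by simp
next
  case (insert x F)
  have 1: "(\<lambda>t. \<Sum>x\<in>F. f x t) \<in> Hoelder a b n \<alpha>" "hnorm a b n \<alpha> (\<lambda>t. \<Sum>x\<in>F. f x t) \<le> (\<Sum>x\<in>F. hnorm a b n \<alpha> (f x))"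
    using insert by auto
  have 2: "f x \<in> Hoelder a b n \<alpha>" using insert by auto
  show ?case using H_add[OF 2 1(1)] 1(2) insert(1,2) by simp
qed

definition nrm :: "(real \<Rightarrow> 'v::zero) \<Rightarrow> real \<Rightarrow> 'v" where
  "nrm y = (\<lambda>t. if t \<in> {a..b} then y t else 0)"

definition XN :: "nat \<Rightarrow> (real \<Rightarrow> complex^'m::finite) set" where
  "XN N = {y \<in> HoelderV a b N \<alpha>. \<forall>t. t \<notin> {a..b} \<longrightarrow> y t = 0}"

lemma comp_cong_nrm: "t \<in> {a..b} \<Longrightarrow> nrm y t = y t"
  unfolding nrm_def by simp

lemma HV_cong:
  assumes "\<And>t. t \<in> {a..b} \<Longrightarrow> y t = z t"
  shows "y \<in> HoelderV a b N \<alpha> \<longleftrightarrow> z \<in> HoelderV a b N \<alpha>" "hnormV a b N \<alpha> y = hnormV a b N \<alpha> z"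
proof -
  have "(\<lambda>t. y t $ i) \<in> Hoelder a b N \<alpha> \<longleftrightarrow> (\<lambda>t. z t $ i) \<in> Hoelder a b N \<alpha>" for i
    using Hoelder_cong[of a b "\<lambda>t. y t $ i" "\<lambda>t. z t $ i" N \<alpha>] assms by simp
  then show "y \<in> HoelderV a b N \<alpha> \<longleftrightarrow> z \<in> HoelderV a b N \<alpha>" unfolding HoelderV_def by simp
  have "hnorm a b N \<alpha> (\<lambda>t. y t $ i) = hnorm a b N \<alpha> (\<lambda>t. z t $ i)" for i
    using hnorm_cong[of a b "\<lambda>t. y t $ i" "\<lambda>t. z t $ i" N \<alpha>] assms by simp
  then show "hnormV a b N \<alpha> y = hnormV a b N \<alpha> z" unfolding hnormV_def by simp
qed

lemma nrm_XN: "y \<in> HoelderV a b N \<alpha> \<Longrightarrow> nrm y \<in> XN N"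
  unfolding XN_def using HV_cong(1)[of "nrm y" y N] comp_cong_nrm by (auto simp: nrm_def)

lemma nrm_hnormV: "hnormV a b N \<alpha> (nrm y) = hnormV a b N \<alpha> y"
  using HV_cong(2)[of "nrm y" y N] comp_cong_nrm by auto

lemma XN_eq: "y \<in> XN N \<Longrightarrow> z \<in> XN N \<Longrightarrow> (\<And>t. t \<in> {a..b} \<Longrightarrow> y t = z t) \<Longrightarrow> y = z"
  unfolding XN_def by (auto simp: fun_eq_iff) (metis)

lemma HV_lin:
  assumes "y \<in> HoelderV a b N \<alpha>" "z \<in> HoelderV a b N \<alpha>"
  shows "(\<lambda>t. c *s y t + d *s z t) \<in> HoelderV a b N \<alpha> \<and>
    hnormV a b N \<alpha> (\<lambda>t. c *s y t + d *s z t) \<le> cmod c * hnormV a b N \<alpha> y + cmod d * hnormV a b N \<alpha> z"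
proof -
  have H: "(\<lambda>t. c * y t $ i + d * z t $ i) \<in> Hoelder a b N \<alpha> \<and>
     hnorm a b N \<alpha> (\<lambda>t. c * y t $ i + d * z t $ i) \<le> cmod c * hnorm a b N \<alpha> (\<lambda>t. y t $ i) + cmod d * hnorm a b N \<alpha> (\<lambda>t. z t $ i)" for i
    using H_lin[of "\<lambda>t. y t $ i" N "\<lambda>t. z t $ i" c d] assms unfolding HoelderV_def by auto
  have "(\<lambda>t. c *s y t + d *s z t) \<in> HoelderV a b N \<alpha>" unfolding HoelderV_def using H by simp
  moreover have "hnormV a b N \<alpha> (\<lambda>t. c *s y t + d *s z t) \<le> cmod c * hnormV a b N \<alpha> y + cmod d * hnormV a b N \<alpha> z"
    unfolding hnormV_def using H by (simp add: sum_distrib_left sum.distrib[symmetric] sum_mono)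
  ultimately show ?thesis by blast
qed

lemma HV_nonneg: "y \<in> HoelderV a b N \<alpha> \<Longrightarrow> 0 \<le> hnormV a b N \<alpha> y"
  unfolding hnormV_def HoelderV_def using hn_nonneg by (simp add: sum_nonneg)

lemma HV_comp_le: "y \<in> HoelderV a b N \<alpha> \<Longrightarrow> hnorm a b N \<alpha> (\<lambda>t. y t $ i) \<le> hnormV a b N \<alpha> y"
  unfolding hnormV_def HoelderV_def using hn_nonneg
  by (intro member_le_sum) auto

lemma HV_scale: "y \<in> HoelderV a b N \<alpha> \<Longrightarrow> hnormV a b N \<alpha> (\<lambda>t. c *s y t) = cmod c * hnormV a b N \<alpha> y"
  unfolding hnormV_def HoelderV_def using hn_scale[of _ N c] by (simp add: sum_distrib_left)

lemma scaleR_vec_of_real: "r *\<^sub>R (v :: complex^'m::finite) = complex_of_real r *s v"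
  unfolding vec_eq_iff
proof
  fix i
  have "(r *\<^sub>R v) $ i = r *\<^sub>R (v $ i)" by (rule vector_scaleR_component)
  also have "\<dots> = complex_of_real r * v $ i" by (rule scaleR_conv_of_real)
  also have "\<dots> = (complex_of_real r *s v) $ i" by (rule vector_smult_component[symmetric])
  finally show "(r *\<^sub>R v) $ i = (complex_of_real r *s v) $ i" .
qed

lemma cns_XN: "cns (XN N :: (real \<Rightarrow> complex^'m::finite) set) (hnormV a b N \<alpha>)"
proof
  show "0 \<in> (XN N :: (real \<Rightarrow> complex^'m) set)"
    unfolding XN_def HoelderV_def using H_zero by simp
next
  fix x y :: "real \<Rightarrow> complex^'m" assume x: "x \<in> XN N" and y: "y \<in> XN N"
  have xy: "x \<in> HoelderV a b N \<alpha>" "y \<in> HoelderV a b N \<alpha>" using x y unfolding XN_def by auto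
  have e: "x + y = (\<lambda>t. 1 *s x t + 1 *s y t)" by (simp add: fun_eq_iff)
  show "x + y \<in> XN N" using HV_lin[OF xy, of 1 1] x y unfolding XN_def e by simp
  show "hnormV a b N \<alpha> (x + y) \<le> hnormV a b N \<alpha> x + hnormV a b N \<alpha> y"
    using HV_lin[OF xy, of 1 1] unfolding e by simp
next
  fix x :: "real \<Rightarrow> complex^'m" and c :: real assume x: "x \<in> XN N"
  have xH: "x \<in> HoelderV a b N \<alpha>" using x unfolding XN_def by auto
  have e: "c *\<^sub>R x = (\<lambda>t. complex_of_real c *s x t + 0 *s x t)" by (simp add: fun_eq_iff scaleR_vec_of_real)
  show "c *\<^sub>R x \<in> XN N" using HV_lin[OF xH xH, of "complex_of_real c" 0] x unfolding XN_def e by simp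
  have e2: "c *\<^sub>R x = (\<lambda>t. complex_of_real c *s x t)" by (simp add: fun_eq_iff scaleR_vec_of_real)
  show "hnormV a b N \<alpha> (c *\<^sub>R x) = \<bar>c\<bar> * hnormV a b N \<alpha> x" unfolding e2 using HV_scale[OF xH] by simp
next
  fix x :: "real \<Rightarrow> complex^'m" assume x: "x \<in> XN N" and z: "hnormV a b N \<alpha> x = 0"
  have xH: "\<And>i. (\<lambda>t. x t $ i) \<in> Hoelder a b N \<alpha>" using x unfolding XN_def HoelderV_def by auto
  have "\<forall>i\<in>UNIV. hnorm a b N \<alpha> (\<lambda>t. x t $ i) = 0"
    using z unfolding hnormV_def by (subst (asm) sum_nonneg_eq_0_iff) (auto intro: hn_nonneg xH)
  hence "x t $ i = 0" if "t \<in> {a..b}" for t i using hn_zero[OF xH] that by blast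
  hence "x t = 0" if "t \<in> {a..b}" for t using that by (simp add: vec_eq_iff)
  then show "x = 0" using x unfolding XN_def by (auto simp: fun_eq_iff)
next
  fix \<sigma> :: "nat \<Rightarrow> real \<Rightarrow> complex^'m"
  assume s: "\<And>k. \<sigma> k \<in> XN N"
    and C: "\<And>e. e > 0 \<Longrightarrow> \<exists>K. \<forall>k\<ge>K. \<forall>l\<ge>K. hnormV a b N \<alpha> (\<sigma> k - \<sigma> l) < e"
  have sH: "\<And>k. \<sigma> k \<in> HoelderV a b N \<alpha>" using s unfolding XN_def by auto
  have "\<exists>g\<in>Hoelder a b N \<alpha>. \<forall>e>0. \<exists>K. \<forall>k\<ge>K. hnorm a b N \<alpha> (\<lambda>t. \<sigma> k t $ i - g t) < e" for i
  proof (rule H_complete)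
    show "\<And>k. (\<lambda>t. \<sigma> k t $ i) \<in> Hoelder a b N \<alpha>" using sH unfolding HoelderV_def by auto
    fix e :: real assume "e > 0"
    then obtain K where K: "\<forall>k\<ge>K. \<forall>l\<ge>K. hnormV a b N \<alpha> (\<sigma> k - \<sigma> l) < e" using C by blast
    have "hnorm a b N \<alpha> (\<lambda>t. \<sigma> k t $ i - \<sigma> l t $ i) \<le> hnormV a b N \<alpha> (\<sigma> k - \<sigma> l)" for k l
    proof -
      have "(\<sigma> k - \<sigma> l) = (\<lambda>t. 1 *s \<sigma> k t + (-1) *s \<sigma> l t)" by (simp add: fun_eq_iff)
      hence "(\<sigma> k - \<sigma> l) \<in> HoelderV a b N \<alpha>" using HV_lin[of "\<sigma> k" N "\<sigma> l" 1 "-1"] sH by simp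
      from HV_comp_le[OF this, of i] show ?thesis by simp
    qed
    then show "\<exists>K. \<forall>k\<ge>K. \<forall>l\<ge>K. hnorm a b N \<alpha> (\<lambda>t. \<sigma> k t $ i - \<sigma> l t $ i) < e"
      using K by (meson le_less_trans)
  qed
  then obtain G where G: "\<And>i. G i \<in> Hoelder a b N \<alpha>"
    "\<And>i e. e > 0 \<Longrightarrow> \<exists>K. \<forall>k\<ge>K. hnorm a b N \<alpha> (\<lambda>t. \<sigma> k t $ i - G i t) < e"
    by metis
  define g where "g = nrm (\<lambda>t. \<chi> i. G i t)"
  have gH0: "(\<lambda>t. \<chi> i. G i t) \<in> HoelderV a b N \<alpha>" unfolding HoelderV_def using G(1) by simp
  have gX: "g \<in> XN N" unfolding g_def by (rule nrm_XN[OF gH0])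
  have "\<exists>K. \<forall>k\<ge>K. hnormV a b N \<alpha> (\<sigma> k - g) < e" if e: "e > 0" for e
  proof -
    define e' where "e' = e / real CARD('m)"
    have e': "e' > 0" unfolding e'_def using e by simp
    have "\<forall>i. \<exists>K. \<forall>k\<ge>K. hnorm a b N \<alpha> (\<lambda>t. \<sigma> k t $ i - G i t) < e'" using G(2)[OF e'] by blast
    then obtain Kf where Kf: "\<And>i k. k \<ge> Kf i \<Longrightarrow> hnorm a b N \<alpha> (\<lambda>t. \<sigma> k t $ i - G i t) < e'" by metis
    define K where "K = Max (range Kf)"
    have "hnormV a b N \<alpha> (\<sigma> k - g) < e" if k: "k \<ge> K" for k
    proof -
      have "hnorm a b N \<alpha> (\<lambda>t. (\<sigma> k - g) t $ i) = hnorm a b N \<alpha> (\<lambda>t. \<sigma> k t $ i - G i t)" for i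
        by (rule hnorm_cong) (simp add: g_def comp_cong_nrm)
      moreover have "hnorm a b N \<alpha> (\<lambda>t. \<sigma> k t $ i - G i t) < e'" for i
      proof -
        have "Kf i \<le> K" unfolding K_def by (simp add: Max_ge)
        then show ?thesis using Kf k by simp
      qed
      ultimately have "hnormV a b N \<alpha> (\<sigma> k - g) < (\<Sum>i\<in>(UNIV::'m set). e')"
        unfolding hnormV_def by (intro sum_strict_mono) auto
      also have "\<dots> = e" unfolding e'_def by simp
      finally show ?thesis .
    qed
    then show ?thesis by blast
  qed
  then show "\<exists>x\<in>XN N. \<forall>e>0. \<exists>K. \<forall>k\<ge>K. hnormV a b N \<alpha> (\<sigma> k - x) < e" using gX by blast
qed

end


lemma cns_prod:
  fixes X :: "'a::real_vector set" and p :: "'a \<Rightarrow> real"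
  assumes X: "cns X p"
  shows "cns (X \<times> (UNIV :: 'b::banach set)) (\<lambda>z. p (fst z) + norm (snd z))"
proof -
  interpret cns X p by (rule X)
  show ?thesis
  proof
    show "0 \<in> X \<times> (UNIV :: 'b set)" using zeroX by (simp add: zero_prod_def)
  next
    fix x y :: "'a \<times> 'b" assume x: "x \<in> X \<times> UNIV" and y: "y \<in> X \<times> UNIV"
    show "x + y \<in> X \<times> UNIV" using addX x y by (cases x, cases y) auto
    have "p (fst x + fst y) \<le> p (fst x) + p (fst y)" using ptri x y by auto
    moreover have "norm (snd x + snd y) \<le> norm (snd x) + norm (snd y)" by (rule norm_triangle_ineq)
    ultimately show "p (fst (x + y)) + norm (snd (x + y)) \<le> p (fst x) + norm (snd x) + (p (fst y) + norm (snd y))"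
      by simp
  next
    fix x :: "'a \<times> 'b" and c :: real assume x: "x \<in> X \<times> UNIV"
    show "c *\<^sub>R x \<in> X \<times> UNIV" using scaleX x by (cases x) auto
    show "p (fst (c *\<^sub>R x)) + norm (snd (c *\<^sub>R x)) = \<bar>c\<bar> * (p (fst x) + norm (snd x))"
      using pscale x by (auto simp: distrib_left)
  next
    fix x :: "'a \<times> 'b" assume x: "x \<in> X \<times> UNIV" and z: "p (fst x) + norm (snd x) = 0"
    have "p (fst x) \<ge> 0" using pnonneg x by auto
    hence "p (fst x) = 0" "norm (snd x) = 0" using z norm_ge_zero[of "snd x"] by linarith+
    hence "fst x = 0" "snd x = 0" using pzero x by auto
    then show "x = 0" by (simp add: prod_eq_iff)
  next
    fix \<sigma> :: "nat \<Rightarrow> 'a \<times> 'b"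
    assume s: "\<And>k. \<sigma> k \<in> X \<times> UNIV"
      and C: "\<And>e. e > 0 \<Longrightarrow> \<exists>K. \<forall>k\<ge>K. \<forall>l\<ge>K. p (fst (\<sigma> k - \<sigma> l)) + norm (snd (\<sigma> k - \<sigma> l)) < e"
    have sX: "fst (\<sigma> k) \<in> X" for k using s[of k] by auto
    have C1: "\<exists>K. \<forall>k\<ge>K. \<forall>l\<ge>K. p (fst (\<sigma> k) - fst (\<sigma> l)) < e" if e: "e > 0" for e
    proof -
      obtain K where K: "\<forall>k\<ge>K. \<forall>l\<ge>K. p (fst (\<sigma> k - \<sigma> l)) + norm (snd (\<sigma> k - \<sigma> l)) < e" using C[OF e] by blast
      have "p (fst (\<sigma> k) - fst (\<sigma> l)) < e" if "k \<ge> K" "l \<ge> K" for k l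
      proof -
        have "p (fst (\<sigma> k - \<sigma> l)) + norm (snd (\<sigma> k - \<sigma> l)) < e" using K that by blast
        then have "p (fst (\<sigma> k) - fst (\<sigma> l)) + norm (snd (\<sigma> k) - snd (\<sigma> l)) < e" by simp
        moreover have "0 \<le> norm (snd (\<sigma> k) - snd (\<sigma> l))" by simp
        ultimately show ?thesis by linarith
      qed
      then show ?thesis by blast
    qed
    obtain x where x: "x \<in> X" "\<And>e. e > 0 \<Longrightarrow> \<exists>K. \<forall>k\<ge>K. p (fst (\<sigma> k) - x) < e"
      using complete[of "\<lambda>k. fst (\<sigma> k)", OF sX C1] by blast
    have "Cauchy (\<lambda>k. snd (\<sigma> k))"
      unfolding Cauchy_iff
    proof (intro allI impI)
      fix e :: real assume e: "e > 0"
      obtain K where K: "\<forall>k\<ge>K. \<forall>l\<ge>K. p (fst (\<sigma> k - \<sigma> l)) + norm (snd (\<sigma> k - \<sigma> l)) < e" using C[OF e] by blast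
      have "norm (snd (\<sigma> k) - snd (\<sigma> l)) < e" if "k \<ge> K" "l \<ge> K" for k l
      proof -
        have "p (fst (\<sigma> k - \<sigma> l)) \<ge> 0" using pnonneg minusX[OF sX sX] by simp
        then show ?thesis using K that by fastforce
      qed
      then show "\<exists>M. \<forall>m\<ge>M. \<forall>n\<ge>M. norm (snd (\<sigma> m) - snd (\<sigma> n)) < e" by blast
    qed
    then obtain c where c: "(\<lambda>k. snd (\<sigma> k)) \<longlonglongrightarrow> c" using Cauchy_convergent_iff convergent_def by blast
    have "\<exists>K. \<forall>k\<ge>K. p (fst (\<sigma> k - (x, c))) + norm (snd (\<sigma> k - (x, c))) < e" if e: "e > 0" for e
    proof -
      obtain K1 where K1: "\<forall>k\<ge>K1. p (fst (\<sigma> k) - x) < e / 2" using x(2)[of "e/2"] e by auto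
      obtain K2 where K2: "\<forall>k\<ge>K2. norm (snd (\<sigma> k) - c) < e / 2" using c e unfolding LIMSEQ_iff
        by (meson half_gt_zero)
      have "p (fst (\<sigma> k - (x, c))) + norm (snd (\<sigma> k - (x, c))) < e" if "k \<ge> max K1 K2" for k
        using K1 K2 that by fastforce
      then show ?thesis by blast
    qed
    then show "\<exists>x\<in>X \<times> UNIV. \<forall>e>0. \<exists>K. \<forall>k\<ge>K. p (fst (\<sigma> k - x)) + norm (snd (\<sigma> k - x)) < e"
      using x(1) by blast
  qed
qed

context hctx
begin

definition Qop :: "nat \<Rightarrow> (nat \<Rightarrow> real \<Rightarrow> complex^'m::finite^'m) \<Rightarrow> (real \<Rightarrow> complex^'m) \<Rightarrow> real \<Rightarrow> complex^'m" where
  "Qop r M y t = (\<Sum>j\<in>{1..r}. M (r - j) t *v hderivV a b (r - j) y t)"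

lemma Lop_Qop: "Lop a b r A y t = hderivV a b r y t + Qop r A y t"
  unfolding Lop_def Qop_def ..

lemma Qop_comp: "Qop r M y t $ i = (\<Sum>j\<in>{1..r}. \<Sum>l\<in>UNIV. M (r - j) t $ i $ l * hderiv a b (r - j) (\<lambda>s. y s $ l) t)"
  unfolding Qop_def by (simp add: matrix_vector_mult_def hderivV_def)

lemma Lop_comp: "Lop a b r A y t $ i = hderiv a b r (\<lambda>s. y s $ i) t +
   (\<Sum>j\<in>{1..r}. \<Sum>l\<in>UNIV. A (r - j) t $ i $ l * hderiv a b (r - j) (\<lambda>s. y s $ l) t)"
  unfolding Lop_Qop using Qop_comp by (simp add: hderivV_def)

lemma hderivV_HV:
  assumes y: "y \<in> HoelderV a b (n + r) \<alpha>" and j: "j \<le> r"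
  shows "hderivV a b j y \<in> HoelderV a b n \<alpha> \<and> hnormV a b n \<alpha> (hderivV a b j y) \<le> c0 ^ r * hnormV a b (n + r) \<alpha> y"
proof -
  have e: "(\<lambda>t. hderivV a b j y t $ i) = hderiv a b j (\<lambda>s. y s $ i)" for i by (simp add: hderivV_def fun_eq_iff)
  have D: "hderiv a b j (\<lambda>s. y s $ i) \<in> Hoelder a b n \<alpha> \<and> hnorm a b n \<alpha> (hderiv a b j (\<lambda>s. y s $ i)) \<le> c0 ^ r * hnorm a b (n + r) \<alpha> (\<lambda>s. y s $ i)" for i
    using D_bound[of "\<lambda>s. y s $ i" n r j] y j unfolding HoelderV_def by auto
  show ?thesis unfolding HoelderV_def hnormV_def mem_Collect_eq e using D by (simp add: sum_distrib_left sum_mono)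
qed

lemma Qop_HV:
  assumes y: "y \<in> HoelderV a b (n + r) \<alpha>" and M: "\<And>k. k < r \<Longrightarrow> M k \<in> HoelderM a b n \<alpha>"
  shows "Qop r M y \<in> HoelderV a b n \<alpha> \<and>
    hnormV a b n \<alpha> (Qop r M y) \<le> (2 * c0) ^ n * c0 ^ r * (\<Sum>j\<in>{1..r}. hnormM a b n \<alpha> (M (r - j))) * hnormV a b (n + r) \<alpha> y"
proof -
  define C where "C = (2 * c0) ^ n * c0 ^ r"
  have C0: "0 \<le> C" unfolding C_def using c0_ge by simp
  define Y where "Y = hnormV a b (n + r) \<alpha> y"
  have Y0: "0 \<le> Y" unfolding Y_def using HV_nonneg[OF y] .
  let ?m = "\<lambda>j i l. (\<lambda>t. M (r - j) t $ i $ l)"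
  let ?d = "\<lambda>j l. hderiv a b (r - j) (\<lambda>s. y s $ l)"
  have mH: "?m j i l \<in> Hoelder a b n \<alpha>" if "j \<in> {1..r}" for j i l
    using M[of "r - j"] that unfolding HoelderM_def by auto
  have dH: "?d j l \<in> Hoelder a b n \<alpha> \<and> hnorm a b n \<alpha> (?d j l) \<le> c0 ^ r * hnorm a b (n + r) \<alpha> (\<lambda>s. y s $ l)" if "j \<in> {1..r}" for j l
    using D_bound[of "\<lambda>s. y s $ l" n r "r - j"] y unfolding HoelderV_def by auto
  have T: "(\<lambda>t. ?m j i l t * ?d j l t) \<in> Hoelder a b n \<alpha> \<and>
      hnorm a b n \<alpha> (\<lambda>t. ?m j i l t * ?d j l t) \<le> C * hnorm a b n \<alpha> (?m j i l) * Y" if j: "j \<in> {1..r}" for j i l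
  proof -
    have P: "(\<lambda>t. ?m j i l t * ?d j l t) \<in> Hoelder a b n \<alpha>"
      "hnorm a b n \<alpha> (\<lambda>t. ?m j i l t * ?d j l t) \<le> (2 * c0) ^ n * hnorm a b n \<alpha> (?m j i l) * hnorm a b n \<alpha> (?d j l)"
      using H_mult[OF mH[OF j] conjunct1[OF dH[OF j]]] by auto
    have "hnorm a b n \<alpha> (?d j l) \<le> c0 ^ r * Y"
    proof -
      have "hnorm a b (n + r) \<alpha> (\<lambda>s. y s $ l) \<le> Y" unfolding Y_def by (rule HV_comp_le[OF y])
      then show ?thesis using dH[OF j, of l] c0_ge by (meson mult_left_mono order_trans zero_le_power order.trans zero_le_one)
    qed
    moreover have "0 \<le> (2 * c0) ^ n * hnorm a b n \<alpha> (?m j i l)" using c0_ge hn_nonneg[OF mH[OF j]] by simp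
    ultimately have "(2 * c0) ^ n * hnorm a b n \<alpha> (?m j i l) * hnorm a b n \<alpha> (?d j l) \<le> (2 * c0) ^ n * hnorm a b n \<alpha> (?m j i l) * (c0 ^ r * Y)"
      by (intro mult_left_mono) auto
    also have "\<dots> = C * hnorm a b n \<alpha> (?m j i l) * Y" unfolding C_def by (simp add: algebra_simps)
    finally show ?thesis using P by simp
  qed
  have comp: "(\<lambda>t. Qop r M y t $ i) = (\<lambda>t. \<Sum>j\<in>{1..r}. \<Sum>l\<in>UNIV. ?m j i l t * ?d j l t)" for i
    by (simp add: Qop_comp fun_eq_iff)
  have inner: "(\<lambda>t. \<Sum>l\<in>UNIV. ?m j i l t * ?d j l t) \<in> Hoelder a b n \<alpha> \<and>
      hnorm a b n \<alpha> (\<lambda>t. \<Sum>l\<in>UNIV. ?m j i l t * ?d j l t) \<le> (\<Sum>l\<in>UNIV. C * hnorm a b n \<alpha> (?m j i l) * Y)"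
    if j: "j \<in> {1..r}" for j i
  proof -
    have "(\<lambda>t. \<Sum>l\<in>UNIV. ?m j i l t * ?d j l t) \<in> Hoelder a b n \<alpha> \<and>
      hnorm a b n \<alpha> (\<lambda>t. \<Sum>l\<in>UNIV. ?m j i l t * ?d j l t) \<le> (\<Sum>l\<in>UNIV. hnorm a b n \<alpha> (\<lambda>t. ?m j i l t * ?d j l t))"
      using H_sum[of UNIV "\<lambda>l t. ?m j i l t * ?d j l t" n] T[OF j] by auto
    moreover have "(\<Sum>l\<in>UNIV. hnorm a b n \<alpha> (\<lambda>t. ?m j i l t * ?d j l t)) \<le> (\<Sum>l\<in>UNIV. C * hnorm a b n \<alpha> (?m j i l) * Y)"
      using T[OF j] by (intro sum_mono) auto
    ultimately show ?thesis by linarith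
  qed
  have outer: "(\<lambda>t. Qop r M y t $ i) \<in> Hoelder a b n \<alpha> \<and>
      hnorm a b n \<alpha> (\<lambda>t. Qop r M y t $ i) \<le> (\<Sum>j\<in>{1..r}. \<Sum>l\<in>UNIV. C * hnorm a b n \<alpha> (?m j i l) * Y)" for i
  proof -
    have "(\<lambda>t. \<Sum>j\<in>{1..r}. \<Sum>l\<in>UNIV. ?m j i l t * ?d j l t) \<in> Hoelder a b n \<alpha> \<and>
      hnorm a b n \<alpha> (\<lambda>t. \<Sum>j\<in>{1..r}. \<Sum>l\<in>UNIV. ?m j i l t * ?d j l t) \<le> (\<Sum>j\<in>{1..r}. hnorm a b n \<alpha> (\<lambda>t. \<Sum>l\<in>UNIV. ?m j i l t * ?d j l t))"
      using H_sum[of "{1..r}" "\<lambda>j t. \<Sum>l\<in>UNIV. ?m j i l t * ?d j l t" n] inner by auto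
    moreover have "(\<Sum>j\<in>{1..r}. hnorm a b n \<alpha> (\<lambda>t. \<Sum>l\<in>UNIV. ?m j i l t * ?d j l t)) \<le> (\<Sum>j\<in>{1..r}. \<Sum>l\<in>UNIV. C * hnorm a b n \<alpha> (?m j i l) * Y)"
      using inner by (intro sum_mono) auto
    ultimately show ?thesis unfolding comp by linarith
  qed
  have QH: "Qop r M y \<in> HoelderV a b n \<alpha>" unfolding HoelderV_def using outer by blast
  have "hnormV a b n \<alpha> (Qop r M y) \<le> (\<Sum>i\<in>UNIV. \<Sum>j\<in>{1..r}. \<Sum>l\<in>UNIV. C * hnorm a b n \<alpha> (?m j i l) * Y)"
    unfolding hnormV_def using outer by (intro sum_mono) auto
  also have "\<dots> = C * (\<Sum>j\<in>{1..r}. \<Sum>i\<in>UNIV. \<Sum>l\<in>UNIV. hnorm a b n \<alpha> (?m j i l)) * Y"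
    by (subst sum.swap) (simp add: sum_distrib_left sum_distrib_right mult.commute mult.left_commute)
  also have "(\<Sum>j\<in>{1..r}. \<Sum>i\<in>UNIV. \<Sum>l\<in>UNIV. hnorm a b n \<alpha> (?m j i l)) = (\<Sum>j\<in>{1..r}. hnormM a b n \<alpha> (M (r - j)))"
    unfolding hnormM_def ..
  finally show ?thesis using QH unfolding C_def Y_def by simp
qed

end


lemma scaleR_vec_ofr: "r *\<^sub>R (v :: complex^'m::finite) = complex_of_real r *s v"
  unfolding vec_eq_iff
proof
  fix i
  have "(r *\<^sub>R v) $ i = r *\<^sub>R (v $ i)" by (rule vector_scaleR_component)
  also have "\<dots> = complex_of_real r * v $ i" by (rule scaleR_conv_of_real)
  also have "\<dots> = (complex_of_real r *s v) $ i" by (rule vector_smult_component[symmetric])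
  finally show "(r *\<^sub>R v) $ i = (complex_of_real r *s v) $ i" .
qed

lemma cnorm_props:
  fixes N :: "complex^'k::finite \<Rightarrow> real"
  assumes N: "is_cnorm N"
  shows "N 0 = 0" "\<And>x. 0 \<le> N x" "\<And>x y. N (x + y) \<le> N x + N y" "\<And>c x. N (c *s x) = cmod c * N x"
    "\<And>x. N x = 0 \<Longrightarrow> x = 0"
proof -
  have tri: "\<And>x y. N (x + y) \<le> N x + N y" and hom: "\<And>c x. N (c *s x) = cmod c * N x"
    and z: "\<And>x. N x = 0 \<Longrightarrow> x = 0" using N unfolding is_cnorm_def by auto
  show "N 0 = 0" using hom[of 0 0] by simp
  show "\<And>x y. N (x + y) \<le> N x + N y" by (rule tri)
  show "\<And>c x. N (c *s x) = cmod c * N x" by (rule hom)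
  show "\<And>x. N x = 0 \<Longrightarrow> x = 0" by (rule z)
  fix x
  have "N (x + (-1) *s x) \<le> N x + N ((-1) *s x)" by (rule tri)
  moreover have "x + (-1) *s x = 0" by (simp add: vec_eq_iff)
  moreover have "N ((-1) *s x) = N x" using hom[of "-1" x] by simp
  moreover have "N 0 = 0" using hom[of 0 0] by simp
  ultimately show "0 \<le> N x" by simp
qed

lemma cnorm_sum:
  fixes N :: "complex^'k::finite \<Rightarrow> real"
  assumes N: "is_cnorm N"
  shows "finite F \<Longrightarrow> N (\<Sum>i\<in>F. f i) \<le> (\<Sum>i\<in>F. N (f i))"
proof (induction F rule: finite_induct)
  case empty then show ?case using cnorm_props(1)[OF N] by simp
next
  case (insert x F)
  then show ?case using cnorm_props(3)[OF N, of "f x" "\<Sum>i\<in>F. f i"] by simp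
qed

lemma cnorm_upper:
  fixes N :: "complex^'k::finite \<Rightarrow> real"
  assumes N: "is_cnorm N"
  shows "\<exists>C\<ge>0. \<forall>x. N x \<le> C * norm x"
proof -
  define C where "C = (\<Sum>i\<in>UNIV. N (axis i (1::complex)))"
  have C0: "C \<ge> 0" unfolding C_def using cnorm_props(2)[OF N] by (simp add: sum_nonneg)
  have "N x \<le> C * norm x" for x
  proof -
    have "N x = N (\<Sum>i\<in>UNIV. (x$i) *s axis i 1)" using basis_expansion[of x] by simp
    also have "\<dots> \<le> (\<Sum>i\<in>UNIV. N ((x$i) *s axis i 1))" by (rule cnorm_sum[OF N]) simp
    also have "\<dots> = (\<Sum>i\<in>UNIV. cmod (x$i) * N (axis i 1))" using cnorm_props(4)[OF N] by simp
    also have "\<dots> \<le> (\<Sum>i\<in>UNIV. norm x * N (axis i 1))"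
      by (intro sum_mono mult_right_mono Finite_Cartesian_Product.norm_nth_le cnorm_props(2)[OF N])
    also have "\<dots> = C * norm x" unfolding C_def by (simp add: sum_distrib_left mult.commute)
    finally show ?thesis .
  qed
  then show ?thesis using C0 by blast
qed

lemma cnorm_lower:
  fixes N :: "complex^'k::finite \<Rightarrow> real"
  assumes N: "is_cnorm N"
  shows "\<exists>C>0. \<forall>x. norm x \<le> C * N x"
proof -
  obtain C1 where C1: "C1 \<ge> 0" "\<And>x. N x \<le> C1 * norm x" using cnorm_upper[OF N] by blast
  have Nsc: "N (r *\<^sub>R x) = \<bar>r\<bar> * N x" for r x
    using cnorm_props(4)[OF N, of "complex_of_real r" x] scaleR_vec_ofr[of r x] by simp
  have lip: "\<bar>N x - N y\<bar> \<le> C1 * norm (x - y)" for x y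
  proof -
    have "N x \<le> N y + N (x - y)" using cnorm_props(3)[OF N, of y "x - y"] by simp
    moreover have "N y \<le> N x + N (y - x)" using cnorm_props(3)[OF N, of x "y - x"] by simp
    moreover have "N (y - x) = N (x - y)" using Nsc[of "-1" "x - y"] by simp
    ultimately show ?thesis using C1(2)[of "x - y"] by linarith
  qed
  have cont: "continuous_on (sphere 0 1) N"
  proof (rule continuous_onI)
    fix x e assume "x \<in> sphere (0::complex^'k) 1" "(e::real) > 0"
    show "\<exists>d>0. \<forall>x'\<in>sphere 0 1. dist x' x < d \<longrightarrow> dist (N x') (N x) \<le> e"
    proof (intro exI[of _ "e / (C1 + 1)"] conjI ballI impI)
      show "e / (C1 + 1) > 0" using \<open>e > 0\<close> C1(1) by simp
      fix x' assume "x' \<in> sphere (0::complex^'k) 1" "dist x' x < e / (C1 + 1)"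
      then have "(C1 + 1) * norm (x' - x) \<le> e" using C1(1) by (simp add: dist_norm field_simps)
      moreover have "C1 * norm (x' - x) \<le> (C1 + 1) * norm (x' - x)" by (simp add: distrib_right)
      ultimately show "dist (N x') (N x) \<le> e" using lip[of x' x] unfolding dist_real_def by linarith
    qed
  qed
  obtain i :: 'k where True by blast
  define x0 where "x0 = axis i (1::complex)"
  have x0: "x0 \<noteq> 0" unfolding x0_def by (simp add: axis_eq_0_iff)
  have "(1 / norm x0) *\<^sub>R x0 \<in> sphere 0 1" using x0 by simp
  hence ne: "sphere (0::complex^'k) 1 \<noteq> {}" by blast
  obtain xm where xm: "xm \<in> sphere 0 1" "\<And>y. y \<in> sphere 0 1 \<Longrightarrow> N xm \<le> N y"
    using continuous_attains_inf[OF compact_sphere ne cont] by blast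
  have m0: "N xm > 0"
  proof -
    have "xm \<noteq> 0" using xm(1) by auto
    then show ?thesis using cnorm_props(2,5)[OF N, of xm] by force
  qed
  have "norm x \<le> (1 / N xm) * N x" for x
  proof (cases "x = 0")
    case True then show ?thesis using cnorm_props(1)[OF N] by simp
  next
    case False
    have "(1 / norm x) *\<^sub>R x \<in> sphere 0 1" using False by simp
    hence "N xm \<le> N ((1 / norm x) *\<^sub>R x)" using xm(2) by blast
    also have "\<dots> = N x / norm x" using Nsc by simp
    finally have "N xm * norm x \<le> N x" using False by (simp add: field_simps)
    then show ?thesis using m0 by (simp add: field_simps)
  qed
  then show ?thesis using m0 by (intro exI[of _ "1 / N xm"]) auto
qed

context hctx
begin

lemma Lop_cong: "(\<And>s. s \<in> {a..b} \<Longrightarrow> y s = z s) \<Longrightarrow> t \<in> {a..b} \<Longrightarrow> Lop a b r A y t = Lop a b r A z t"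
  unfolding vec_eq_iff Lop_comp using hderiv_cong[of a b "\<lambda>s. y s $ _" "\<lambda>s. z s $ _"] by simp

lemma Lop_lin:
  assumes y: "y \<in> HoelderV a b (n + r) \<alpha>" and z: "z \<in> HoelderV a b (n + r) \<alpha>" and t: "t \<in> {a..b}"
  shows "Lop a b r A (\<lambda>s. c *s y s + d *s z s) t = c *s Lop a b r A y t + d *s Lop a b r A z t"
proof -
  have D: "hderiv a b j (\<lambda>s. (c *s y s + d *s z s) $ l) t = c * hderiv a b j (\<lambda>s. y s $ l) t + d * hderiv a b j (\<lambda>s. z s $ l) t"
    if "j \<le> r" for j l
    using D_lin[of "\<lambda>s. y s $ l" "n + r" "\<lambda>s. z s $ l" j t c d] y z t that unfolding HoelderV_def by simp
  have D': "hderiv a b j (\<lambda>s. c * y s $ l + d * z s $ l) t = c * hderiv a b j (\<lambda>s. y s $ l) t + d * hderiv a b j (\<lambda>s. z s $ l) t"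
    if "j \<le> r" for j l using D[OF that, of l] by simp
  show ?thesis unfolding vec_eq_iff
    by (simp add: Lop_comp D' sum_distrib_left sum.distrib algebra_simps)
qed

lemma Lop_diff:
  assumes y: "y \<in> HoelderV a b (n + r) \<alpha>" and z: "z \<in> HoelderV a b (n + r) \<alpha>" and t: "t \<in> {a..b}"
  shows "Lop a b r A (\<lambda>s. y s - z s) t = Lop a b r A y t - Lop a b r A z t"
  using Lop_lin[OF y z t, of A 1 "-1"] by (simp add: vec_eq_iff)

lemma Lop_add:
  assumes y: "y \<in> HoelderV a b (n + r) \<alpha>" and z: "z \<in> HoelderV a b (n + r) \<alpha>" and t: "t \<in> {a..b}"
  shows "Lop a b r A (\<lambda>s. y s + z s) t = Lop a b r A y t + Lop a b r A z t"
  using Lop_lin[OF y z t, of A 1 1] by (simp add: vec_eq_iff)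

lemma Lop_scale:
  assumes y: "y \<in> HoelderV a b (n + r) \<alpha>" and t: "t \<in> {a..b}"
  shows "Lop a b r A (\<lambda>s. c *s y s) t = c *s Lop a b r A y t"
  using Lop_lin[OF y y t, of A c 0] by (simp add: vec_eq_iff)

lemma Lop_diffA: "Lop a b r A1 y t - Lop a b r A2 y t = Qop r (\<lambda>k t. A1 k t - A2 k t) y t"
  unfolding vec_eq_iff by (simp add: Lop_comp Qop_comp sum_subtractf[symmetric] algebra_simps)

lemma HM_diff: "M1 \<in> HoelderM a b n \<alpha> \<Longrightarrow> M2 \<in> HoelderM a b n \<alpha> \<Longrightarrow> (\<lambda>t. M1 t - M2 t) \<in> HoelderM a b n \<alpha>"
  unfolding HoelderM_def using H_diff by simp

lemma HM_nonneg: "M \<in> HoelderM a b n \<alpha> \<Longrightarrow> 0 \<le> hnormM a b n \<alpha> M"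
  unfolding HoelderM_def hnormM_def using hn_nonneg by (simp add: sum_nonneg)

lemma Lop_HV:
  assumes y: "y \<in> HoelderV a b (n + r) \<alpha>" and Areg: "\<And>k. k < r \<Longrightarrow> A k \<in> HoelderM a b n \<alpha>"
  shows "Lop a b r A y \<in> HoelderV a b n \<alpha> \<and>
    hnormV a b n \<alpha> (Lop a b r A y) \<le> (c0 ^ r + (2 * c0) ^ n * c0 ^ r * (\<Sum>j\<in>{1..r}. hnormM a b n \<alpha> (A (r - j)))) * hnormV a b (n + r) \<alpha> y"
proof -
  have e: "Lop a b r A y = (\<lambda>t. 1 *s hderivV a b r y t + 1 *s Qop r A y t)"
    by (simp add: fun_eq_iff Lop_Qop)
  have 1: "hderivV a b r y \<in> HoelderV a b n \<alpha>" "hnormV a b n \<alpha> (hderivV a b r y) \<le> c0 ^ r * hnormV a b (n + r) \<alpha> y"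
    using hderivV_HV[OF y, of r] by auto
  have 2: "Qop r A y \<in> HoelderV a b n \<alpha>"
    "hnormV a b n \<alpha> (Qop r A y) \<le> (2 * c0) ^ n * c0 ^ r * (\<Sum>j\<in>{1..r}. hnormM a b n \<alpha> (A (r - j))) * hnormV a b (n + r) \<alpha> y"
    using Qop_HV[of y n r A, OF y Areg] by auto
  show ?thesis unfolding e using HV_lin[OF 1(1) 2(1), of 1 1] 1(2) 2(2) by (simp add: distrib_right)
qed

lemma HV_sum:
  assumes "finite F" "\<And>i. i \<in> F \<Longrightarrow> h i \<in> HoelderV a b N \<alpha>"
  shows "(\<lambda>t. \<Sum>i\<in>F. c i *s h i t) \<in> HoelderV a b N \<alpha>"
  using assms
proof (induction F rule: finite_induct)
  case empty
  then show ?case unfolding HoelderV_def using H_zero by simp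
next
  case (insert x F)
  have "(\<lambda>t. c x *s h x t + 1 *s (\<Sum>i\<in>F. c i *s h i t)) \<in> HoelderV a b N \<alpha>"
    using HV_lin[of "h x" N "\<lambda>t. \<Sum>i\<in>F. c i *s h i t" "c x" 1] insert by auto
  then show ?case using insert(1,2) by simp
qed

lemma Lop_sum:
  assumes "finite F" "\<And>i. i \<in> F \<Longrightarrow> h i \<in> HoelderV a b (n + r) \<alpha>" "t \<in> {a..b}"
  shows "Lop a b r A (\<lambda>s. \<Sum>i\<in>F. c i *s h i s) t = (\<Sum>i\<in>F. c i *s Lop a b r A (h i) t)"
  using assms
proof (induction F rule: finite_induct)
  case empty
  have hz: "hderiv a b j (\<lambda>s. 0) t = 0" for j
    using D_scale[of "\<lambda>s. 0" j j t 0] H_zero empty(2) by simp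
  show ?case unfolding vec_eq_iff by (simp add: Lop_comp hz)
next
  case (insert x F)
  have S: "(\<lambda>t. \<Sum>i\<in>F. c i *s h i t) \<in> HoelderV a b (n + r) \<alpha>" using HV_sum[of F h] insert by auto
  have "Lop a b r A (\<lambda>s. c x *s h x s + 1 *s (\<Sum>i\<in>F. c i *s h i s)) t = c x *s Lop a b r A (h x) t + 1 *s Lop a b r A (\<lambda>s. \<Sum>i\<in>F. c i *s h i s) t"
    using Lop_lin[OF _ S insert(5), of "h x" A "c x" 1] insert(4) by auto
  then show ?case using insert by simp
qed

end


lemma norm_smult_vec: "norm (c *s (x::complex^'k::finite)) = cmod c * norm x"
  unfolding norm_vec_def by (simp add: norm_mult L2_set_right_distrib)

context hctx
begin

lemma main:
  fixes \<epsilon>0 \<epsilon>1 :: real and n r :: nat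
    and A :: "real \<Rightarrow> nat \<Rightarrow> real \<Rightarrow> complex^'m::finite^'m"
    and B :: "real \<Rightarrow> (real \<Rightarrow> complex^'m) \<Rightarrow> complex^'k::finite"
    and N :: "complex^'k \<Rightarrow> real"
  assumes r2: "r \<ge> 2"
    and eps0: "0 < \<epsilon>0"
    and N: "is_cnorm N"
    and A_reg: "\<forall>\<epsilon>\<in>{0..<\<epsilon>0}. \<forall>k<r. A \<epsilon> k \<in> HoelderM a b n \<alpha>"
    and B_local: "\<forall>\<epsilon>\<in>{0..<\<epsilon>0}. \<forall>y z. (\<forall>t\<in>{a..b}. y t = z t) \<longrightarrow> B \<epsilon> y = B \<epsilon> z"
    and B_add: "\<forall>\<epsilon>\<in>{0..<\<epsilon>0}. \<forall>y\<in>HoelderV a b (n + r) \<alpha>. \<forall>z\<in>HoelderV a b (n + r) \<alpha>.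
                  B \<epsilon> (\<lambda>t. y t + z t) = B \<epsilon> y + B \<epsilon> z"
    and B_hom: "\<forall>\<epsilon>\<in>{0..<\<epsilon>0}. \<forall>y\<in>HoelderV a b (n + r) \<alpha>. \<forall>c::complex.
                  B \<epsilon> (\<lambda>t. c *s y t) = c *s B \<epsilon> y"
    and B_cont: "\<forall>\<epsilon>\<in>{0..<\<epsilon>0}. \<exists>K. \<forall>y\<in>HoelderV a b (n + r) \<alpha>.
                  norm (B \<epsilon> y) \<le> K * hnormV a b (n + r) \<alpha> y"
    and H0: "\<forall>y\<in>HoelderV a b (n + r) \<alpha>.
               (\<forall>t\<in>{a..b}. Lop a b r (A 0) y t = 0) \<and> B 0 y = 0 \<longrightarrow> (\<forall>t\<in>{a..b}. y t = 0)"
    and HI: "\<forall>k<r. ((\<lambda>\<epsilon>. hnormM a b n \<alpha> (\<lambda>t. A \<epsilon> k t - A 0 k t)) \<longlongrightarrow> 0) (at_right 0)"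
    and HII: "\<forall>y\<in>HoelderV a b (n + r) \<alpha>. ((\<lambda>\<epsilon>. B \<epsilon> y) \<longlongrightarrow> B 0 y) (at_right 0)"
    and eps1: "0 < \<epsilon>1" "\<epsilon>1 < \<epsilon>0"
    and uniq: "\<forall>\<epsilon>\<in>{0..<\<epsilon>1}. \<forall>f\<in>HoelderV a b n \<alpha>. \<forall>c.
                 \<exists>y\<in>HoelderV a b (n + r) \<alpha>.
                   (\<forall>t\<in>{a..b}. Lop a b r (A \<epsilon>) y t = f t) \<and> B \<epsilon> y = c
                 \<and> (\<forall>z\<in>HoelderV a b (n + r) \<alpha>.
                      (\<forall>t\<in>{a..b}. Lop a b r (A \<epsilon>) z t = f t) \<and> B \<epsilon> z = c
                      \<longrightarrow> (\<forall>t\<in>{a..b}. z t = y t))"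
  shows "\<exists>\<epsilon>2 \<kappa>1 \<kappa>2. 0 < \<epsilon>2 \<and> \<epsilon>2 < \<epsilon>1 \<and> 0 < \<kappa>1 \<and> 0 < \<kappa>2 \<and>
           (\<forall>f c y. (\<forall>\<epsilon>\<in>{0..<\<epsilon>1}. f \<epsilon> \<in> HoelderV a b n \<alpha> \<and> y \<epsilon> \<in> HoelderV a b (n + r) \<alpha>
                      \<and> (\<forall>t\<in>{a..b}. Lop a b r (A \<epsilon>) (y \<epsilon>) t = f \<epsilon> t) \<and> B \<epsilon> (y \<epsilon>) = c \<epsilon>)
             \<longrightarrow> (\<forall>\<epsilon>\<in>{0<..<\<epsilon>2}.
                   let d = hnormV a b n \<alpha> (\<lambda>t. Lop a b r (A \<epsilon>) (y 0) t - f \<epsilon> t)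
                           + N (B \<epsilon> (y 0) - c \<epsilon>)
                   in \<kappa>1 * d \<le> hnormV a b (n + r) \<alpha> (\<lambda>t. y 0 t - y \<epsilon> t)
                    \<and> hnormV a b (n + r) \<alpha> (\<lambda>t. y 0 t - y \<epsilon> t) \<le> \<kappa>2 * d))"
proof -
  let ?X = "XN (n + r) :: (real \<Rightarrow> complex^'m) set"
  let ?p = "hnormV a b (n + r) \<alpha> :: (real \<Rightarrow> complex^'m) \<Rightarrow> real"
  interpret Xc: cns ?X ?p by (rule cns_XN)
  have XH: "x \<in> HoelderV a b N' \<alpha>" if "x \<in> XN N'" for x :: "real \<Rightarrow> complex^'m" and N'
    using that unfolding XN_def by auto
  have e0: "0 \<in> {0..<\<epsilon>0}" using eps0 by simp
  have Areg: "\<And>\<epsilon> k. \<epsilon> \<in> {0..<\<epsilon>0} \<Longrightarrow> k < r \<Longrightarrow> A \<epsilon> k \<in> HoelderM a b n \<alpha>" using A_reg by blast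
  define Cp where "Cp = (2 * c0) ^ n * c0 ^ r"
  have Cp0: "Cp \<ge> 0" unfolding Cp_def using c0_ge by simp
  define KL where "KL \<epsilon> = c0 ^ r + Cp * (\<Sum>j\<in>{1..r}. hnormM a b n \<alpha> (A \<epsilon> (r - j)))" for \<epsilon>
  have LopH: "Lop a b r (A \<epsilon>) y \<in> HoelderV a b n \<alpha> \<and> hnormV a b n \<alpha> (Lop a b r (A \<epsilon>) y) \<le> KL \<epsilon> * ?p y"
    if "\<epsilon> \<in> {0..<\<epsilon>0}" "y \<in> HoelderV a b (n + r) \<alpha>" for \<epsilon> y
    using Lop_HV[of y n r "A \<epsilon>"] Areg that unfolding KL_def Cp_def by auto
  have Areg': "A \<epsilon> (r - j) \<in> HoelderM a b n \<alpha>" if "\<epsilon> \<in> {0..<\<epsilon>0}" "j \<in> {1..r}" for \<epsilon> j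
    using Areg[OF that(1), of "r - j"] that(2) r2 by auto
  have KL0: "KL \<epsilon> \<ge> 0" if "\<epsilon> \<in> {0..<\<epsilon>0}" for \<epsilon>
    unfolding KL_def using Cp0 c0_ge HM_nonneg[OF Areg'[OF that]] by (intro add_nonneg_nonneg mult_nonneg_nonneg sum_nonneg) auto
  have HVdiff: "(\<lambda>t. y t - z t) \<in> HoelderV a b N' \<alpha>" if "y \<in> HoelderV a b N' \<alpha>" "z \<in> HoelderV a b N' \<alpha>" for y z :: "real \<Rightarrow> complex^'m" and N'
    using HV_lin[OF that, of 1 "-1"] by (simp add: vec_eq_iff)
  have HVadd: "(\<lambda>t. y t + z t) \<in> HoelderV a b N' \<alpha>" if "y \<in> HoelderV a b N' \<alpha>" "z \<in> HoelderV a b N' \<alpha>" for y z :: "real \<Rightarrow> complex^'m" and N'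
    using HV_lin[OF that, of 1 1] by (simp add: vec_eq_iff)
  have HVsc: "(\<lambda>t. c *s y t) \<in> HoelderV a b N' \<alpha>" if "y \<in> HoelderV a b N' \<alpha>" for y :: "real \<Rightarrow> complex^'m" and N' c
    using HV_lin[OF that that, of c 0] by (simp add: vec_eq_iff)
  have B_diff: "B \<epsilon> (\<lambda>t. y t - z t) = B \<epsilon> y - B \<epsilon> z"
    if e: "\<epsilon> \<in> {0..<\<epsilon>0}" and y: "y \<in> HoelderV a b (n + r) \<alpha>" and z: "z \<in> HoelderV a b (n + r) \<alpha>" for \<epsilon> y z
  proof -
    have eq: "(\<lambda>t. y t - z t) = (\<lambda>t. y t + (-1) *s z t)" by (simp add: fun_eq_iff vec_eq_iff)
    have "B \<epsilon> (\<lambda>t. y t + (-1) *s z t) = B \<epsilon> y + B \<epsilon> (\<lambda>t. (-1) *s z t)"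
      by (rule B_add[rule_format, OF e y HVsc[OF z, of "-1"]])
    then have "B \<epsilon> (\<lambda>t. y t - z t) = B \<epsilon> y + B \<epsilon> (\<lambda>t. (-1) *s z t)" unfolding eq .
    also have "B \<epsilon> (\<lambda>t. (-1) *s z t) = (-1) *s B \<epsilon> z" by (rule B_hom[rule_format, OF e z])
    finally show ?thesis by (simp add: vec_eq_iff)
  qed
  have B_sum: "B \<epsilon> (\<lambda>t. \<Sum>i\<in>F. c i *s h i t) = (\<Sum>i\<in>F. c i *s B \<epsilon> (h i))"
    if e: "\<epsilon> \<in> {0..<\<epsilon>0}" and F: "finite F" and h: "\<And>i. i \<in> F \<Longrightarrow> h i \<in> HoelderV a b (n + r) \<alpha>"
    for \<epsilon> and F :: "'k set" and c :: "'k \<Rightarrow> complex" and h :: "'k \<Rightarrow> real \<Rightarrow> complex^'m"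
    using F h
  proof (induction F rule: finite_induct)
    case empty
    have zH: "(\<lambda>t. 0::complex^'m) \<in> HoelderV a b (n + r) \<alpha>" unfolding HoelderV_def using H_zero by simp
    have "B \<epsilon> (\<lambda>t. 0 *s (0::complex^'m)) = 0 *s B \<epsilon> (\<lambda>t. 0)" by (rule B_hom[rule_format, OF e zH])
    then show ?case by simp
  next
    case (insert x F)
    have S: "(\<lambda>t. \<Sum>i\<in>F. c i *s h i t) \<in> HoelderV a b (n + r) \<alpha>" using HV_sum[of F h] insert by auto
    have hx: "h x \<in> HoelderV a b (n + r) \<alpha>" using insert by auto
    have "B \<epsilon> (\<lambda>t. c x *s h x t + (\<Sum>i\<in>F. c i *s h i t)) = B \<epsilon> (\<lambda>t. c x *s h x t) + B \<epsilon> (\<lambda>t. \<Sum>i\<in>F. c i *s h i t)"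
      by (rule B_add[rule_format, OF e HVsc[OF hx, of "c x"] S])
    also have "B \<epsilon> (\<lambda>t. c x *s h x t) = c x *s B \<epsilon> (h x)" by (rule B_hom[rule_format, OF e hx])
    finally show ?case using insert by simp
  qed
  have e0': "0 \<in> {0..<\<epsilon>1}" using eps1 by simp
  obtain K0 where K0: "\<And>y. y \<in> HoelderV a b (n + r) \<alpha> \<Longrightarrow> norm (B 0 y) \<le> K0 * ?p y"
    using B_cont e0 by blast
  define T0 where "T0 z = (nrm (Lop a b r (A 0) z), B 0 z)" for z :: "real \<Rightarrow> complex^'m"
  have nrm_add: "nrm (\<lambda>t. f t + g t) = (\<lambda>t. nrm f t + nrm g t)" for f g :: "real \<Rightarrow> complex^'m"
    by (simp add: nrm_def fun_eq_iff)
  have "\<exists>C. \<forall>x\<in>?X. ?p x \<le> C * (hnormV a b n \<alpha> (fst (T0 x)) + norm (snd (T0 x)))"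
  proof (rule Xc.bounded_inverse[where K = "KL 0 + \<bar>K0\<bar>" and T = T0 and Y = "(XN n :: (real \<Rightarrow> complex^'m) set) \<times> (UNIV :: (complex^'k) set)"
        and q = "\<lambda>z. hnormV a b n \<alpha> (fst z) + norm (snd z)"])
    show "cns ((XN n :: (real \<Rightarrow> complex^'m) set) \<times> (UNIV :: (complex^'k) set)) (\<lambda>z. hnormV a b n \<alpha> (fst z) + norm (snd z))"
      by (rule cns_prod[OF cns_XN])
  next
    fix x assume x: "x \<in> ?X"
    show "T0 x \<in> (XN n :: (real \<Rightarrow> complex^'m) set) \<times> UNIV" unfolding T0_def using nrm_XN conjunct1[OF LopH[OF e0 XH[OF x]]] by simp
  next
    fix x y assume x: "x \<in> ?X" and y: "y \<in> ?X"
    have 1: "nrm (Lop a b r (A 0) (x + y)) = nrm (Lop a b r (A 0) x) + nrm (Lop a b r (A 0) y)"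
    proof -
      have e: "x + y = (\<lambda>t. x t + y t)" by (simp add: fun_eq_iff)
      show ?thesis unfolding e using Lop_add[OF XH[OF x] XH[OF y]] by (auto simp: nrm_def fun_eq_iff)
    qed
    have 2: "B 0 (x + y) = B 0 x + B 0 y"
    proof -
      have "x + y = (\<lambda>t. x t + y t)" by (simp add: fun_eq_iff)
      then show ?thesis using B_add[rule_format, OF e0 XH[OF x] XH[OF y]] by simp
    qed
    show "T0 (x + y) = T0 x + T0 y" unfolding T0_def using 1 2 by simp
  next
    fix x and c :: real assume x: "x \<in> ?X"
    have e: "c *\<^sub>R x = (\<lambda>t. complex_of_real c *s x t)" by (simp add: fun_eq_iff scaleR_vec_ofr)
    have 1: "nrm (Lop a b r (A 0) (c *\<^sub>R x)) = c *\<^sub>R nrm (Lop a b r (A 0) x)"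
      unfolding e using Lop_scale[OF XH[OF x]] by (auto simp: nrm_def fun_eq_iff scaleR_vec_ofr)
    have 2: "B 0 (c *\<^sub>R x) = c *\<^sub>R B 0 x" unfolding e scaleR_vec_ofr by (rule B_hom[rule_format, OF e0 XH[OF x]])
    show "T0 (c *\<^sub>R x) = c *\<^sub>R T0 x" unfolding T0_def using 1 2 by simp
  next
    fix x assume x: "x \<in> ?X"
    have "hnormV a b n \<alpha> (fst (T0 x)) = hnormV a b n \<alpha> (Lop a b r (A 0) x)" unfolding T0_def by (simp add: nrm_hnormV)
    also have "\<dots> \<le> KL 0 * ?p x" using LopH[OF e0 XH[OF x]] by blast
    finally have 1: "hnormV a b n \<alpha> (fst (T0 x)) \<le> KL 0 * ?p x" .
    have "norm (snd (T0 x)) \<le> K0 * ?p x" unfolding T0_def using K0[OF XH[OF x]] by simp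
    also have "\<dots> \<le> \<bar>K0\<bar> * ?p x" using Xc.pnonneg[OF x] by (intro mult_right_mono) auto
    finally show "hnormV a b n \<alpha> (fst (T0 x)) + norm (snd (T0 x)) \<le> (KL 0 + \<bar>K0\<bar>) * ?p x"
      using 1 by (simp add: distrib_right)
  next
    fix yc assume yc: "yc \<in> (XN n :: (real \<Rightarrow> complex^'m) set) \<times> (UNIV :: (complex^'k) set)"
    obtain f c where fc: "yc = (f, c)" "f \<in> XN n" using yc by auto
    obtain y where y: "y \<in> HoelderV a b (n + r) \<alpha>" "\<forall>t\<in>{a..b}. Lop a b r (A 0) y t = f t" "B 0 y = c"
      using uniq[rule_format, OF e0' XH[OF fc(2)], of c] by blast
    have x: "nrm y \<in> ?X" using nrm_XN[OF y(1)] .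
    have "nrm (Lop a b r (A 0) (nrm y)) = f"
    proof -
      have "nrm (Lop a b r (A 0) (nrm y)) t = f t" for t
      proof (cases "t \<in> {a..b}")
        case True
        have "nrm (Lop a b r (A 0) (nrm y)) t = Lop a b r (A 0) (nrm y) t" by (rule comp_cong_nrm[OF True])
        also have "\<dots> = Lop a b r (A 0) y t" by (rule Lop_cong[OF comp_cong_nrm True])
        also have "\<dots> = f t" using y(2) True by blast
        finally show ?thesis .
      next
        case False
        have "nrm (Lop a b r (A 0) (nrm y)) t = 0" unfolding nrm_def[of "Lop a b r (A 0) (nrm y)"] using False by auto
        moreover have "f t = 0" using fc(2) False unfolding XN_def by blast
        ultimately show ?thesis by simp
      qed
      then show ?thesis by blast
    qed
    moreover have "B 0 (nrm y) = c"
    proof -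
      have "\<forall>t\<in>{a..b}. nrm y t = y t" using comp_cong_nrm by blast
      then show ?thesis using B_local[rule_format, OF e0, of "nrm y" y] y(3) by simp
    qed
    ultimately show "\<exists>x\<in>?X. T0 x = yc" unfolding T0_def using x fc(1) by blast
  next
    fix x assume x: "x \<in> ?X" and T: "T0 x = 0"
    have 1: "\<forall>t\<in>{a..b}. Lop a b r (A 0) x t = 0"
    proof
      fix t assume t: "t \<in> {a..b}"
      have "nrm (Lop a b r (A 0) x) t = 0" using T unfolding T0_def by (simp add: zero_prod_def)
      then show "Lop a b r (A 0) x t = 0" using t by (simp add: nrm_def)
    qed
    have 2: "B 0 x = 0" using T unfolding T0_def by (simp add: zero_prod_def)
    have "\<forall>t\<in>{a..b}. x t = 0" using H0[rule_format, OF XH[OF x]] 1 2 by blast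
    then show "x = 0" using XN_eq[OF x Xc.zeroX] by simp
  qed
  then obtain C0r where C0r: "\<And>x. x \<in> ?X \<Longrightarrow> ?p x \<le> C0r * (hnormV a b n \<alpha> (fst (T0 x)) + norm (snd (T0 x)))"
    by blast
  define C0 where "C0 = \<bar>C0r\<bar>"
  have C00: "C0 \<ge> 0" unfolding C0_def by simp
  have C0: "?p x \<le> C0 * (hnormV a b n \<alpha> (Lop a b r (A 0) x) + norm (B 0 x))" if x: "x \<in> ?X" for x
  proof -
    have q: "hnormV a b n \<alpha> (fst (T0 x)) + norm (snd (T0 x)) = hnormV a b n \<alpha> (Lop a b r (A 0) x) + norm (B 0 x)"
      unfolding T0_def by (simp add: nrm_hnormV)
    have q0: "0 \<le> hnormV a b n \<alpha> (Lop a b r (A 0) x) + norm (B 0 x)"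
      using HV_nonneg[OF conjunct1[OF LopH[OF e0 XH[OF x]]]] by simp
    have "?p x \<le> C0r * (hnormV a b n \<alpha> (Lop a b r (A 0) x) + norm (B 0 x))" using C0r[OF x] q by simp
    also have "\<dots> \<le> C0 * (hnormV a b n \<alpha> (Lop a b r (A 0) x) + norm (B 0 x))"
      unfolding C0_def using q0 by (intro mult_right_mono) auto
    finally show ?thesis .
  qed
  have "\<exists>\<delta>>0. \<exists>M. \<forall>\<epsilon>\<in>{0<..<\<delta>}. \<forall>x\<in>?X. norm (B \<epsilon> x) \<le> M * ?p x"
  proof (rule Xc.banach_steinhaus[where dlt = \<epsilon>0])
    fix \<epsilon> x y assume e: "\<epsilon> \<in> {0<..<\<epsilon>0}" and x: "x \<in> ?X" and y: "y \<in> ?X"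
    have e': "\<epsilon> \<in> {0..<\<epsilon>0}" using e by simp
    have "x + y = (\<lambda>t. x t + y t)" by (simp add: fun_eq_iff)
    then show "B \<epsilon> (x + y) = B \<epsilon> x + B \<epsilon> y" using B_add[rule_format, OF e' XH[OF x] XH[OF y]] by simp
  next
    fix \<epsilon> x and c :: real assume e: "\<epsilon> \<in> {0<..<\<epsilon>0}" and x: "x \<in> ?X"
    have e': "\<epsilon> \<in> {0..<\<epsilon>0}" using e by simp
    have "c *\<^sub>R x = (\<lambda>t. complex_of_real c *s x t)" by (simp add: fun_eq_iff scaleR_vec_ofr)
    then show "B \<epsilon> (c *\<^sub>R x) = c *\<^sub>R B \<epsilon> x" using B_hom[rule_format, OF e' XH[OF x]] by (simp add: scaleR_vec_ofr)
  next
    fix \<epsilon> assume e: "\<epsilon> \<in> {0<..<\<epsilon>0}"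
    have e': "\<epsilon> \<in> {0..<\<epsilon>0}" using e by simp
    obtain K where "\<forall>y\<in>HoelderV a b (n + r) \<alpha>. norm (B \<epsilon> y) \<le> K * ?p y" using B_cont e' by blast
    then show "\<exists>K. \<forall>x\<in>?X. norm (B \<epsilon> x) \<le> K * ?p x" using XH by blast
  next
    fix x assume x: "x \<in> ?X"
    have "((\<lambda>\<epsilon>. B \<epsilon> x) \<longlongrightarrow> B 0 x) (at_right 0)" using HII XH[OF x] by blast
    then have "\<forall>\<^sub>F \<epsilon> in at_right 0. dist (B \<epsilon> x) (B 0 x) < 1" by (rule tendstoD) simp
    then obtain d where d: "d > 0" "\<And>\<epsilon>. \<epsilon> > 0 \<Longrightarrow> \<epsilon> < d \<Longrightarrow> dist (B \<epsilon> x) (B 0 x) < 1"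
      unfolding eventually_at_right_field by auto
    have "norm (B \<epsilon> x) \<le> norm (B 0 x) + 1" if "\<epsilon> \<in> {0<..<d}" for \<epsilon>
    proof -
      have "dist (B \<epsilon> x) (B 0 x) < 1" using d(2) that by auto
      then show ?thesis using norm_triangle_ineq2[of "B \<epsilon> x" "B 0 x"] unfolding dist_norm by linarith
    qed
    then show "\<exists>\<delta>>0. \<exists>M. \<forall>\<epsilon>\<in>{0<..<\<delta>}. norm (B \<epsilon> x) \<le> M" using d(1) by blast
  next
    show "\<epsilon>0 > 0" by (rule eps0)
  qed
  then obtain \<delta>1 Mr where \<delta>1: "\<delta>1 > 0" and Mr: "\<And>\<epsilon> x. \<epsilon> \<in> {0<..<\<delta>1} \<Longrightarrow> x \<in> ?X \<Longrightarrow> norm (B \<epsilon> x) \<le> Mr * ?p x"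
    by blast
  define M where "M = \<bar>Mr\<bar>"
  have M0: "M \<ge> 0" unfolding M_def by simp
  have Mb: "norm (B \<epsilon> x) \<le> M * ?p x" if "\<epsilon> \<in> {0<..<\<delta>1}" "x \<in> ?X" for \<epsilon> x
  proof -
    have "Mr * ?p x \<le> M * ?p x" unfolding M_def using Xc.pnonneg[OF that(2)] by (intro mult_right_mono) auto
    then show ?thesis using Mr[OF that] by linarith
  qed
  have zHn: "(\<lambda>t. 0::complex^'m) \<in> HoelderV a b N' \<alpha>" for N' unfolding HoelderV_def using H_zero by simp
  have "\<forall>i. \<exists>y. y \<in> HoelderV a b (n + r) \<alpha> \<and> (\<forall>t\<in>{a..b}. Lop a b r (A 0) y t = 0) \<and> B 0 y = axis i 1"
    using uniq[rule_format, OF e0' zHn] by blast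
  then obtain gg where gg: "\<And>i. gg i \<in> HoelderV a b (n + r) \<alpha>" "\<And>i t. t \<in> {a..b} \<Longrightarrow> Lop a b r (A 0) (gg i) t = 0"
    "\<And>i. B 0 (gg i) = axis i 1"
    by metis
  define \<delta>D where "\<delta>D \<epsilon> = (\<Sum>i\<in>UNIV. norm (B \<epsilon> (gg i) - B 0 (gg i)))" for \<epsilon>
  have \<delta>D_lim: "(\<delta>D \<longlongrightarrow> 0) (at_right 0)"
  proof -
    have "((\<lambda>\<epsilon>. norm (B \<epsilon> (gg i) - B 0 (gg i))) \<longlongrightarrow> 0) (at_right 0)" for i
      by (intro tendsto_norm_zero LIM_zero) (use HII gg(1) in blast)
    then have "((\<lambda>\<epsilon>. \<Sum>i\<in>UNIV. norm (B \<epsilon> (gg i) - B 0 (gg i))) \<longlongrightarrow> (\<Sum>i\<in>(UNIV::'k set). 0)) (at_right 0)"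
      by (intro tendsto_sum) auto
    then show ?thesis unfolding \<delta>D_def by simp
  qed
  have claimD: "norm (B \<epsilon> v - B 0 v) \<le> \<delta>D \<epsilon> * norm (B 0 v)"
    if e: "\<epsilon> \<in> {0..<\<epsilon>0}" and v: "v \<in> HoelderV a b (n + r) \<alpha>" and Lv: "\<And>t. t \<in> {a..b} \<Longrightarrow> Lop a b r (A 0) v t = 0"
    for \<epsilon> v
  proof -
    define c where "c = B 0 v"
    define w where "w = (\<lambda>t. \<Sum>i\<in>UNIV. (c $ i) *s gg i t)"
    have wH: "w \<in> HoelderV a b (n + r) \<alpha>" unfolding w_def by (rule HV_sum) (auto intro: gg(1))
    have Lw: "Lop a b r (A 0) w t = 0" if t: "t \<in> {a..b}" for t
      unfolding w_def using Lop_sum[of UNIV gg n r t "A 0" "\<lambda>i. c $ i"] gg(1,2) t by simp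
    have Bw: "B \<epsilon>' w = (\<Sum>i\<in>UNIV. (c $ i) *s B \<epsilon>' (gg i))" if "\<epsilon>' \<in> {0..<\<epsilon>0}" for \<epsilon>'
      unfolding w_def by (rule B_sum[OF that]) (auto intro: gg(1))
    have Bw0: "B 0 w = c" using Bw[OF e0] gg(3) basis_expansion[of c] by simp
    have vw0: "(\<forall>t\<in>{a..b}. Lop a b r (A 0) (\<lambda>t. v t - w t) t = 0) \<and> B 0 (\<lambda>t. v t - w t) = 0"
    proof (intro conjI ballI)
      fix t assume t: "t \<in> {a..b}"
      show "Lop a b r (A 0) (\<lambda>t. v t - w t) t = 0" using Lop_diff[OF v wH t] Lv[OF t] Lw[OF t] by simp
    next
      show "B 0 (\<lambda>t. v t - w t) = 0" using B_diff[OF e0 v wH] Bw0 unfolding c_def by simp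
    qed
    have vw: "\<forall>t\<in>{a..b}. v t - w t = 0" using H0[rule_format, OF HVdiff[OF v wH] vw0] by simp
    have Bv: "B \<epsilon> v = B \<epsilon> w" using B_local[rule_format, OF e, of v w] vw by simp
    have "B \<epsilon> v - B 0 v = (\<Sum>i\<in>UNIV. (c $ i) *s (B \<epsilon> (gg i) - B 0 (gg i)))"
      unfolding Bv using Bw[OF e] Bw[OF e0] Bw0
      by (simp add: c_def[symmetric] vector_ssub_ldistrib sum_subtractf)
    also have "norm \<dots> \<le> (\<Sum>i\<in>UNIV. norm ((c $ i) *s (B \<epsilon> (gg i) - B 0 (gg i))))" by (rule norm_sum)
    also have "\<dots> = (\<Sum>i\<in>UNIV. cmod (c $ i) * norm (B \<epsilon> (gg i) - B 0 (gg i)))"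
      by (simp add: norm_smult_vec del: vector_ssub_ldistrib)
    also have "\<dots> \<le> (\<Sum>i\<in>UNIV. norm c * norm (B \<epsilon> (gg i) - B 0 (gg i)))"
      by (intro sum_mono mult_right_mono Finite_Cartesian_Product.norm_nth_le) auto
    also have "\<dots> = \<delta>D \<epsilon> * norm (B 0 v)" unfolding \<delta>D_def c_def by (simp add: sum_distrib_left mult.commute)
    finally show ?thesis .
  qed
  define \<eta> where "\<eta> \<epsilon> = Cp * (\<Sum>j\<in>{1..r}. hnormM a b n \<alpha> (\<lambda>t. A \<epsilon> (r - j) t - A 0 (r - j) t))" for \<epsilon>
  have \<eta>_lim: "(\<eta> \<longlongrightarrow> 0) (at_right 0)"
  proof -
    have "((\<lambda>\<epsilon>. hnormM a b n \<alpha> (\<lambda>t. A \<epsilon> (r - j) t - A 0 (r - j) t)) \<longlongrightarrow> 0) (at_right 0)" if "j \<in> {1..r}" for j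
      using HI that r2 by auto
    then have "((\<lambda>\<epsilon>. \<Sum>j\<in>{1..r}. hnormM a b n \<alpha> (\<lambda>t. A \<epsilon> (r - j) t - A 0 (r - j) t)) \<longlongrightarrow> (\<Sum>j\<in>{1..r}. (0::real))) (at_right 0)"
      by (intro tendsto_sum) auto
    then have "((\<lambda>\<epsilon>. Cp * (\<Sum>j\<in>{1..r}. hnormM a b n \<alpha> (\<lambda>t. A \<epsilon> (r - j) t - A 0 (r - j) t))) \<longlongrightarrow> Cp * 0) (at_right 0)"
      by (intro tendsto_mult tendsto_const) simp
    then show ?thesis unfolding \<eta>_def by simp
  qed
  have \<eta>0: "\<eta> \<epsilon> \<ge> 0" if "\<epsilon> \<in> {0..<\<epsilon>0}" for \<epsilon>
    unfolding \<eta>_def using Cp0 HM_nonneg[OF HM_diff[OF Areg'[OF that] Areg'[OF e0]]]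
    by (intro mult_nonneg_nonneg sum_nonneg) auto
  have Qb: "Qop r (\<lambda>k t. A \<epsilon> k t - A 0 k t) z \<in> HoelderV a b n \<alpha> \<and>
      hnormV a b n \<alpha> (Qop r (\<lambda>k t. A \<epsilon> k t - A 0 k t) z) \<le> \<eta> \<epsilon> * ?p z"
    if e: "\<epsilon> \<in> {0..<\<epsilon>0}" and z: "z \<in> HoelderV a b (n + r) \<alpha>" for \<epsilon> z
  proof -
    have "\<And>k. k < r \<Longrightarrow> (\<lambda>t. A \<epsilon> k t - A 0 k t) \<in> HoelderM a b n \<alpha>"
      using HM_diff[OF Areg[OF e] Areg[OF e0]] by blast
    from Qop_HV[of z n r "\<lambda>k t. A \<epsilon> k t - A 0 k t", OF z this] show ?thesis
      unfolding \<eta>_def Cp_def by (simp add: mult.assoc)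
  qed
  define C3 where "C3 = C0 * (1 + 2 * M * C0)"
  have C30: "C3 \<ge> 0" unfolding C3_def using C00 M0 by simp
  have ev: "\<forall>\<^sub>F \<epsilon> in at_right 0. \<delta>D \<epsilon> < 1/2 \<and> C3 * \<eta> \<epsilon> < 1/2 \<and> \<eta> \<epsilon> < 1"
  proof (intro eventually_conj)
    from order_tendstoD(2)[OF \<delta>D_lim, of "1/2"] show "\<forall>\<^sub>F \<epsilon> in at_right 0. \<delta>D \<epsilon> < 1/2" by simp
    have "((\<lambda>\<epsilon>. C3 * \<eta> \<epsilon>) \<longlongrightarrow> C3 * 0) (at_right 0)" by (intro tendsto_mult tendsto_const \<eta>_lim)
    from order_tendstoD(2)[OF this, of "1/2"] show "\<forall>\<^sub>F \<epsilon> in at_right 0. C3 * \<eta> \<epsilon> < 1/2" by simp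
    from order_tendstoD(2)[OF \<eta>_lim, of 1] show "\<forall>\<^sub>F \<epsilon> in at_right 0. \<eta> \<epsilon> < 1" by simp
  qed
  then obtain \<delta>2 where \<delta>2: "\<delta>2 > 0" "\<And>\<epsilon>. 0 < \<epsilon> \<Longrightarrow> \<epsilon> < \<delta>2 \<Longrightarrow> \<delta>D \<epsilon> < 1/2 \<and> C3 * \<eta> \<epsilon> < 1/2 \<and> \<eta> \<epsilon> < 1"
    unfolding eventually_at_right_field by auto
  obtain N1 where N1: "N1 \<ge> 0" "\<And>x. N x \<le> N1 * norm x" using cnorm_upper[OF N] by blast
  obtain N2 where N2: "N2 > 0" "\<And>x. norm x \<le> N2 * N x" using cnorm_lower[OF N] by blast
  have Nnn: "\<And>x. 0 \<le> N x" using cnorm_props(2)[OF N] .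
  define \<epsilon>2 where "\<epsilon>2 = min (min \<delta>1 \<delta>2) (\<epsilon>1 / 2)"
  have \<epsilon>2: "0 < \<epsilon>2" "\<epsilon>2 < \<epsilon>1" unfolding \<epsilon>2_def using \<delta>1 \<delta>2 eps1 by auto
  define \<kappa>2 where "\<kappa>2 = 2 * C3 + 4 * C0 * N2 + 1"
  define Dl where "Dl = KL 0 + 1 + N1 * M + 1"
  have Dl: "Dl \<ge> 1" unfolding Dl_def using KL0[OF e0] N1 M0 by simp
  define \<kappa>1 where "\<kappa>1 = 1 / Dl"
  have CN: "0 \<le> C0 * N2" using C00 N2(1) by simp
  have \<kappa>: "\<kappa>1 > 0" "\<kappa>2 > 0" unfolding \<kappa>1_def \<kappa>2_def using Dl C30 CN by auto
  have est: "?p z \<le> \<kappa>2 * (hnormV a b n \<alpha> (Lop a b r (A \<epsilon>) z) + N (B \<epsilon> z)) \<and>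
             \<kappa>1 * (hnormV a b n \<alpha> (Lop a b r (A \<epsilon>) z) + N (B \<epsilon> z)) \<le> ?p z"
    if e: "\<epsilon> \<in> {0<..<\<epsilon>2}" and z: "z \<in> ?X" for \<epsilon> z
  proof -
    have eE: "\<epsilon> \<in> {0..<\<epsilon>0}" using e \<epsilon>2 eps1 by auto
    have e1: "\<epsilon> \<in> {0<..<\<delta>1}" using e unfolding \<epsilon>2_def by auto
    have sm: "\<delta>D \<epsilon> < 1/2" "C3 * \<eta> \<epsilon> < 1/2" "\<eta> \<epsilon> < 1" using \<delta>2(2)[of \<epsilon>] e unfolding \<epsilon>2_def by auto
    have \<delta>D0: "\<delta>D \<epsilon> \<ge> 0" unfolding \<delta>D_def by (simp add: sum_nonneg)
    have zH: "z \<in> HoelderV a b (n + r) \<alpha>" using XH[OF z] .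
    define P where "P = ?p z"
    define l0 where "l0 = hnormV a b n \<alpha> (Lop a b r (A 0) z)"
    define le where "le = hnormV a b n \<alpha> (Lop a b r (A \<epsilon>) z)"
    define be where "be = norm (B \<epsilon> z)"
    define b0 where "b0 = norm (B 0 z)"
    have P0: "P \<ge> 0" unfolding P_def using Xc.pnonneg[OF z] .
    have L0H: "Lop a b r (A 0) z \<in> HoelderV a b n \<alpha>" using LopH[OF e0 zH] by blast
    have LeH: "Lop a b r (A \<epsilon>) z \<in> HoelderV a b n \<alpha>" using LopH[OF eE zH] by blast
    have le0: "le \<ge> 0" unfolding le_def using HV_nonneg[OF LeH] .
    have l00: "l0 \<ge> 0" unfolding l0_def using HV_nonneg[OF L0H] .
    have QQ: "Qop r (\<lambda>k t. A \<epsilon> k t - A 0 k t) z \<in> HoelderV a b n \<alpha>"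
      "hnormV a b n \<alpha> (Qop r (\<lambda>k t. A \<epsilon> k t - A 0 k t) z) \<le> \<eta> \<epsilon> * P"
      using Qb[OF eE zH] unfolding P_def by auto
    have l0le: "l0 \<le> le + \<eta> \<epsilon> * P"
    proof -
      have "Lop a b r (A 0) z = (\<lambda>t. 1 *s Lop a b r (A \<epsilon>) z t + (-1) *s Qop r (\<lambda>k t. A \<epsilon> k t - A 0 k t) z t)"
      proof (rule ext)
        fix t
        show "Lop a b r (A 0) z t = 1 *s Lop a b r (A \<epsilon>) z t + (-1) *s Qop r (\<lambda>k t. A \<epsilon> k t - A 0 k t) z t"
          unfolding Lop_diffA[of r "A \<epsilon>" z t "A 0", symmetric] by (simp add: vec_eq_iff algebra_simps)
      qed
      then show ?thesis unfolding l0_def le_def using HV_lin[OF LeH QQ(1), of 1 "-1"] QQ(2) by simp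
    qed
    have lele: "le \<le> l0 + \<eta> \<epsilon> * P"
    proof -
      have "Lop a b r (A \<epsilon>) z = (\<lambda>t. 1 *s Lop a b r (A 0) z t + 1 *s Qop r (\<lambda>k t. A \<epsilon> k t - A 0 k t) z t)"
      proof (rule ext)
        fix t
        show "Lop a b r (A \<epsilon>) z t = 1 *s Lop a b r (A 0) z t + 1 *s Qop r (\<lambda>k t. A \<epsilon> k t - A 0 k t) z t"
          unfolding Lop_diffA[of r "A \<epsilon>" z t "A 0", symmetric] by (simp add: vec_eq_iff algebra_simps)
      qed
      then show ?thesis unfolding l0_def le_def using HV_lin[OF L0H QQ(1), of 1 1] QQ(2) by simp
    qed
    have fH: "nrm (Lop a b r (A 0) z) \<in> HoelderV a b n \<alpha>" using XH[OF nrm_XN[OF L0H]] .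
    obtain yu where yu: "yu \<in> HoelderV a b (n + r) \<alpha>" "\<forall>t\<in>{a..b}. Lop a b r (A 0) yu t = nrm (Lop a b r (A 0) z) t" "B 0 yu = 0"
      using uniq[rule_format, OF e0' fH, of 0] by blast
    define u where "u = nrm yu"
    have uX: "u \<in> ?X" unfolding u_def using nrm_XN[OF yu(1)] .
    have uH: "u \<in> HoelderV a b (n + r) \<alpha>" using XH[OF uX] .
    have Lu: "Lop a b r (A 0) u t = Lop a b r (A 0) z t" if t: "t \<in> {a..b}" for t
    proof -
      have "Lop a b r (A 0) u t = Lop a b r (A 0) yu t" unfolding u_def by (rule Lop_cong[OF comp_cong_nrm t])
      also have "\<dots> = nrm (Lop a b r (A 0) z) t" using yu(2) t by blast
      also have "\<dots> = Lop a b r (A 0) z t" by (rule comp_cong_nrm[OF t])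
      finally show ?thesis .
    qed
    have Bu: "B 0 u = 0"
    proof -
      have "\<forall>t\<in>{a..b}. u t = yu t" unfolding u_def using comp_cong_nrm by blast
      then show ?thesis using B_local[rule_format, OF e0, of u yu] yu(3) by simp
    qed
    have pu: "?p u \<le> C0 * l0"
    proof -
      have "hnormV a b n \<alpha> (Lop a b r (A 0) u) = l0" unfolding l0_def using HV_cong(2)[of "Lop a b r (A 0) u" "Lop a b r (A 0) z" n] Lu by blast
      then show ?thesis using C0[OF uX] Bu by simp
    qed
    define v where "v = (\<lambda>t. z t - u t)"
    have vH: "v \<in> HoelderV a b (n + r) \<alpha>" unfolding v_def using HVdiff[OF zH uH] .
    have Lv: "Lop a b r (A 0) v t = 0" if t: "t \<in> {a..b}" for t
      unfolding v_def using Lop_diff[OF zH uH t] Lu[OF t] by simp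
    have Bv: "B 0 v = B 0 z" unfolding v_def using B_diff[OF e0 zH uH] Bu by simp
    have zuv: "z = (\<lambda>t. u t + v t)" unfolding v_def by (simp add: fun_eq_iff)
    have Bsplit: "B \<epsilon>' z = B \<epsilon>' u + B \<epsilon>' v" if "\<epsilon>' \<in> {0..<\<epsilon>0}" for \<epsilon>'
      using B_add[rule_format, OF that uH vH] zuv by simp
    have Dz: "B \<epsilon> z - B 0 z = (B \<epsilon> u - B 0 u) + (B \<epsilon> v - B 0 v)"
      using Bsplit[OF eE] Bsplit[OF e0] by (simp add: algebra_simps)
    have Du: "norm (B \<epsilon> u - B 0 u) \<le> M * C0 * l0"
    proof -
      have "norm (B \<epsilon> u - B 0 u) = norm (B \<epsilon> u)" using Bu by simp
      also have "\<dots> \<le> M * ?p u" using Mb[OF e1 uX] .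
      also have "\<dots> \<le> M * (C0 * l0)" using pu M0 by (intro mult_left_mono) auto
      finally show ?thesis by (simp add: mult.assoc)
    qed
    have Dv: "norm (B \<epsilon> v - B 0 v) \<le> \<delta>D \<epsilon> * b0"
      using claimD[OF eE vH Lv] Bv unfolding b0_def by simp
    have Dvb: "\<delta>D \<epsilon> * b0 \<le> (1/2) * b0" using sm(1) unfolding b0_def by (intro mult_right_mono) auto
    have "b0 \<le> be + norm (B \<epsilon> z - B 0 z)" unfolding b0_def be_def using norm_triangle_ineq2[of "B 0 z" "B \<epsilon> z"]
      by (simp add: norm_minus_commute)
    also have "norm (B \<epsilon> z - B 0 z) \<le> norm (B \<epsilon> u - B 0 u) + norm (B \<epsilon> v - B 0 v)"
      unfolding Dz by (rule norm_triangle_ineq)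
    finally have b0le: "b0 \<le> 2 * be + 2 * (M * C0 * l0)" using Du Dv Dvb by linarith
    have Pz: "P \<le> C0 * l0 + C0 * b0" using C0[OF z] unfolding P_def l0_def b0_def by (simp add: distrib_left)
    have "C0 * b0 \<le> C0 * (2 * be + 2 * (M * C0 * l0))" using b0le C00 by (intro mult_left_mono) auto
    hence P1: "P \<le> C3 * l0 + 2 * C0 * be" using Pz unfolding C3_def by (simp add: algebra_simps)
    have "C3 * l0 \<le> C3 * (le + \<eta> \<epsilon> * P)" using l0le C30 by (intro mult_left_mono) auto
    moreover have "C3 * (\<eta> \<epsilon> * P) \<le> (1/2) * P"
    proof -
      have "(C3 * \<eta> \<epsilon>) * P \<le> (1/2) * P" using sm(2) P0 by (intro mult_right_mono) auto
      then show ?thesis by (simp add: mult.assoc)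
    qed
    ultimately have P2: "P \<le> 2 * C3 * le + 4 * C0 * be" using P1 by (simp add: algebra_simps)
    have "be \<le> N2 * N (B \<epsilon> z)" unfolding be_def using N2(2) .
    hence "4 * C0 * be \<le> 4 * C0 * (N2 * N (B \<epsilon> z))" using C00 by (intro mult_left_mono) auto
    hence P3: "P \<le> 2 * C3 * le + 4 * C0 * N2 * N (B \<epsilon> z)" using P2 by (simp add: mult.assoc)
    have upper: "P \<le> \<kappa>2 * (le + N (B \<epsilon> z))"
    proof -
      have "2 * C3 * le \<le> \<kappa>2 * le" unfolding \<kappa>2_def using le0 C00 N2(1) by (intro mult_right_mono) auto
      moreover have "4 * C0 * N2 * N (B \<epsilon> z) \<le> \<kappa>2 * N (B \<epsilon> z)" unfolding \<kappa>2_def using Nnn C30 by (intro mult_right_mono) auto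
      ultimately show ?thesis using P3 by (simp add: distrib_left)
    qed
    have l0b: "l0 \<le> KL 0 * P" unfolding l0_def P_def using LopH[OF e0 zH] by blast
    have "\<eta> \<epsilon> * P \<le> 1 * P" using sm(3) P0 by (intro mult_right_mono) auto
    hence leb: "le \<le> (KL 0 + 1) * P" using lele l0b by (simp add: distrib_right)
    have "N (B \<epsilon> z) \<le> N1 * be" unfolding be_def using N1(2) .
    also have "\<dots> \<le> N1 * (M * P)" unfolding be_def P_def using Mb[OF e1 z] N1(1) by (intro mult_left_mono) auto
    finally have Nb: "N (B \<epsilon> z) \<le> N1 * M * P" by (simp add: mult.assoc)
    have "le + N (B \<epsilon> z) \<le> (Dl - 1) * P" unfolding Dl_def using leb Nb by (simp add: algebra_simps)
    also have "\<dots> \<le> Dl * P" using P0 by (simp add: algebra_simps)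
    finally have "\<kappa>1 * (le + N (B \<epsilon> z)) \<le> \<kappa>1 * (Dl * P)" using \<kappa>(1) by (intro mult_left_mono) auto
    also have "\<dots> = P" unfolding \<kappa>1_def using Dl by simp
    finally show ?thesis using upper unfolding P_def le_def by simp
  qed
  show ?thesis
  proof (rule exI[of _ \<epsilon>2], rule exI[of _ \<kappa>1], rule exI[of _ \<kappa>2], intro conjI allI impI ballI)
    show "0 < \<epsilon>2" "\<epsilon>2 < \<epsilon>1" using \<epsilon>2 by auto
    show "0 < \<kappa>1" "0 < \<kappa>2" using \<kappa> by auto
  next
    fix f c y \<epsilon>
    assume H: "\<forall>\<epsilon>\<in>{0..<\<epsilon>1}. f \<epsilon> \<in> HoelderV a b n \<alpha> \<and> y \<epsilon> \<in> HoelderV a b (n + r) \<alpha>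
                      \<and> (\<forall>t\<in>{a..b}. Lop a b r (A \<epsilon>) (y \<epsilon>) t = f \<epsilon> t) \<and> B \<epsilon> (y \<epsilon>) = c \<epsilon>"
      and e: "\<epsilon> \<in> {0<..<\<epsilon>2}"
    have eE1: "\<epsilon> \<in> {0..<\<epsilon>1}" using e \<epsilon>2 by auto
    have eE: "\<epsilon> \<in> {0..<\<epsilon>0}" using eE1 eps1 by auto
    have y0: "y 0 \<in> HoelderV a b (n + r) \<alpha>" using H e0' by blast
    have ye: "y \<epsilon> \<in> HoelderV a b (n + r) \<alpha>" "\<And>t. t \<in> {a..b} \<Longrightarrow> Lop a b r (A \<epsilon>) (y \<epsilon>) t = f \<epsilon> t" "B \<epsilon> (y \<epsilon>) = c \<epsilon>"
      using H eE1 by auto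
    define w where "w = (\<lambda>t. y 0 t - y \<epsilon> t)"
    have wH: "w \<in> HoelderV a b (n + r) \<alpha>" unfolding w_def by (rule HVdiff[OF y0 ye(1)])
    define z where "z = nrm w"
    have zX: "z \<in> ?X" unfolding z_def by (rule nrm_XN[OF wH])
    have pz: "?p z = ?p w" unfolding z_def by (rule nrm_hnormV)
    have lz: "hnormV a b n \<alpha> (Lop a b r (A \<epsilon>) z) = hnormV a b n \<alpha> (\<lambda>t. Lop a b r (A \<epsilon>) (y 0) t - f \<epsilon> t)"
    proof (rule HV_cong(2))
      fix t assume t: "t \<in> {a..b}"
      have "Lop a b r (A \<epsilon>) z t = Lop a b r (A \<epsilon>) w t" unfolding z_def by (rule Lop_cong[OF comp_cong_nrm t])
      also have "\<dots> = Lop a b r (A \<epsilon>) (y 0) t - Lop a b r (A \<epsilon>) (y \<epsilon>) t" unfolding w_def by (rule Lop_diff[OF y0 ye(1) t])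
      also have "\<dots> = Lop a b r (A \<epsilon>) (y 0) t - f \<epsilon> t" using ye(2)[OF t] by simp
      finally show "Lop a b r (A \<epsilon>) z t = Lop a b r (A \<epsilon>) (y 0) t - f \<epsilon> t" .
    qed
    have Bz: "B \<epsilon> z = B \<epsilon> (y 0) - c \<epsilon>"
    proof -
      have "\<forall>t\<in>{a..b}. z t = w t" unfolding z_def using comp_cong_nrm by blast
      then have "B \<epsilon> z = B \<epsilon> w" using B_local[rule_format, OF eE, of z w] by simp
      also have "\<dots> = B \<epsilon> (y 0) - B \<epsilon> (y \<epsilon>)" unfolding w_def by (rule B_diff[OF eE y0 ye(1)])
      finally show ?thesis using ye(3) by simp
    qed
    have E: "?p z \<le> \<kappa>2 * (hnormV a b n \<alpha> (Lop a b r (A \<epsilon>) z) + N (B \<epsilon> z)) \<and>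
             \<kappa>1 * (hnormV a b n \<alpha> (Lop a b r (A \<epsilon>) z) + N (B \<epsilon> z)) \<le> ?p z"
      by (rule est[OF e zX])
    show "let d = hnormV a b n \<alpha> (\<lambda>t. Lop a b r (A \<epsilon>) (y 0) t - f \<epsilon> t) + N (B \<epsilon> (y 0) - c \<epsilon>)
          in \<kappa>1 * d \<le> hnormV a b (n + r) \<alpha> (\<lambda>t. y 0 t - y \<epsilon> t)
           \<and> hnormV a b (n + r) \<alpha> (\<lambda>t. y 0 t - y \<epsilon> t) \<le> \<kappa>2 * d"
      using E unfolding Let_def pz lz Bz w_def by simp
  qed
qed

end


theorem theorem1:
  fixes a b \<alpha> \<epsilon>0 \<epsilon>1 :: real and n r :: nat
    and A :: "real \<Rightarrow> nat \<Rightarrow> real \<Rightarrow> complex^'m::finite^'m"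
    and B :: "real \<Rightarrow> (real \<Rightarrow> complex^'m) \<Rightarrow> complex^'k::finite"
    and N :: "complex^'k \<Rightarrow> real"
  assumes ab: "a < b"
    and r2: "r \<ge> 2"
    and alpha: "0 < \<alpha>" "\<alpha> \<le> 1"
    and eps0: "0 < \<epsilon>0"
    and dimk: "CARD('k) = r * CARD('m)"
    and N: "is_cnorm N"
    and A_reg: "\<forall>\<epsilon>\<in>{0..<\<epsilon>0}. \<forall>k<r. A \<epsilon> k \<in> HoelderM a b n \<alpha>"
    and B_local: "\<forall>\<epsilon>\<in>{0..<\<epsilon>0}. \<forall>y z. (\<forall>t\<in>{a..b}. y t = z t) \<longrightarrow> B \<epsilon> y = B \<epsilon> z"
    and B_add: "\<forall>\<epsilon>\<in>{0..<\<epsilon>0}. \<forall>y\<in>HoelderV a b (n + r) \<alpha>. \<forall>z\<in>HoelderV a b (n + r) \<alpha>.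
                  B \<epsilon> (\<lambda>t. y t + z t) = B \<epsilon> y + B \<epsilon> z"
    and B_hom: "\<forall>\<epsilon>\<in>{0..<\<epsilon>0}. \<forall>y\<in>HoelderV a b (n + r) \<alpha>. \<forall>c::complex.
                  B \<epsilon> (\<lambda>t. c *s y t) = c *s B \<epsilon> y"
    and B_cont: "\<forall>\<epsilon>\<in>{0..<\<epsilon>0}. \<exists>K. \<forall>y\<in>HoelderV a b (n + r) \<alpha>.
                  norm (B \<epsilon> y) \<le> K * hnormV a b (n + r) \<alpha> y"
    and H0: "\<forall>y\<in>HoelderV a b (n + r) \<alpha>.
               (\<forall>t\<in>{a..b}. Lop a b r (A 0) y t = 0) \<and> B 0 y = 0 \<longrightarrow> (\<forall>t\<in>{a..b}. y t = 0)"
    and HI: "\<forall>k<r. ((\<lambda>\<epsilon>. hnormM a b n \<alpha> (\<lambda>t. A \<epsilon> k t - A 0 k t)) \<longlongrightarrow> 0) (at_right 0)"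
    and HII: "\<forall>y\<in>HoelderV a b (n + r) \<alpha>. ((\<lambda>\<epsilon>. B \<epsilon> y) \<longlongrightarrow> B 0 y) (at_right 0)"
    and eps1: "0 < \<epsilon>1" "\<epsilon>1 < \<epsilon>0"
    and uniq: "\<forall>\<epsilon>\<in>{0..<\<epsilon>1}. \<forall>f\<in>HoelderV a b n \<alpha>. \<forall>c.
                 \<exists>y\<in>HoelderV a b (n + r) \<alpha>.
                   (\<forall>t\<in>{a..b}. Lop a b r (A \<epsilon>) y t = f t) \<and> B \<epsilon> y = c
                 \<and> (\<forall>z\<in>HoelderV a b (n + r) \<alpha>.
                      (\<forall>t\<in>{a..b}. Lop a b r (A \<epsilon>) z t = f t) \<and> B \<epsilon> z = c
                      \<longrightarrow> (\<forall>t\<in>{a..b}. z t = y t))"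
  shows "\<exists>\<epsilon>2 \<kappa>1 \<kappa>2. 0 < \<epsilon>2 \<and> \<epsilon>2 < \<epsilon>1 \<and> 0 < \<kappa>1 \<and> 0 < \<kappa>2 \<and>
           (\<forall>f c y. (\<forall>\<epsilon>\<in>{0..<\<epsilon>1}. f \<epsilon> \<in> HoelderV a b n \<alpha> \<and> y \<epsilon> \<in> HoelderV a b (n + r) \<alpha>
                      \<and> (\<forall>t\<in>{a..b}. Lop a b r (A \<epsilon>) (y \<epsilon>) t = f \<epsilon> t) \<and> B \<epsilon> (y \<epsilon>) = c \<epsilon>)
             \<longrightarrow> (\<forall>\<epsilon>\<in>{0<..<\<epsilon>2}.
                   let d = hnormV a b n \<alpha> (\<lambda>t. Lop a b r (A \<epsilon>) (y 0) t - f \<epsilon> t)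
                           + N (B \<epsilon> (y 0) - c \<epsilon>)
                   in \<kappa>1 * d \<le> hnormV a b (n + r) \<alpha> (\<lambda>t. y 0 t - y \<epsilon> t)
                    \<and> hnormV a b (n + r) \<alpha> (\<lambda>t. y 0 t - y \<epsilon> t) \<le> \<kappa>2 * d))"
proof -
  interpret hctx a b \<alpha> using ab alpha by unfold_locales auto
  show ?thesis
    by (rule main[OF r2 eps0 N A_reg B_local B_add B_hom B_cont H0 HI HII eps1 uniq])
qed

end
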